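(* Let $P$ be any polyhedral map of genus 1 all of whose faces have size 6. Then every Goldberg-Coxeter operation $\mathrm{GC}(l,l)$ or $\mathrm{GC}(l,0)$ ($l$ a positive integer) other than the identity $\mathrm{GC}(1,0)$ increases the symmetry of $P$, i.e. $|\mathrm{Aut}(\mathrm{GC}(l,m)(P))|>|\mathrm{Aut}(P)|$.
   Context: A polyhedral map is a 3-connected graph embedded in a closed orientable surface such that every face is an open disc and the closures of any two faces have connected intersection; its genus is that of the surface; $\mathrm{Aut}(P)$ is its automorphism group. Barycentric subdivision $B_P$: add a vertex in every face and on every edge, join each face-vertex to the vertices and edge-vertices on its boundary; colour original vertices 0, edge-vertices 1, face-vertices 2; the triangles are chambers. Goldberg-Coxeter operations: let $T_H$ be the regular hexagonal tiling of the plane with coordinates where $(0,0)$ is the centre of a face $f$, $(0,1)$ is a vertex of $f$ and $(1,0)$ is the vertex of $f$ preceding $(0,1)$ clockwise on its boundary (integer point $(x,y)$ is a face centre iff $x-y\equiv0\pmod3$, a vertex otherwise). For $l\ge1$ and $m\in\{0,l\}$, $\mathrm{GC}(l,m)$ is the coloured triangle cut out of $B_{T_H}$ with corners $v_0=(l,m)$, $v_1=(\frac{l-m}{2},\frac{l+2m}{2})$, $v_2=(0,0)$. It is applied to $P$ by gluing into every chamber of $B_P$ a copy of it or its mirror image (adjacent chambers receiving mirror images), identifying $v_i$ with the colour-$i$ vertex of the chamber and the boundary path of the triangle between $v_i$ and $v_j$ with the chamber edge between its colour-$i$ and colour-$j$ vertices; the result is the barycentric subdivision of a map $\mathrm{GC}(l,m)(P)$.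 Each automorphism of $P$ induces one of $\mathrm{GC}(l,m)(P)$, so $|\mathrm{Aut}(P)|\le|\mathrm{Aut}(\mathrm{GC}(l,m)(P))|$. *)

theory Defs
  imports Main
begin

text \<open>A map on a closed surface is encoded by its set of flags (= chambers of the
barycentric subdivision) F together with the three involutions r 0, r 1, r 2:
r i x is the chamber sharing with x all vertices except the one of colour i
(colour 0 = vertex, 1 = edge, 2 = face).\<close>

definition flag_step :: "'a set \<Rightarrow> (nat \<Rightarrow> 'a \<Rightarrow> 'a) \<Rightarrow> nat set \<Rightarrow> ('a \<times> 'a) set" where
  "flag_step F r I = {(x, r i x) | x i. x \<in> F \<and> i \<in> I}"

definition orbit_of :: "'a set \<Rightarrow> (nat \<Rightarrow> 'a \<Rightarrow> 'a) \<Rightarrow> nat set \<Rightarrow> 'a \<Rightarrow> 'a set" where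
  "orbit_of F r I x = (flag_step F r I)\<^sup>* `` {x}"

definition flag_map :: "'a set \<Rightarrow> (nat \<Rightarrow> 'a \<Rightarrow> 'a) \<Rightarrow> bool" where
  "flag_map F r \<longleftrightarrow> finite F \<and> F \<noteq> {} \<and>
     (\<forall>i<3. \<forall>x\<in>F. r i x \<in> F \<and> r i (r i x) = x \<and> r i x \<noteq> x) \<and>
     (\<forall>x\<in>F. r 0 (r 2 x) = r 2 (r 0 x) \<and> r 0 (r 2 x) \<noteq> x) \<and>
     (\<forall>x\<in>F. \<forall>y\<in>F. (x, y) \<in> (flag_step F r {0,1,2})\<^sup>*)"

definition vcl :: "'a set \<Rightarrow> (nat \<Rightarrow> 'a \<Rightarrow> 'a) \<Rightarrow> 'a \<Rightarrow> 'a set" where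
  "vcl F r x = orbit_of F r {1,2} x"
definition ecl :: "'a set \<Rightarrow> (nat \<Rightarrow> 'a \<Rightarrow> 'a) \<Rightarrow> 'a \<Rightarrow> 'a set" where
  "ecl F r x = orbit_of F r {0,2} x"
definition fcl :: "'a set \<Rightarrow> (nat \<Rightarrow> 'a \<Rightarrow> 'a) \<Rightarrow> 'a \<Rightarrow> 'a set" where
  "fcl F r x = orbit_of F r {0,1} x"

definition map_vertices :: "'a set \<Rightarrow> (nat \<Rightarrow> 'a \<Rightarrow> 'a) \<Rightarrow> 'a set set" where
  "map_vertices F r = vcl F r ` F"
definition map_edges :: "'a set \<Rightarrow> (nat \<Rightarrow> 'a \<Rightarrow> 'a) \<Rightarrow> 'a set set" where
  "map_edges F r = ecl F r ` F"
definition map_faces :: "'a set \<Rightarrow> (nat \<Rightarrow> 'a \<Rightarrow> 'a) \<Rightarrow> 'a set set" where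
  "map_faces F r = fcl F r ` F"

text \<open>Size of a face = number of edges on its boundary walk = half its number of flags.\<close>
definition face_size :: "'a set \<Rightarrow> nat" where
  "face_size f = card f div 2"

definition orientable_map :: "'a set \<Rightarrow> (nat \<Rightarrow> 'a \<Rightarrow> 'a) \<Rightarrow> bool" where
  "orientable_map F r \<longleftrightarrow> (\<exists>s :: 'a \<Rightarrow> bool. \<forall>x\<in>F. \<forall>i<3. s (r i x) \<noteq> s x)"

definition euler_char :: "'a set \<Rightarrow> (nat \<Rightarrow> 'a \<Rightarrow> 'a) \<Rightarrow> int" where
  "euler_char F r = int (card (map_vertices F r)) - int (card (map_edges F r))
                    + int (card (map_faces F r))"

definition map_genus :: "'a set \<Rightarrow> (nat \<Rightarrow> 'a \<Rightarrow> 'a) \<Rightarrow> nat \<Rightarrow> bool" where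
  "map_genus F r g \<longleftrightarrow> orientable_map F r \<and> euler_char F r = 2 - 2 * int g"

definition connected_on :: "'b set \<Rightarrow> ('b \<times> 'b) set \<Rightarrow> bool" where
  "connected_on U R \<longleftrightarrow> (\<forall>u\<in>U. \<forall>w\<in>U. (u, w) \<in> (R \<inter> U \<times> U)\<^sup>*)"

definition graph_adj :: "'a set \<Rightarrow> (nat \<Rightarrow> 'a \<Rightarrow> 'a) \<Rightarrow> ('a set \<times> 'a set) set" where
  "graph_adj F r = {(vcl F r x, vcl F r (r 0 x)) | x. x \<in> F}"

definition simple_underlying_graph :: "'a set \<Rightarrow> (nat \<Rightarrow> 'a \<Rightarrow> 'a) \<Rightarrow> bool" where
  "simple_underlying_graph F r \<longleftrightarrow>
     (\<forall>x\<in>F. vcl F r x \<noteq> vcl F r (r 0 x)) \<and>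
     (\<forall>x\<in>F. \<forall>y\<in>F. {vcl F r x, vcl F r (r 0 x)} = {vcl F r y, vcl F r (r 0 y)}
                     \<longrightarrow> ecl F r x = ecl F r y)"

definition three_connected :: "'a set \<Rightarrow> (nat \<Rightarrow> 'a \<Rightarrow> 'a) \<Rightarrow> bool" where
  "three_connected F r \<longleftrightarrow> simple_underlying_graph F r \<and> card (map_vertices F r) \<ge> 4 \<and>
     (\<forall>S \<subseteq> map_vertices F r. card S \<le> 2 \<longrightarrow>
        connected_on (map_vertices F r - S) (graph_adj F r))"

text \<open>The closure of a face consists of the face and the vertices and edges incident to it
(i.e. sharing a flag with it).  For two distinct faces the intersection of the closures is the
union of the common vertices and the (closed) common edges; it is connected iff the graph with
the common vertices and common edges is connected.\<close>
definition face_closures_ok :: "'a set \<Rightarrow> (nat \<Rightarrow> 'a \<Rightarrow> 'a) \<Rightarrow> bool" where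
  "face_closures_ok F r \<longleftrightarrow>
     (\<forall>f1\<in>map_faces F r. \<forall>f2\<in>map_faces F r. f1 \<noteq> f2 \<longrightarrow>
        (let CV = {v \<in> map_vertices F r. v \<inter> f1 \<noteq> {} \<and> v \<inter> f2 \<noteq> {}};
             CE = {e \<in> map_edges F r. e \<inter> f1 \<noteq> {} \<and> e \<inter> f2 \<noteq> {}}
         in connected_on CV {(vcl F r x, vcl F r (r 0 x)) | x. x \<in> F \<and> ecl F r x \<in> CE}))"

definition polyhedral_map :: "'a set \<Rightarrow> (nat \<Rightarrow> 'a \<Rightarrow> 'a) \<Rightarrow> bool" where
  "polyhedral_map F r \<longleftrightarrow> flag_map F r \<and> orientable_map F r \<and> three_connected F r \<and>
     face_closures_ok F r"

text \<open>Automorphisms: permutations of the flags commuting with r 0, r 1, r 2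
(identity outside the flag set, so that they form a finite set).\<close>
definition map_aut :: "'a set \<Rightarrow> (nat \<Rightarrow> 'a \<Rightarrow> 'a) \<Rightarrow> ('a \<Rightarrow> 'a) set" where
  "map_aut F r = {\<phi>. bij_betw \<phi> F F \<and> (\<forall>x\<in>F. \<forall>i<3. \<phi> (r i x) = r i (\<phi> x)) \<and>
                      (\<forall>x. x \<notin> F \<longrightarrow> \<phi> x = x)}"

type_synonym pt = "int \<times> int"
text \<open>A chamber of B_{T_H} is (v, w, f): f a face centre, v a vertex of f, and {v,w} the edge of
f containing v; its colour-0 vertex is v, colour-1 vertex the midpoint of v w, colour-2 vertex f.\<close>
type_synonym hch = "pt \<times> pt \<times> pt"

definition face_centre :: "pt \<Rightarrow> bool" where
  "face_centre p \<longleftrightarrow> (fst p - snd p) mod 3 = 0"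

definition lat_adj :: "pt \<Rightarrow> pt \<Rightarrow> bool" where
  "lat_adj p q \<longleftrightarrow> (fst q - fst p, snd q - snd p) \<in> {(1,0), (-1,0), (0,1), (0,-1), (1,-1), (-1,1)}"

definition hex_chamber :: "hch \<Rightarrow> bool" where
  "hex_chamber t = (case t of (v, w, f) \<Rightarrow>
     face_centre f \<and> \<not> face_centre v \<and> \<not> face_centre w \<and> lat_adj v w \<and> lat_adj v f \<and> lat_adj w f)"

definition hex_refl :: "nat \<Rightarrow> hch \<Rightarrow> hch" where
  "hex_refl i t = (case t of (v, w, f) \<Rightarrow>
     if i = 0 then (w, v, f)
     else if i = 1 then (v, (fst f + fst v - fst w, snd f + snd v - snd w), f)
     else (v, w, (fst v + fst w - fst f, snd v + snd w - snd f)))"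

text \<open>Points scaled by 6.  Colour-j vertex of a chamber; its centroid.\<close>
definition chpt6 :: "hch \<Rightarrow> nat \<Rightarrow> pt" where
  "chpt6 t j = (case t of (v, w, f) \<Rightarrow>
     if j = 0 then (6 * fst v, 6 * snd v)
     else if j = 1 then (3 * (fst v + fst w), 3 * (snd v + snd w))
     else (6 * fst f, 6 * snd f))"

definition centroid6 :: "hch \<Rightarrow> pt" where
  "centroid6 t = (case t of (v, w, f) \<Rightarrow>
     (3 * fst v + fst w + 2 * fst f, 3 * snd v + snd w + 2 * snd f))"

definition gc_corner6 :: "nat \<Rightarrow> nat \<Rightarrow> nat \<Rightarrow> pt" where
  "gc_corner6 l m k =
     (if k = 0 then (6 * int l, 6 * int m)
      else if k = 1 then (3 * (int l - int m), 3 * (int l + 2 * int m))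
      else (0, 0))"

definition cross2 :: "pt \<Rightarrow> pt \<Rightarrow> int" where
  "cross2 a b = fst a * snd b - snd a * fst b"

text \<open>Signed position of p relative to the side of the triangle opposite corner k.\<close>
definition gc_side :: "nat \<Rightarrow> nat \<Rightarrow> nat \<Rightarrow> pt \<Rightarrow> int" where
  "gc_side l m k p =
     (let a = (if k = 0 then 1 else if k = 1 then 2 else 0);
          b = (if k = 0 then 2 else if k = 1 then 0 else 1);
          A = gc_corner6 l m a; B = gc_corner6 l m b
      in cross2 (fst B - fst A, snd B - snd A) (fst p - fst A, snd p - snd A))"

text \<open>Chambers of B_{T_H} inside the triangle GC(l,m) (the triangle is a union of chambers,
so a chamber lies in it iff its centroid lies in the interior).\<close>
definition gc_chamber :: "nat \<Rightarrow> nat \<Rightarrow> hch \<Rightarrow> bool" where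
  "gc_chamber l m t \<longleftrightarrow> hex_chamber t \<and>
     (\<forall>k<3. gc_side l m k (centroid6 t) * gc_side l m k (gc_corner6 l m k) > 0)"

definition wall_on_side :: "nat \<Rightarrow> nat \<Rightarrow> nat \<Rightarrow> hch \<Rightarrow> nat \<Rightarrow> bool" where
  "wall_on_side l m i t k \<longleftrightarrow> (\<forall>j<3. j \<noteq> i \<longrightarrow> gc_side l m k (chpt6 t j) = 0)"

text \<open>Flags of GC(l,m)(P): a chamber c of B_P together with a chamber t of the copy of the
triangle glued into c.  Crossing the side of the triangle opposite corner k leads to the same
position in the (mirror) copy glued into the neighbouring chamber r k c.\<close>
definition gc_flags :: "nat \<Rightarrow> nat \<Rightarrow> 'a set \<Rightarrow> ('a \<times> hch) set" where
  "gc_flags l m F = F \<times> {t. gc_chamber l m t}"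

definition gc_r :: "nat \<Rightarrow> nat \<Rightarrow> (nat \<Rightarrow> 'a \<Rightarrow> 'a) \<Rightarrow> nat \<Rightarrow> 'a \<times> hch \<Rightarrow> 'a \<times> hch" where
  "gc_r l m r i x = (case x of (c, t) \<Rightarrow>
     if gc_chamber l m (hex_refl i t) then (c, hex_refl i t)
     else (let k = (if wall_on_side l m i t 0 then 0
                    else if wall_on_side l m i t 1 then 1 else 2)
           in (r k c, t)))"

end

theory Submission
  imports Defs
begin


definition padd :: "pt \<Rightarrow> pt \<Rightarrow> pt" where "padd p q = (fst p + fst q, snd p + snd q)"
definition psub :: "pt \<Rightarrow> pt \<Rightarrow> pt" where "psub p q = (fst p - fst q, snd p - snd q)"

definition T12 :: "(pt \<times> pt) list" where
 "T12 = [((1, 0), (0, 1)), ((1, 0), (1, -1)), ((-1, 0), (0, -1)), ((-1, 0), (-1, 1)), ((0, 1), (1, 0)), ((0, 1), (-1, 1)), ((0, -1), (-1, 0)), ((0, -1), (1, -1)), ((1, -1), (1, 0)), ((1, -1), (0, -1)), ((-1, 1), (-1, 0)), ((-1, 1), (0, 1))]"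

definition mkch :: "pt \<Rightarrow> pt \<times> pt \<Rightarrow> hch" where
  "mkch f d = (padd f (fst d), padd f (snd d), f)"

lemma fc_iff: "face_centre (a, b) \<longleftrightarrow> (a - b) mod 3 = 0" by (simp add: face_centre_def)

lemma fc_shift: "(f1 - f2) mod 3 = (0::int) \<Longrightarrow> ((f1 + a) - (f2 + b)) mod 3 = (a - b) mod 3"
proof -
  assume "(f1 - f2) mod 3 = 0"
  have "(f1 + a) - (f2 + b) = (f1 - f2) + (a - b)" by simp
  thus ?thesis using \<open>(f1 - f2) mod 3 = 0\<close> by (metis mod_add_left_eq add_0)
qed

lemma T12_char: "((a1::int,a2::int),(b1::int,b2::int)) \<in> set T12 \<longleftrightarrow> 
 (a1 - a2) mod 3 \<noteq> 0 \<and> (b1 - b2) mod 3 \<noteq> 0 \<and>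
       (a1,a2) \<in> {(1,0),(-1,0),(0,1),(0,-1),(1,-1),(-1,1)} \<and> (b1,b2) \<in> {(1,0),(-1,0),(0,1),(0,-1),(1,-1),(-1,1)} \<and>
       (b1-a1,b2-a2) \<in> {(1,0),(-1,0),(0,1),(0,-1),(1,-1),(-1,1)}" (is "?L = ?R")
proof
  assume ?L thus ?R by (auto simp: T12_def)
next
  assume R: ?R
  hence "(a1,a2) \<in> {(1,0),(-1,0),(0,1),(0,-1),(1,-1),(-1,1)}" "(b1,b2) \<in> {(1,0),(-1,0),(0,1),(0,-1),(1,-1),(-1,1)}" by auto
  thus ?L using R unfolding T12_def by (simp only: insert_iff empty_iff prod.inject) (elim disjE conjE; simp)
qed

lemma hexch_mkch: "hex_chamber (mkch (f1,f2) ((a1,a2),(b1,b2))) \<longleftrightarrow> face_centre (f1,f2) \<and> ((a1,a2),(b1,b2)) \<in> set T12"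
proof -
  have A: "lat_adj (f1+a1,f2+a2) (f1,f2) \<longleftrightarrow> (a1,a2) \<in> {(1,0),(-1,0),(0,1),(0,-1),(1,-1),(-1,1)}"
    unfolding lat_adj_def by auto
  have B: "lat_adj (f1+b1,f2+b2) (f1,f2) \<longleftrightarrow> (b1,b2) \<in> {(1,0),(-1,0),(0,1),(0,-1),(1,-1),(-1,1)}"
    unfolding lat_adj_def by auto
  have C: "lat_adj (f1+a1,f2+a2) (f1+b1,f2+b2) \<longleftrightarrow> (b1-a1,b2-a2) \<in> {(1,0),(-1,0),(0,1),(0,-1),(1,-1),(-1,1)}"
    unfolding lat_adj_def by auto
  show ?thesis
  proof (cases "face_centre (f1,f2)")
    case False then show ?thesis unfolding mkch_def hex_chamber_def by simp
  next
    case True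
    hence t: "(f1 - f2) mod 3 = 0" by (simp add: face_centre_def)
    have fv: "face_centre (f1+a1,f2+a2) \<longleftrightarrow> (a1 - a2) mod 3 = 0" 
      using fc_shift[OF t] by (simp add: face_centre_def)
    have fw: "face_centre (f1+b1,f2+b2) \<longleftrightarrow> (b1 - b2) mod 3 = 0" 
      using fc_shift[OF t] by (simp add: face_centre_def)
    have e: "mkch (f1,f2) ((a1,a2),(b1,b2)) = ((f1+a1,f2+a2),(f1+b1,f2+b2),(f1,f2))" by (simp add: mkch_def padd_def)
    have "hex_chamber (mkch (f1,f2) ((a1,a2),(b1,b2))) \<longleftrightarrow> face_centre (f1,f2) \<and> \<not> face_centre (f1+a1,f2+a2) \<and> \<not> face_centre (f1+b1,f2+b2)
       \<and> lat_adj (f1+a1,f2+a2) (f1+b1,f2+b2) \<and> lat_adj (f1+a1,f2+a2) (f1,f2) \<and> lat_adj (f1+b1,f2+b2) (f1,f2)"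
      unfolding e hex_chamber_def by simp
    also have "\<dots> \<longleftrightarrow> face_centre (f1,f2) \<and> ((a1,a2),(b1,b2)) \<in> set T12"
      unfolding T12_char fv fw A B C using True by argo
    finally show ?thesis .
  qed
qed



primrec wact :: "(nat \<Rightarrow> 'a \<Rightarrow> 'a) \<Rightarrow> nat list \<Rightarrow> 'a \<Rightarrow> 'a" where
  "wact r [] x = x"
| "wact r (i#w) x = wact r w (r i x)"

lemma wact_append[simp]: "wact r (u @ v) x = wact r v (wact r u x)"
  by (induction u arbitrary: x) auto

definition rules :: "(nat list \<times> nat list) list" where
 "rules = [([0,0],[]),([1,1],[]),([2,2],[]),([],[0,0]),([],[1,1]),([],[2,2]),
   ([0,1,0,1,0,1],[1,0,1,0,1,0]),([1,0,1,0,1,0],[0,1,0,1,0,1]),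
   ([1,2,1],[2,1,2]),([2,1,2],[1,2,1]),([0,2],[2,0]),([2,0],[0,2])]"

fun check :: "(nat \<times> nat) list \<Rightarrow> nat list \<Rightarrow> nat list \<Rightarrow> bool" where
  "check [] w w' = (w = w')"
| "check ((k,p)#ss) w w' = (k < 12 \<and> p \<le> length w \<and> take (length (fst (rules!k))) (drop p w) = fst (rules!k) \<and>
     check ss (take p w @ snd (rules!k) @ drop (p + length (fst (rules!k))) w) w')"

locale hexmap =
  fixes F :: "'a set" and r :: "nat \<Rightarrow> 'a \<Rightarrow> 'a"
  assumes fin: "finite F" and ne: "F \<noteq> {}"
  and rin: "\<And>i x. i < 3 \<Longrightarrow> x \<in> F \<Longrightarrow> r i x \<in> F"
  and rinv: "\<And>i x. i < 3 \<Longrightarrow> x \<in> F \<Longrightarrow> r i (r i x) = x"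
  and rne: "\<And>i x. i < 3 \<Longrightarrow> x \<in> F \<Longrightarrow> r i x \<noteq> x"
  and c02: "\<And>x. x \<in> F \<Longrightarrow> r 0 (r 2 x) = r 2 (r 0 x)"
  and n02: "\<And>x. x \<in> F \<Longrightarrow> r 0 (r 2 x) \<noteq> x"
  and face6: "\<And>x. x \<in> F \<Longrightarrow> ((r 1 \<circ> r 0) ^^ 6) x = x"
  and face_ne: "\<And>x k. x \<in> F \<Longrightarrow> 0 < k \<Longrightarrow> k < 6 \<Longrightarrow> ((r 1 \<circ> r 0) ^^ k) x \<noteq> x"
  and vert3: "\<And>x. x \<in> F \<Longrightarrow> ((r 2 \<circ> r 1) ^^ 3) x = x"
  and vert_ne: "\<And>x k. x \<in> F \<Longrightarrow> 0 < k \<Longrightarrow> k < 3 \<Longrightarrow> ((r 2 \<circ> r 1) ^^ k) x \<noteq> x"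
  and orient: "\<exists>s :: 'a \<Rightarrow> bool. \<forall>x\<in>F. \<forall>i<3. s (r i x) \<noteq> s x"
  and conn: "\<And>x y. x \<in> F \<Longrightarrow> y \<in> F \<Longrightarrow> (x, y) \<in> (flag_step F r {0,1,2})\<^sup>*"
begin

lemma wact_in: "set w \<subseteq> {..<3} \<Longrightarrow> x \<in> F \<Longrightarrow> wact r w x \<in> F"
  by (induction w arbitrary: x) (auto simp: rin)

lemma wact_rev: "set w \<subseteq> {..<3} \<Longrightarrow> x \<in> F \<Longrightarrow> wact r (rev w) (wact r w x) = x"
proof (induction w arbitrary: x)
  case Nil then show ?case by simp
next
  case (Cons i w)
  have "wact r (rev (i#w)) (wact r (i#w) x) = r i (wact r (rev w) (wact r w (r i x)))" by simp
  also have "\<dots> = r i (r i x)" using Cons by (simp add: rin)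
  also have "\<dots> = x" using Cons by (simp add: rinv)
  finally show ?case .
qed

lemma pow_wact: "((r 1 \<circ> r 0) ^^ k) x = wact r (concat (replicate k [0,1])) x"
  by (induction k arbitrary: x) (simp_all add: funpow_Suc_right del: funpow.simps)

lemma pow_wact2: "((r 2 \<circ> r 1) ^^ k) x = wact r (concat (replicate k [1,2])) x"
  by (induction k arbitrary: x) (simp_all add: funpow_Suc_right del: funpow.simps)

lemma swap_rel: assumes "set a \<subseteq> {..<3}" "set b \<subseteq> {..<3}" "\<And>x. x \<in> F \<Longrightarrow> wact r (a @ b) x = x"
  and "x \<in> F" shows "wact r a x = wact r (rev b) x"
proof -
  have "wact r (rev b) x = wact r (rev b) (wact r b (wact r a x))" using assms(3)[OF assms(4)] by simp
  also have "\<dots> = wact r a x" using wact_rev[OF assms(2) wact_in[OF assms(1,4)]] .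
  finally show ?thesis by simp
qed

lemma rule_sound: assumes "k < 12" "x \<in> F" shows "wact r (fst (rules!k)) x = wact r (snd (rules!k)) x"
proof -
  have b01: "wact r [0,1,0,1,0,1] x = wact r [1,0,1,0,1,0] x" if "x \<in> F" for x
    using swap_rel[of "[0,1,0,1,0,1]" "[0,1,0,1,0,1]", OF _ _ _ that] face6 pow_wact
    by (simp add: numeral_eq_Suc)
  have b12: "wact r [1,2,1] x = wact r [2,1,2] x" if "x \<in> F" for x
    using swap_rel[of "[1,2,1]" "[2,1,2]", OF _ _ _ that] vert3 pow_wact2
    by (simp add: numeral_eq_Suc)
  have k: "k = 0 \<or> k = 1 \<or> k = 2 \<or> k = 3 \<or> k = 4 \<or> k = 5 \<or> k = 6 \<or> k = 7 \<or> k = 8 \<or> k = 9 \<or> k = 10 \<or> k = 11" using assms(1) by presburger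
  show ?thesis using k assms(2) b01 b12
    by (elim disjE) (simp_all add: rules_def rinv c02 rin)
qed

lemma rules_letters: "k < 12 \<Longrightarrow> set (fst (rules!k)) \<subseteq> {..<3} \<and> set (snd (rules!k)) \<subseteq> {..<3}"
proof -
  assume "k < 12" hence "k = 0 \<or> k = 1 \<or> k = 2 \<or> k = 3 \<or> k = 4 \<or> k = 5 \<or> k = 6 \<or> k = 7 \<or> k = 8 \<or> k = 9 \<or> k = 10 \<or> k = 11" by presburger
  thus ?thesis by (elim disjE) (simp_all add: rules_def)
qed

lemma check_sound: "check ss w w' \<Longrightarrow> set w \<subseteq> {..<3} \<Longrightarrow> x \<in> F \<Longrightarrow> wact r w x = wact r w' x"
proof (induction ss arbitrary: w)
  case Nil then show ?case by simp
next
  case (Cons s ss)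
  obtain k p where s: "s = (k,p)" by (cases s)
  let ?l = "fst (rules!k)" and ?rr = "snd (rules!k)"
  have c: "k < 12" "p \<le> length w" "take (length ?l) (drop p w) = ?l"
    and c2: "check ss (take p w @ ?rr @ drop (p + length ?l) w) w'" using Cons.prems(1) s by auto
  have wsplit: "w = take p w @ ?l @ drop (p + length ?l) w"
    using c(3) by (metis append_take_drop_id drop_drop add.commute)
  have L: "set ?l \<subseteq> {..<3}" "set ?rr \<subseteq> {..<3}" using rules_letters[OF c(1)] by auto
  have st: "set (take p w) \<subseteq> {..<3}" "set (drop (p + length ?l) w) \<subseteq> {..<3}"
    using Cons.prems(2) by (meson order_trans set_take_subset set_drop_subset)+
  have "wact r w x = wact r (drop (p + length ?l) w) (wact r ?l (wact r (take p w) x))"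
    by (subst wsplit) simp
  also have "\<dots> = wact r (drop (p + length ?l) w) (wact r ?rr (wact r (take p w) x))"
    using rule_sound[OF c(1) wact_in[OF st(1) Cons.prems(3)]] by simp
  also have "\<dots> = wact r (take p w @ ?rr @ drop (p + length ?l) w) x" by simp
  also have "\<dots> = wact r w' x"
    using Cons.IH[OF c2] st L Cons.prems(3) by auto
  finally show ?case .
qed

end


definition ip :: "('a \<Rightarrow> 'a) \<Rightarrow> ('a \<Rightarrow> 'a) \<Rightarrow> int \<Rightarrow> 'a \<Rightarrow> 'a" where
  "ip T Ti n = (if 0 \<le> n then T ^^ nat n else Ti ^^ nat (- n))"

definition ipair :: "'a set \<Rightarrow> ('a \<Rightarrow> 'a) \<Rightarrow> ('a \<Rightarrow> 'a) \<Rightarrow> bool" where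
  "ipair F T Ti \<longleftrightarrow> (\<forall>z\<in>F. T z \<in> F \<and> Ti z \<in> F \<and> T (Ti z) = z \<and> Ti (T z) = z)"

lemma funpow_in: "(\<And>z. z \<in> F \<Longrightarrow> T z \<in> F) \<Longrightarrow> z \<in> F \<Longrightarrow> (T ^^ n) z \<in> F"
  by (induction n) auto

lemma ip_in: "ipair F T Ti \<Longrightarrow> z \<in> F \<Longrightarrow> ip T Ti n z \<in> F"
  unfolding ip_def ipair_def using funpow_in[of F T] funpow_in[of F Ti] by auto

lemma ip_0[simp]: "ip T Ti 0 z = z" by (simp add: ip_def)
lemma ip_1: "ip T Ti 1 z = T z" by (simp add: ip_def)
lemma ip_m1: "ip T Ti (-1) z = Ti z" by (simp add: ip_def)

lemma ip_succ: assumes "ipair F T Ti" "z \<in> F" shows "ip T Ti (n + 1) z = T (ip T Ti n z)"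
proof (cases "0 \<le> n")
  case True
  have "nat (n + 1) = Suc (nat n)" using True by simp
  then show ?thesis using True by (simp add: ip_def)
next
  case False
  define k where "k = nat (- n) - 1"
  have k: "n = - int (Suc k)" using False by (simp add: k_def)
  have z: "(Ti ^^ k) z \<in> F" using funpow_in[of F Ti] assms unfolding ipair_def by auto
  show ?thesis
  proof (cases k)
    case 0 then show ?thesis using k assms unfolding ip_def ipair_def by simp
  next
    case (Suc j)
    have n1: "n + 1 = - int k" using k by simp
    have nk: "nat (int k) = k" by simp
    have nk2: "nat (int k + 1) = Suc k" by simp
    have "ip T Ti (n + 1) z = (Ti ^^ k) z" unfolding n1 ip_def using Suc nk by (simp del: of_nat_Suc)
    moreover have "ip T Ti n z = Ti ((Ti ^^ k) z)" unfolding k ip_def using nk2 by simp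
    ultimately show ?thesis using assms z unfolding ipair_def by simp
  qed
qed

lemma ipair_sym: "ipair F T Ti \<Longrightarrow> ipair F Ti T" unfolding ipair_def by auto

lemma ip_neg: "ip T Ti (- n) z = ip Ti T n z"
  by (simp add: ip_def) 

lemma ip_pred: assumes "ipair F T Ti" "z \<in> F" shows "ip T Ti (n - 1) z = Ti (ip T Ti n z)"
proof -
  have "ip T Ti (n - 1) z = ip Ti T (- n + 1) z" using ip_neg[of T Ti "- n + 1"] by simp
  also have "\<dots> = Ti (ip Ti T (- n) z)" using ip_succ[OF ipair_sym[OF assms(1)] assms(2), of "- n"] by simp
  also have "\<dots> = Ti (ip T Ti n z)" using ip_neg[of Ti T n] by simp
  finally show ?thesis .
qed

lemma ip_add: assumes "ipair F T Ti" "z \<in> F" shows "ip T Ti (a + b) z = ip T Ti a (ip T Ti b z)"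
proof (induction a rule: int_induct[where k=0])
  case base then show ?case by simp
next
  case (step1 i)
  have "ip T Ti (i + 1 + b) z = ip T Ti ((i + b) + 1) z" by (simp add: algebra_simps)
  also have "\<dots> = T (ip T Ti (i + b) z)" by (rule ip_succ[OF assms])
  also have "\<dots> = T (ip T Ti i (ip T Ti b z))" using step1 by simp
  also have "\<dots> = ip T Ti (i + 1) (ip T Ti b z)" using ip_succ[OF assms(1) ip_in[OF assms]] by simp
  finally show ?case .
next
  case (step2 i)
  have "ip T Ti (i - 1 + b) z = ip T Ti ((i + b) - 1) z" by (simp add: algebra_simps)
  also have "\<dots> = Ti (ip T Ti (i + b) z)" by (rule ip_pred[OF assms])
  also have "\<dots> = Ti (ip T Ti i (ip T Ti b z))" using step2 by simp
  also have "\<dots> = ip T Ti (i - 1) (ip T Ti b z)" using ip_pred[OF assms(1) ip_in[OF assms]] by simp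
  finally show ?case .
qed

lemma comm_inv: assumes "ipair F T Ti" "\<And>z. z \<in> F \<Longrightarrow> S z \<in> F" "\<And>z. z \<in> F \<Longrightarrow> T (S z) = S (T z)" "z \<in> F"
  shows "Ti (S z) = S (Ti z)"
proof -
  have "Ti (S z) = Ti (S (T (Ti z)))" using assms(1,4) unfolding ipair_def by simp
  also have "\<dots> = Ti (T (S (Ti z)))" using assms(1,3,4) unfolding ipair_def by simp
  also have "\<dots> = S (Ti z)" using assms(1,2,4) unfolding ipair_def by simp
  finally show ?thesis .
qed

lemma ip_comm1: assumes "ipair F T Ti" "\<And>z. z \<in> F \<Longrightarrow> S z \<in> F" "\<And>z. z \<in> F \<Longrightarrow> T (S z) = S (T z)" "z \<in> F"
  shows "ip T Ti a (S z) = S (ip T Ti a z)"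
proof (induction a rule: int_induct[where k=0])
  case base then show ?case by simp
next
  case (step1 i)
  have "ip T Ti (i + 1) (S z) = T (ip T Ti i (S z))" using ip_succ[OF assms(1) assms(2)[OF assms(4)]] .
  also have "\<dots> = T (S (ip T Ti i z))" using step1 by simp
  also have "\<dots> = S (T (ip T Ti i z))" using assms(3) ip_in[OF assms(1,4)] by simp
  also have "\<dots> = S (ip T Ti (i + 1) z)" using ip_succ[OF assms(1,4)] by simp
  finally show ?case .
next
  case (step2 i)
  have "ip T Ti (i - 1) (S z) = Ti (ip T Ti i (S z))" using ip_pred[OF assms(1) assms(2)[OF assms(4)]] .
  also have "\<dots> = Ti (S (ip T Ti i z))" using step2 by simp
  also have "\<dots> = S (Ti (ip T Ti i z))" using comm_inv[of F T Ti S, OF assms(1-3)] ip_in[OF assms(1,4)] by simp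
  also have "\<dots> = S (ip T Ti (i - 1) z)" using ip_pred[OF assms(1,4)] by simp
  finally show ?case .
qed

lemma ip_comm: assumes "ipair F T Ti" "ipair F S Si" "\<And>z. z \<in> F \<Longrightarrow> T (S z) = S (T z)" "z \<in> F"
  shows "ip T Ti a (ip S Si b z) = ip S Si b (ip T Ti a z)"
proof -
  have sF: "\<And>z. z \<in> F \<Longrightarrow> S z \<in> F" "\<And>z. z \<in> F \<Longrightarrow> Si z \<in> F" using assms(2) unfolding ipair_def by auto
  have c2: "\<And>z. z \<in> F \<Longrightarrow> T (Si z) = Si (T z)"
  proof -
    fix z assume z: "z \<in> F"
    have tF: "\<And>z. z \<in> F \<Longrightarrow> T z \<in> F" using assms(1) unfolding ipair_def by auto
    have "\<And>z. z \<in> F \<Longrightarrow> S (T z) = T (S z)" using assms(3) by simp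
    from comm_inv[of F S Si T z, OF assms(2) tF this z] show "T (Si z) = Si (T z)" by simp
  qed
  have ipS: "\<And>z. z \<in> F \<Longrightarrow> ip T Ti a (S z) = S (ip T Ti a z)" by (rule ip_comm1[of F T Ti S, OF assms(1) sF(1) assms(3)])
  have ipSi: "\<And>z. z \<in> F \<Longrightarrow> ip T Ti a (Si z) = Si (ip T Ti a z)" by (rule ip_comm1[of F T Ti Si, OF assms(1) sF(2) c2])
  show ?thesis
  proof (induction b rule: int_induct[where k=0])
    case base then show ?case by simp
  next
    case (step1 i)
    have "ip T Ti a (ip S Si (i + 1) z) = ip T Ti a (S (ip S Si i z))" using ip_succ[OF assms(2,4)] by simp
    also have "\<dots> = S (ip T Ti a (ip S Si i z))" using ipS ip_in[OF assms(2,4)] by simp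
    also have "\<dots> = S (ip S Si i (ip T Ti a z))" using step1 by simp
    also have "\<dots> = ip S Si (i + 1) (ip T Ti a z)" using ip_succ[OF assms(2) ip_in[OF assms(1,4)]] by simp
    finally show ?case .
  next
    case (step2 i)
    have "ip T Ti a (ip S Si (i - 1) z) = ip T Ti a (Si (ip S Si i z))" using ip_pred[OF assms(2,4)] by simp
    also have "\<dots> = Si (ip T Ti a (ip S Si i z))" using ipSi ip_in[OF assms(2,4)] by simp
    also have "\<dots> = Si (ip S Si i (ip T Ti a z))" using step2 by simp
    also have "\<dots> = ip S Si (i - 1) (ip T Ti a z)" using ip_pred[OF assms(2) ip_in[OF assms(1,4)]] by simp
    finally show ?case .
  qed
qed



lemma hexch_mkch': "hex_chamber (mkch f d) \<longleftrightarrow> face_centre f \<and> d \<in> set T12"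
  using hexch_mkch[of "fst f" "snd f" "fst (fst d)" "snd (fst d)" "fst (snd d)" "snd (snd d)"] by simp

lemma hexch_E: assumes "hex_chamber t" obtains f d where "t = mkch f d" "face_centre f" "d \<in> set T12"
proof -
  obtain v w f where t: "t = (v,w,f)" by (cases t) auto
  have "t = mkch f (psub v f, psub w f)" unfolding t mkch_def padd_def psub_def by simp
  thus ?thesis using that assms hexch_mkch' by metis
qed

lemma refl_mkch:
  "hex_refl 0 (mkch f d) = mkch f (snd d, fst d)"
  "hex_refl 1 (mkch f d) = mkch f (fst d, psub (fst d) (snd d))"
  "hex_refl 2 (mkch f d) = mkch (padd f (padd (fst d) (snd d))) ((- fst (snd (d)), - snd (snd d)), (- fst (fst d), - snd (fst d)))"
  by (auto simp: hex_refl_def mkch_def padd_def psub_def)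

lemma T12_cases: "d \<in> set T12 \<Longrightarrow> d = ((1, 0), (0, 1)) \<or> d = ((1, 0), (1, -1)) \<or> d = ((-1, 0), (0, -1)) \<or> d = ((-1, 0), (-1, 1)) \<or> d = ((0, 1), (1, 0)) \<or> d = ((0, 1), (-1, 1)) \<or> d = ((0, -1), (-1, 0)) \<or> d = ((0, -1), (1, -1)) \<or> d = ((1, -1), (1, 0)) \<or> d = ((1, -1), (0, -1)) \<or> d = ((-1, 1), (-1, 0)) \<or> d = ((-1, 1), (0, 1))"
  unfolding T12_def by (simp only: set_simps insert_iff empty_iff simp_thms)

lemma T12_refl: "d \<in> set T12 \<Longrightarrow> (snd d, fst d) \<in> set T12 \<and> (fst d, psub (fst d) (snd d)) \<in> set T12 \<and>
   ((- fst (snd (d)), - snd (snd d)), (- fst (fst d), - snd (fst d))) \<in> set T12 \<and>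
   face_centre (padd (fst d) (snd d))"
  by (drule T12_cases) (elim disjE; simp add: psub_def padd_def face_centre_def T12_def)

lemma fc_padd: "face_centre f \<Longrightarrow> face_centre g \<Longrightarrow> face_centre (padd f g)"
proof -
  assume a: "face_centre f" "face_centre g"
  have "fst (padd f g) - snd (padd f g) = (fst f - snd f) + (fst g - snd g)" by (simp add: padd_def)
  thus ?thesis using a unfolding face_centre_def by (metis mod_add_eq add_0 mod_0)
qed

lemma hexch_refl: "hex_chamber t \<Longrightarrow> i < 3 \<Longrightarrow> hex_chamber (hex_refl i t)"
proof -
  assume h: "hex_chamber t" "i < 3"
  from h(1) obtain f d where t: "t = mkch f d" "face_centre f" "d \<in> set T12" by (rule hexch_E)
  note T = T12_refl[OF t(3)] fc_padd[OF t(2)]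
  have "i = 0 \<or> i = 1 \<or> i = 2" using h by auto
  moreover have "hex_chamber (hex_refl 0 t)" unfolding t(1) refl_mkch hexch_mkch' using T t by simp
  moreover have "hex_chamber (hex_refl 1 t)" unfolding t(1) refl_mkch hexch_mkch' using T t by simp
  moreover have "hex_chamber (hex_refl 2 t)" unfolding t(1) refl_mkch hexch_mkch' using T t by simp
  ultimately show ?thesis by auto
qed

lemma refl_refl: "i < 3 \<Longrightarrow> hex_refl i (hex_refl i t) = t"
  by (cases t) (auto simp: hex_refl_def)


definition lin :: "pt \<times> pt \<Rightarrow> pt \<Rightarrow> pt" where
  "lin Q p = (fst (fst Q) * fst p + fst (snd Q) * snd p, snd (fst Q) * fst p + snd (snd Q) * snd p)"
definition aff :: "pt \<times> pt \<Rightarrow> pt \<Rightarrow> pt \<Rightarrow> pt" where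
  "aff Q g p = padd g (lin Q p)"
definition cmap :: "(pt \<Rightarrow> pt) \<Rightarrow> hch \<Rightarrow> hch" where
  "cmap h t = (case t of (v, w, f) \<Rightarrow> (h v, h w, h f))"
definition tr :: "pt \<Rightarrow> pt \<Rightarrow> pt" where "tr a p = padd p a"

definition Id2 :: "pt \<times> pt" where "Id2 = ((1,0),(0,1))"

lemma tr_aff: "tr a = aff Id2 a"
  by (rule ext) (simp add: tr_def aff_def padd_def lin_def Id2_def)

lemma cmap_refl: "i < 3 \<Longrightarrow> hex_refl i (cmap (aff Q g) t) = cmap (aff Q g) (hex_refl i t)"
  by (cases t) (auto simp: hex_refl_def cmap_def aff_def padd_def lin_def algebra_simps)

lemma cmap_refl_tr: "i < 3 \<Longrightarrow> hex_refl i (cmap (tr a) t) = cmap (tr a) (hex_refl i t)"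
  by (simp add: tr_aff cmap_refl)

lemma wact_cmap: "set w \<subseteq> {..<3} \<Longrightarrow> wact hex_refl w (cmap (aff Q g) t) = cmap (aff Q g) (wact hex_refl w t)"
  by (induction w arbitrary: t) (auto simp: cmap_refl)

lemma wact_cmap_tr: "set w \<subseteq> {..<3} \<Longrightarrow> wact hex_refl w (cmap (tr a) t) = cmap (tr a) (wact hex_refl w t)"
  by (simp add: tr_aff wact_cmap)

lemma cmap_mkch: "cmap (aff Q g) (mkch f d) = mkch (aff Q g f) (lin Q (fst d), lin Q (snd d))"
  by (simp add: cmap_def mkch_def aff_def padd_def lin_def algebra_simps)

lemma fc_ex: "face_centre f \<longleftrightarrow> (\<exists>k. fst f = snd f + 3 * k)"
proof -
  have "(fst f - snd f) mod 3 = 0 \<longleftrightarrow> (3::int) dvd (fst f - snd f)" by (simp add: mod_eq_0_iff_dvd)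
  also have "\<dots> \<longleftrightarrow> (\<exists>k. fst f - snd f = 3 * k)" by (simp add: dvd_def)
  also have "\<dots> \<longleftrightarrow> (\<exists>k. fst f = snd f + 3 * k)" by (metis add_diff_cancel_left' diff_add_cancel add.commute)
  finally show ?thesis by (simp add: face_centre_def)
qed

lemma fc_lin: assumes "Q \<in> set T12" "face_centre f" shows "face_centre (lin Q f)"
proof -
  obtain a b c d where Q: "Q = ((a,b),(c,d))" by (metis prod.collapse)
  obtain f1 f2 where f: "f = (f1,f2)" by (cases f)
  obtain k where k: "f1 = f2 + 3 * k" using assms(2) fc_ex f by auto
  have q: "face_centre (padd (fst Q) (snd Q))" using T12_refl[OF assms(1)] by simp
  then obtain j where j: "a + c = b + d + 3 * j" using fc_ex Q by (auto simp: padd_def)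
  have c: "c = b + d + 3 * j - a" using j by simp
  have "a * f1 + c * f2 = b * f1 + d * f2 + 3 * (f2 * j + k * (a - b))"
    unfolding c k by (simp add: algebra_simps)
  hence "fst (lin Q f) = snd (lin Q f) + 3 * (f2 * j + k * (a - b))" unfolding Q f lin_def by simp
  thus ?thesis using fc_ex by blast
qed

lemma fc_aff: "Q \<in> set T12 \<Longrightarrow> face_centre g \<Longrightarrow> face_centre f \<Longrightarrow> face_centre (aff Q g f)"
  unfolding aff_def using fc_lin fc_padd by blast

lemma T12_lin: "Q \<in> set T12 \<Longrightarrow> d \<in> set T12 \<Longrightarrow> (lin Q (fst d), lin Q (snd d)) \<in> set T12"
  apply (drule T12_cases)+
  apply (elim disjE; simp add: lin_def T12_def)
  done

lemma hexch_cmap: assumes "Q \<in> set T12" "face_centre g" "hex_chamber t" shows "hex_chamber (cmap (aff Q g) t)"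
proof -
  from assms(3) obtain f d where t: "t = mkch f d" "face_centre f" "d \<in> set T12" by (rule hexch_E)
  show ?thesis unfolding t cmap_mkch hexch_mkch' using fc_aff[OF assms(1,2) t(2)] T12_lin[OF assms(1) t(3)] by simp
qed

lemma Id2_T12: "Id2 \<in> set T12" by (simp add: Id2_def T12_def)

lemma fc_0: "face_centre (0,0)" by (simp add: face_centre_def)

lemma hexch_tr: "face_centre a \<Longrightarrow> hex_chamber t \<Longrightarrow> hex_chamber (cmap (tr a) t)"
  by (simp add: tr_aff hexch_cmap Id2_T12)

definition hstep :: "(hch \<times> hch) set" where
  "hstep = {(a, b). hex_chamber a \<and> (\<exists>i<3. b = hex_refl i a)}"

definition C0 :: hch where "C0 = mkch (0,0) ((1,0),(0,1))"

lemma C0_hex: "hex_chamber C0" by (simp add: C0_def hexch_mkch' fc_0 T12_def)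

lemma reach_word: "hex_chamber a \<Longrightarrow> set w \<subseteq> {..<3} \<Longrightarrow> (a, wact hex_refl w a) \<in> hstep\<^sup>* \<and> hex_chamber (wact hex_refl w a)"
proof (induction w arbitrary: a)
  case Nil then show ?case by simp
next
  case (Cons i w)
  have h: "hex_chamber (hex_refl i a)" "i < 3" using Cons.prems hexch_refl by auto
  have s: "(a, hex_refl i a) \<in> hstep" unfolding hstep_def using Cons.prems h by blast
  show ?case using Cons.IH[OF h(1)] Cons.prems s by (auto intro: converse_rtrancl_into_rtrancl)
qed

definition Htab :: "((pt \<times> pt) \<times> nat list) list" where
 "Htab = [(((1, 0), (0, 1)), []), (((1, 0), (1, -1)), [1]), (((-1, 0), (0, -1)), [0, 1, 0, 1, 0, 1]), (((-1, 0), (-1, 1)), [0, 1, 0, 1, 0]), (((0, 1), (1, 0)), [0]), (((0, 1), (-1, 1)), [0, 1]), (((0, -1), (-1, 0)), [1, 0, 1, 0, 1]), (((0, -1), (1, -1)), [1, 0, 1, 0]), (((1, -1), (1, 0)), [1, 0]), (((1, -1), (0, -1)), [1, 0, 1]), (((-1, 1), (-1, 0)), [0, 1, 0, 1]), (((-1, 1), (0, 1)), [0, 1, 0])]"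

definition Hw :: "pt \<times> pt \<Rightarrow> nat list" where "Hw d = the (map_of Htab d)"

definition w1 :: "nat list" where "w1 = [2, 1, 0, 1, 0, 1]"
definition w2 :: "nat list" where "w2 = [1, 2, 1, 0, 1, 0]"

lemma Hw_letters: "d \<in> set T12 \<Longrightarrow> set (Hw d) \<subseteq> {..<3}"
  by (drule T12_cases) (elim disjE; simp add: Hw_def Htab_def)

lemma Hw_mkch: "d \<in> set T12 \<Longrightarrow> wact hex_refl (Hw d) C0 = mkch (0,0) d"
  by (drule T12_cases) (elim disjE; simp add: Hw_def Htab_def C0_def mkch_def hex_refl_def padd_def)

lemma mkch_tr: "mkch f d = cmap (tr f) (mkch (0,0) d)"
  by (simp add: mkch_def cmap_def tr_def padd_def)

lemma w1_C0: "wact hex_refl w1 C0 = cmap (tr (1,1)) C0"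
  by (simp add: w1_def C0_def mkch_def hex_refl_def padd_def cmap_def tr_def)
lemma w2_C0: "wact hex_refl w2 C0 = cmap (tr (2,-1)) C0"
  by (simp add: w2_def C0_def mkch_def hex_refl_def padd_def cmap_def tr_def)

lemma wact_rev_h: "set w \<subseteq> {..<3} \<Longrightarrow> wact hex_refl (rev w) (wact hex_refl w t) = t"
  by (induction w arbitrary: t) (auto simp: refl_refl)

lemma tr_tr: "cmap (tr a) (cmap (tr b) t) = cmap (tr (padd a b)) t"
  by (cases t) (simp add: cmap_def tr_def padd_def algebra_simps)

lemma reach_step: assumes "(C0, cmap (tr a) C0) \<in> hstep\<^sup>*" "face_centre a" "set w \<subseteq> {..<3}"
   "wact hex_refl w C0 = cmap (tr b) C0"
  shows "(C0, cmap (tr (padd a b)) C0) \<in> hstep\<^sup>*"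
proof -
  have "wact hex_refl w (cmap (tr a) C0) = cmap (tr (padd a b)) C0"
    using wact_cmap_tr[OF assms(3)] assms(4) tr_tr by simp
  moreover have "(cmap (tr a) C0, wact hex_refl w (cmap (tr a) C0)) \<in> hstep\<^sup>*"
    using reach_word[OF hexch_tr[OF assms(2) C0_hex] assms(3)] by simp
  ultimately show ?thesis using assms(1) by simp
qed

lemma rev_tr: assumes "set w \<subseteq> {..<3}" "wact hex_refl w C0 = cmap (tr b) C0"
  shows "wact hex_refl (rev w) C0 = cmap (tr (- fst b, - snd b)) C0"
proof -
  have "wact hex_refl w (cmap (tr (- fst b, - snd b)) C0) = cmap (tr (- fst b, - snd b)) (cmap (tr b) C0)"
    using wact_cmap_tr[OF assms(1)] assms(2) by simp
  also have "\<dots> = C0" by (simp add: tr_tr padd_def) (cases C0, simp add: cmap_def tr_def padd_def)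
  finally have "wact hex_refl (rev w) (wact hex_refl w (cmap (tr (- fst b, - snd b)) C0)) = wact hex_refl (rev w) C0" by simp
  thus ?thesis using wact_rev_h[OF assms(1)] by simp
qed

lemma letters_w: "set w1 \<subseteq> {..<3}" "set w2 \<subseteq> {..<3}" "set (rev w1) \<subseteq> {..<3}" "set (rev w2) \<subseteq> {..<3}"
  by (auto simp: w1_def w2_def)

lemma reach_lattice: "(C0, cmap (tr (n1 + 2 * n2, n1 - n2)) C0) \<in> hstep\<^sup>*"
proof -
  have fcx: "face_centre (n1 + 2 * n2, n1 - n2)" for n1 n2 :: int by (simp add: face_centre_def)
  have A: "(C0, cmap (tr (n1, n1)) C0) \<in> hstep\<^sup>*" for n1 :: int
  proof (induction n1 rule: int_induct[where k=0])
    case base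
    have "cmap (tr (0,0)) C0 = C0" by (simp add: C0_def mkch_def cmap_def tr_def padd_def)
    then show ?case by simp
  next
    case (step1 i)
    have "(C0, cmap (tr (padd (i,i) (1,1))) C0) \<in> hstep\<^sup>*"
      by (rule reach_step[OF step1(2) _ letters_w(1) w1_C0]) (simp add: face_centre_def)
    thus ?case by (simp add: padd_def)
  next
    case (step2 i)
    have "(C0, cmap (tr (padd (i,i) (-1,-1))) C0) \<in> hstep\<^sup>*"
      using reach_step[OF step2(2) _ letters_w(3) rev_tr[OF letters_w(1) w1_C0]] by (simp add: face_centre_def)
    thus ?case by (simp add: padd_def)
  qed
  have B: "(C0, cmap (tr (n1 + 2 * n2, n1 - n2)) C0) \<in> hstep\<^sup>*" for n2 :: int
  proof (induction n2 rule: int_induct[where k=0])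
    case base then show ?case using A by simp
  next
    case (step1 i)
    have "(C0, cmap (tr (padd (n1 + 2 * i, n1 - i) (2,-1))) C0) \<in> hstep\<^sup>*"
      by (rule reach_step[OF step1(2) fcx letters_w(2) w2_C0])
    thus ?case by (simp add: padd_def algebra_simps)
  next
    case (step2 i)
    have "(C0, cmap (tr (padd (n1 + 2 * i, n1 - i) (-2,1))) C0) \<in> hstep\<^sup>*"
      using reach_step[OF step2(2) fcx letters_w(4) rev_tr[OF letters_w(2) w2_C0]] by simp
    thus ?case by (simp add: padd_def algebra_simps)
  qed
  show ?thesis using B .
qed

lemma fc_coords: assumes "face_centre f" shows "f = ((fst f + 2 * snd f) div 3 + 2 * ((fst f - snd f) div 3), (fst f + 2 * snd f) div 3 - (fst f - snd f) div 3)"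
proof -
  obtain k where k: "fst f = snd f + 3 * k" using assms fc_ex by auto
  have a: "(fst f + 2 * snd f) div 3 = snd f + k" unfolding k by simp
  have b: "(fst f - snd f) div 3 = k" unfolding k by simp
  have "f = (fst f, snd f)" by simp
  also have "\<dots> = (snd f + k + 2 * k, snd f + k - k)" using k by simp
  finally show ?thesis unfolding a b .
qed

lemma reach_all: "hex_chamber t \<Longrightarrow> (C0, t) \<in> hstep\<^sup>*"
proof -
  assume "hex_chamber t"
  then obtain f d where t: "t = mkch f d" "face_centre f" "d \<in> set T12" by (rule hexch_E)
  have r1: "(C0, cmap (tr f) C0) \<in> hstep\<^sup>*" using reach_lattice[of "(fst f + 2 * snd f) div 3" "(fst f - snd f) div 3"]
    by (simp only: fc_coords[OF t(2), symmetric])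
  have "wact hex_refl (Hw d) (cmap (tr f) C0) = t"
    unfolding t(1) wact_cmap_tr[OF Hw_letters[OF t(3)]] Hw_mkch[OF t(3)] by (rule mkch_tr[symmetric])
  moreover have "(cmap (tr f) C0, wact hex_refl (Hw d) (cmap (tr f) C0)) \<in> hstep\<^sup>*"
    using reach_word[OF hexch_tr[OF t(2) C0_hex] Hw_letters[OF t(3)]] by simp
  ultimately show ?thesis using r1 by simp
qed

lemma hstep_sym: "(a, b) \<in> hstep\<^sup>* \<Longrightarrow> (b, a) \<in> hstep\<^sup>*"
proof (induction rule: rtrancl_induct)
  case base then show ?case by simp
next
  case (step y z)
  then obtain i where yz: "z = hex_refl i y" "hex_chamber y" "i < 3" unfolding hstep_def by auto
  have "(z, hex_refl i z) \<in> hstep" unfolding hstep_def using hexch_refl yz by blast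
  hence "(z, y) \<in> hstep" using yz refl_refl by simp
  then show ?case using step.IH by (auto intro: converse_rtrancl_into_rtrancl)
qed

lemma hconn: "hex_chamber a \<Longrightarrow> hex_chamber b \<Longrightarrow> (a, b) \<in> hstep\<^sup>*"
  using reach_all hstep_sym by (meson rtrancl_trans)

lemma hinduct: assumes "hex_chamber a" "P a" "\<And>t i. hex_chamber t \<Longrightarrow> i < 3 \<Longrightarrow> P t \<Longrightarrow> P (hex_refl i t)"
   "hex_chamber b" shows "P b"
proof -
  have "(a, b) \<in> hstep\<^sup>*" using hconn assms by blast
  thus ?thesis
  proof (induction rule: rtrancl_induct)
    case base then show ?case using assms(2) by simp
  next
    case (step y z)
    then obtain i where "hex_chamber y" "i < 3" "z = hex_refl i y" unfolding hstep_def by blast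
    then show ?case using assms(3) step.IH by blast
  qed
qed



definition NT :: "pt \<times> pt \<Rightarrow> nat \<Rightarrow> pt \<times> pt" where
  "NT d i = (if i = 0 then (snd d, fst d) else if i = 1 then (fst d, psub (fst d) (snd d))
             else ((- fst (snd d), - snd (snd d)), (- fst (fst d), - snd (fst d))))"
definition SH :: "pt \<times> pt \<Rightarrow> nat \<Rightarrow> pt" where
  "SH d i = (if i = 2 then padd (fst d) (snd d) else (0,0))"
definition coords :: "pt \<Rightarrow> int \<times> int" where
  "coords f = ((fst f + 2 * snd f) div 3, (fst f - snd f) div 3)"

lemma padd_0: "padd f (0,0) = f" by (simp add: padd_def)

lemma refl_gen: "i < 3 \<Longrightarrow> hex_refl i (mkch f d) = mkch (padd f (SH d i)) (NT d i)"
proof -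
  assume "i < 3" hence c: "i = 0 \<or> i = 1 \<or> i = 2" by auto
  have 0: "hex_refl 0 (mkch f d) = mkch (padd f (SH d 0)) (NT d 0)" unfolding refl_mkch NT_def SH_def by (simp add: padd_0)
  have 1: "hex_refl 1 (mkch f d) = mkch (padd f (SH d 1)) (NT d 1)" unfolding refl_mkch NT_def SH_def by (simp add: padd_0)
  have 2: "hex_refl 2 (mkch f d) = mkch (padd f (SH d 2)) (NT d 2)" unfolding refl_mkch NT_def SH_def by (simp add: padd_0)
  from c show ?thesis
  proof (elim disjE)
    assume "i = 0" thus ?thesis using 0 by simp
  next
    assume e: "i = 1" show ?thesis unfolding e by (rule 1)
  next
    assume e: "i = 2" show ?thesis unfolding e by (rule 2)
  qed
qed

lemma SH_fc: "d \<in> set T12 \<Longrightarrow> face_centre (SH d i)"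
  using T12_refl[of d] by (simp add: SH_def fc_0)

lemma coords_add: assumes "face_centre g" shows "coords (padd f g) = (fst (coords f) + fst (coords g), snd (coords f) + snd (coords g))"
proof -
  obtain k where k: "fst g = snd g + 3 * k" using assms fc_ex by auto
  have a: "fst (padd f g) + 2 * snd (padd f g) = (fst f + 2 * snd f) + 3 * (snd g + k)" using k by (simp add: padd_def)
  have b: "fst (padd f g) - snd (padd f g) = (fst f - snd f) + 3 * k" using k by (simp add: padd_def)
  have c: "fst g + 2 * snd g = 3 * (snd g + k)" "fst g - snd g = 3 * k" using k by simp_all
  show ?thesis unfolding coords_def a b c by simp
qed

context hexmap begin

definition x0 :: 'a where "x0 = (SOME x. x \<in> F)"
definition T1 :: "'a \<Rightarrow> 'a" where "T1 = wact r w1"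
definition T1i :: "'a \<Rightarrow> 'a" where "T1i = wact r (rev w1)"
definition T2 :: "'a \<Rightarrow> 'a" where "T2 = wact r w2"
definition T2i :: "'a \<Rightarrow> 'a" where "T2i = wact r (rev w2)"
definition Tr :: "int \<times> int \<Rightarrow> 'a" where "Tr n = ip T1 T1i (fst n) (ip T2 T2i (snd n) x0)"
definition D :: "hch \<Rightarrow> 'a" where
  "D t = (case t of (v, w, f) \<Rightarrow> wact r (Hw (psub v f, psub w f)) (Tr (coords f)))"

lemma x0_in: "x0 \<in> F" unfolding x0_def using ne by (simp add: some_in_eq)

lemma ipair1: "ipair F T1 T1i"
  unfolding ipair_def T1_def T1i_def using wact_in wact_rev[of w1] wact_rev[of "rev w1"] letters_w by auto
lemma ipair2: "ipair F T2 T2i"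
  unfolding ipair_def T2_def T2i_def using wact_in wact_rev[of w2] wact_rev[of "rev w2"] letters_w by auto

lemma eqv_0: assumes z: "z \<in> F" shows "wact r (Hw ((1, 0), (0, 1)) @ [0]) z = wact r (Hw (NT ((1, 0), (0, 1)) 0)) (ip T1 T1i (fst (coords (SH ((1, 0), (0, 1)) 0))) (ip T2 T2i (snd (coords (SH ((1, 0), (0, 1)) 0))) z))"
proof -
  have e: "wact r (Hw (NT ((1, 0), (0, 1)) 0)) (ip T1 T1i (fst (coords (SH ((1, 0), (0, 1)) 0))) (ip T2 T2i (snd (coords (SH ((1, 0), (0, 1)) 0))) z)) = wact r ([] @ [] @ Hw ((0, 1), (1, 0))) z"
    by (simp add: NT_def SH_def coords_def padd_def psub_def ip_1 ip_m1 T1_def T1i_def T2_def T2i_def del: wact.simps)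
  show ?thesis unfolding e by (rule check_sound[of "[]"]) (simp_all add: z rules_def Hw_def Htab_def w1_def w2_def)
qed

lemma eqv_1: assumes z: "z \<in> F" shows "wact r (Hw ((1, 0), (0, 1)) @ [1]) z = wact r (Hw (NT ((1, 0), (0, 1)) 1)) (ip T1 T1i (fst (coords (SH ((1, 0), (0, 1)) 1))) (ip T2 T2i (snd (coords (SH ((1, 0), (0, 1)) 1))) z))"
proof -
  have e: "wact r (Hw (NT ((1, 0), (0, 1)) 1)) (ip T1 T1i (fst (coords (SH ((1, 0), (0, 1)) 1))) (ip T2 T2i (snd (coords (SH ((1, 0), (0, 1)) 1))) z)) = wact r ([] @ [] @ Hw ((1, 0), (1, -1))) z"
    by (simp add: NT_def SH_def coords_def padd_def psub_def ip_1 ip_m1 T1_def T1i_def T2_def T2i_def del: wact.simps)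
  show ?thesis unfolding e by (rule check_sound[of "[]"]) (simp_all add: z rules_def Hw_def Htab_def w1_def w2_def)
qed

lemma eqv_2: assumes z: "z \<in> F" shows "wact r (Hw ((1, 0), (0, 1)) @ [2]) z = wact r (Hw (NT ((1, 0), (0, 1)) 2)) (ip T1 T1i (fst (coords (SH ((1, 0), (0, 1)) 2))) (ip T2 T2i (snd (coords (SH ((1, 0), (0, 1)) 2))) z))"
proof -
  have e: "wact r (Hw (NT ((1, 0), (0, 1)) 2)) (ip T1 T1i (fst (coords (SH ((1, 0), (0, 1)) 2))) (ip T2 T2i (snd (coords (SH ((1, 0), (0, 1)) 2))) z)) = wact r ([] @ w1 @ Hw ((0, -1), (-1, 0))) z"
    by (simp add: NT_def SH_def coords_def padd_def psub_def ip_1 ip_m1 T1_def T1i_def T2_def T2i_def del: wact.simps)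
  show ?thesis unfolding e by (rule check_sound[of "[(4, 1), (3, 2), (4, 3), (3, 4), (4, 5)]"]) (simp_all add: z rules_def Hw_def Htab_def w1_def w2_def)
qed

lemma eqv_3: assumes z: "z \<in> F" shows "wact r (Hw ((1, 0), (1, -1)) @ [0]) z = wact r (Hw (NT ((1, 0), (1, -1)) 0)) (ip T1 T1i (fst (coords (SH ((1, 0), (1, -1)) 0))) (ip T2 T2i (snd (coords (SH ((1, 0), (1, -1)) 0))) z))"
proof -
  have e: "wact r (Hw (NT ((1, 0), (1, -1)) 0)) (ip T1 T1i (fst (coords (SH ((1, 0), (1, -1)) 0))) (ip T2 T2i (snd (coords (SH ((1, 0), (1, -1)) 0))) z)) = wact r ([] @ [] @ Hw ((1, -1), (1, 0))) z"
    by (simp add: NT_def SH_def coords_def padd_def psub_def ip_1 ip_m1 T1_def T1i_def T2_def T2i_def del: wact.simps)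
  show ?thesis unfolding e by (rule check_sound[of "[]"]) (simp_all add: z rules_def Hw_def Htab_def w1_def w2_def)
qed

lemma eqv_4: assumes z: "z \<in> F" shows "wact r (Hw ((1, 0), (1, -1)) @ [1]) z = wact r (Hw (NT ((1, 0), (1, -1)) 1)) (ip T1 T1i (fst (coords (SH ((1, 0), (1, -1)) 1))) (ip T2 T2i (snd (coords (SH ((1, 0), (1, -1)) 1))) z))"
proof -
  have e: "wact r (Hw (NT ((1, 0), (1, -1)) 1)) (ip T1 T1i (fst (coords (SH ((1, 0), (1, -1)) 1))) (ip T2 T2i (snd (coords (SH ((1, 0), (1, -1)) 1))) z)) = wact r ([] @ [] @ Hw ((1, 0), (0, 1))) z"
    by (simp add: NT_def SH_def coords_def padd_def psub_def ip_1 ip_m1 T1_def T1i_def T2_def T2i_def del: wact.simps)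
  show ?thesis unfolding e by (rule check_sound[of "[(1, 0)]"]) (simp_all add: z rules_def Hw_def Htab_def w1_def w2_def)
qed

lemma eqv_5: assumes z: "z \<in> F" shows "wact r (Hw ((1, 0), (1, -1)) @ [2]) z = wact r (Hw (NT ((1, 0), (1, -1)) 2)) (ip T1 T1i (fst (coords (SH ((1, 0), (1, -1)) 2))) (ip T2 T2i (snd (coords (SH ((1, 0), (1, -1)) 2))) z))"
proof -
  have e: "wact r (Hw (NT ((1, 0), (1, -1)) 2)) (ip T1 T1i (fst (coords (SH ((1, 0), (1, -1)) 2))) (ip T2 T2i (snd (coords (SH ((1, 0), (1, -1)) 2))) z)) = wact r (w2 @ [] @ Hw ((-1, 1), (-1, 0))) z"
    by (simp add: NT_def SH_def coords_def padd_def psub_def ip_1 ip_m1 T1_def T1i_def T2_def T2i_def del: wact.simps)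
  show ?thesis unfolding e by (rule check_sound[of "[(4, 2), (3, 3), (4, 4), (3, 5)]"]) (simp_all add: z rules_def Hw_def Htab_def w1_def w2_def)
qed

lemma eqv_6: assumes z: "z \<in> F" shows "wact r (Hw ((-1, 0), (0, -1)) @ [0]) z = wact r (Hw (NT ((-1, 0), (0, -1)) 0)) (ip T1 T1i (fst (coords (SH ((-1, 0), (0, -1)) 0))) (ip T2 T2i (snd (coords (SH ((-1, 0), (0, -1)) 0))) z))"
proof -
  have e: "wact r (Hw (NT ((-1, 0), (0, -1)) 0)) (ip T1 T1i (fst (coords (SH ((-1, 0), (0, -1)) 0))) (ip T2 T2i (snd (coords (SH ((-1, 0), (0, -1)) 0))) z)) = wact r ([] @ [] @ Hw ((0, -1), (-1, 0))) z"
    by (simp add: NT_def SH_def coords_def padd_def psub_def ip_1 ip_m1 T1_def T1i_def T2_def T2i_def del: wact.simps)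
  show ?thesis unfolding e by (rule check_sound[of "[(6, 0), (0, 5)]"]) (simp_all add: z rules_def Hw_def Htab_def w1_def w2_def)
qed

lemma eqv_7: assumes z: "z \<in> F" shows "wact r (Hw ((-1, 0), (0, -1)) @ [1]) z = wact r (Hw (NT ((-1, 0), (0, -1)) 1)) (ip T1 T1i (fst (coords (SH ((-1, 0), (0, -1)) 1))) (ip T2 T2i (snd (coords (SH ((-1, 0), (0, -1)) 1))) z))"
proof -
  have e: "wact r (Hw (NT ((-1, 0), (0, -1)) 1)) (ip T1 T1i (fst (coords (SH ((-1, 0), (0, -1)) 1))) (ip T2 T2i (snd (coords (SH ((-1, 0), (0, -1)) 1))) z)) = wact r ([] @ [] @ Hw ((-1, 0), (-1, 1))) z"
    by (simp add: NT_def SH_def coords_def padd_def psub_def ip_1 ip_m1 T1_def T1i_def T2_def T2i_def del: wact.simps)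
  show ?thesis unfolding e by (rule check_sound[of "[(1, 5)]"]) (simp_all add: z rules_def Hw_def Htab_def w1_def w2_def)
qed

lemma eqv_8: assumes z: "z \<in> F" shows "wact r (Hw ((-1, 0), (0, -1)) @ [2]) z = wact r (Hw (NT ((-1, 0), (0, -1)) 2)) (ip T1 T1i (fst (coords (SH ((-1, 0), (0, -1)) 2))) (ip T2 T2i (snd (coords (SH ((-1, 0), (0, -1)) 2))) z))"
proof -
  have e: "wact r (Hw (NT ((-1, 0), (0, -1)) 2)) (ip T1 T1i (fst (coords (SH ((-1, 0), (0, -1)) 2))) (ip T2 T2i (snd (coords (SH ((-1, 0), (0, -1)) 2))) z)) = wact r ([] @ rev w1 @ Hw ((0, 1), (1, 0))) z"
    by (simp add: NT_def SH_def coords_def padd_def psub_def ip_1 ip_m1 T1_def T1i_def T2_def T2i_def del: wact.simps)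
  show ?thesis unfolding e by (rule check_sound[of "[(6, 0), (10, 5)]"]) (simp_all add: z rules_def Hw_def Htab_def w1_def w2_def)
qed

lemma eqv_9: assumes z: "z \<in> F" shows "wact r (Hw ((-1, 0), (-1, 1)) @ [0]) z = wact r (Hw (NT ((-1, 0), (-1, 1)) 0)) (ip T1 T1i (fst (coords (SH ((-1, 0), (-1, 1)) 0))) (ip T2 T2i (snd (coords (SH ((-1, 0), (-1, 1)) 0))) z))"
proof -
  have e: "wact r (Hw (NT ((-1, 0), (-1, 1)) 0)) (ip T1 T1i (fst (coords (SH ((-1, 0), (-1, 1)) 0))) (ip T2 T2i (snd (coords (SH ((-1, 0), (-1, 1)) 0))) z)) = wact r ([] @ [] @ Hw ((-1, 1), (-1, 0))) z"
    by (simp add: NT_def SH_def coords_def padd_def psub_def ip_1 ip_m1 T1_def T1i_def T2_def T2i_def del: wact.simps)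
  show ?thesis unfolding e by (rule check_sound[of "[(0, 4)]"]) (simp_all add: z rules_def Hw_def Htab_def w1_def w2_def)
qed

lemma eqv_10: assumes z: "z \<in> F" shows "wact r (Hw ((-1, 0), (-1, 1)) @ [1]) z = wact r (Hw (NT ((-1, 0), (-1, 1)) 1)) (ip T1 T1i (fst (coords (SH ((-1, 0), (-1, 1)) 1))) (ip T2 T2i (snd (coords (SH ((-1, 0), (-1, 1)) 1))) z))"
proof -
  have e: "wact r (Hw (NT ((-1, 0), (-1, 1)) 1)) (ip T1 T1i (fst (coords (SH ((-1, 0), (-1, 1)) 1))) (ip T2 T2i (snd (coords (SH ((-1, 0), (-1, 1)) 1))) z)) = wact r ([] @ [] @ Hw ((-1, 0), (0, -1))) z"
    by (simp add: NT_def SH_def coords_def padd_def psub_def ip_1 ip_m1 T1_def T1i_def T2_def T2i_def del: wact.simps)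
  show ?thesis unfolding e by (rule check_sound[of "[]"]) (simp_all add: z rules_def Hw_def Htab_def w1_def w2_def)
qed

lemma eqv_11: assumes z: "z \<in> F" shows "wact r (Hw ((-1, 0), (-1, 1)) @ [2]) z = wact r (Hw (NT ((-1, 0), (-1, 1)) 2)) (ip T1 T1i (fst (coords (SH ((-1, 0), (-1, 1)) 2))) (ip T2 T2i (snd (coords (SH ((-1, 0), (-1, 1)) 2))) z))"
proof -
  have e: "wact r (Hw (NT ((-1, 0), (-1, 1)) 2)) (ip T1 T1i (fst (coords (SH ((-1, 0), (-1, 1)) 2))) (ip T2 T2i (snd (coords (SH ((-1, 0), (-1, 1)) 2))) z)) = wact r (rev w2 @ [] @ Hw ((1, -1), (1, 0))) z"
    by (simp add: NT_def SH_def coords_def padd_def psub_def ip_1 ip_m1 T1_def T1i_def T2_def T2i_def del: wact.simps)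
  show ?thesis unfolding e by (rule check_sound[of "[(10, 4), (4, 5)]"]) (simp_all add: z rules_def Hw_def Htab_def w1_def w2_def)
qed

lemma eqv_12: assumes z: "z \<in> F" shows "wact r (Hw ((0, 1), (1, 0)) @ [0]) z = wact r (Hw (NT ((0, 1), (1, 0)) 0)) (ip T1 T1i (fst (coords (SH ((0, 1), (1, 0)) 0))) (ip T2 T2i (snd (coords (SH ((0, 1), (1, 0)) 0))) z))"
proof -
  have e: "wact r (Hw (NT ((0, 1), (1, 0)) 0)) (ip T1 T1i (fst (coords (SH ((0, 1), (1, 0)) 0))) (ip T2 T2i (snd (coords (SH ((0, 1), (1, 0)) 0))) z)) = wact r ([] @ [] @ Hw ((1, 0), (0, 1))) z"
    by (simp add: NT_def SH_def coords_def padd_def psub_def ip_1 ip_m1 T1_def T1i_def T2_def T2i_def del: wact.simps)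
  show ?thesis unfolding e by (rule check_sound[of "[(0, 0)]"]) (simp_all add: z rules_def Hw_def Htab_def w1_def w2_def)
qed

lemma eqv_13: assumes z: "z \<in> F" shows "wact r (Hw ((0, 1), (1, 0)) @ [1]) z = wact r (Hw (NT ((0, 1), (1, 0)) 1)) (ip T1 T1i (fst (coords (SH ((0, 1), (1, 0)) 1))) (ip T2 T2i (snd (coords (SH ((0, 1), (1, 0)) 1))) z))"
proof -
  have e: "wact r (Hw (NT ((0, 1), (1, 0)) 1)) (ip T1 T1i (fst (coords (SH ((0, 1), (1, 0)) 1))) (ip T2 T2i (snd (coords (SH ((0, 1), (1, 0)) 1))) z)) = wact r ([] @ [] @ Hw ((0, 1), (-1, 1))) z"
    by (simp add: NT_def SH_def coords_def padd_def psub_def ip_1 ip_m1 T1_def T1i_def T2_def T2i_def del: wact.simps)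
  show ?thesis unfolding e by (rule check_sound[of "[]"]) (simp_all add: z rules_def Hw_def Htab_def w1_def w2_def)
qed

lemma eqv_14: assumes z: "z \<in> F" shows "wact r (Hw ((0, 1), (1, 0)) @ [2]) z = wact r (Hw (NT ((0, 1), (1, 0)) 2)) (ip T1 T1i (fst (coords (SH ((0, 1), (1, 0)) 2))) (ip T2 T2i (snd (coords (SH ((0, 1), (1, 0)) 2))) z))"
proof -
  have e: "wact r (Hw (NT ((0, 1), (1, 0)) 2)) (ip T1 T1i (fst (coords (SH ((0, 1), (1, 0)) 2))) (ip T2 T2i (snd (coords (SH ((0, 1), (1, 0)) 2))) z)) = wact r ([] @ w1 @ Hw ((-1, 0), (0, -1))) z"
    by (simp add: NT_def SH_def coords_def padd_def psub_def ip_1 ip_m1 T1_def T1i_def T2_def T2i_def del: wact.simps)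
  show ?thesis unfolding e by (rule check_sound[of "[(10, 0), (4, 2), (3, 3), (4, 4), (3, 5), (4, 6), (6, 1)]"]) (simp_all add: z rules_def Hw_def Htab_def w1_def w2_def)
qed

lemma eqv_15: assumes z: "z \<in> F" shows "wact r (Hw ((0, 1), (-1, 1)) @ [0]) z = wact r (Hw (NT ((0, 1), (-1, 1)) 0)) (ip T1 T1i (fst (coords (SH ((0, 1), (-1, 1)) 0))) (ip T2 T2i (snd (coords (SH ((0, 1), (-1, 1)) 0))) z))"
proof -
  have e: "wact r (Hw (NT ((0, 1), (-1, 1)) 0)) (ip T1 T1i (fst (coords (SH ((0, 1), (-1, 1)) 0))) (ip T2 T2i (snd (coords (SH ((0, 1), (-1, 1)) 0))) z)) = wact r ([] @ [] @ Hw ((-1, 1), (0, 1))) z"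
    by (simp add: NT_def SH_def coords_def padd_def psub_def ip_1 ip_m1 T1_def T1i_def T2_def T2i_def del: wact.simps)
  show ?thesis unfolding e by (rule check_sound[of "[]"]) (simp_all add: z rules_def Hw_def Htab_def w1_def w2_def)
qed

lemma eqv_16: assumes z: "z \<in> F" shows "wact r (Hw ((0, 1), (-1, 1)) @ [1]) z = wact r (Hw (NT ((0, 1), (-1, 1)) 1)) (ip T1 T1i (fst (coords (SH ((0, 1), (-1, 1)) 1))) (ip T2 T2i (snd (coords (SH ((0, 1), (-1, 1)) 1))) z))"
proof -
  have e: "wact r (Hw (NT ((0, 1), (-1, 1)) 1)) (ip T1 T1i (fst (coords (SH ((0, 1), (-1, 1)) 1))) (ip T2 T2i (snd (coords (SH ((0, 1), (-1, 1)) 1))) z)) = wact r ([] @ [] @ Hw ((0, 1), (1, 0))) z"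
    by (simp add: NT_def SH_def coords_def padd_def psub_def ip_1 ip_m1 T1_def T1i_def T2_def T2i_def del: wact.simps)
  show ?thesis unfolding e by (rule check_sound[of "[(1, 1)]"]) (simp_all add: z rules_def Hw_def Htab_def w1_def w2_def)
qed

lemma eqv_17: assumes z: "z \<in> F" shows "wact r (Hw ((0, 1), (-1, 1)) @ [2]) z = wact r (Hw (NT ((0, 1), (-1, 1)) 2)) (ip T1 T1i (fst (coords (SH ((0, 1), (-1, 1)) 2))) (ip T2 T2i (snd (coords (SH ((0, 1), (-1, 1)) 2))) z))"
proof -
  have e: "wact r (Hw (NT ((0, 1), (-1, 1)) 2)) (ip T1 T1i (fst (coords (SH ((0, 1), (-1, 1)) 2))) (ip T2 T2i (snd (coords (SH ((0, 1), (-1, 1)) 2))) z)) = wact r (rev w2 @ w1 @ Hw ((1, -1), (0, -1))) z"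
    by (simp add: NT_def SH_def coords_def padd_def psub_def ip_1 ip_m1 T1_def T1i_def T2_def T2i_def del: wact.simps)
  show ?thesis unfolding e by (rule check_sound[of "[(4, 3), (3, 4), (4, 5), (3, 3), (11, 2), (4, 4), (5, 5), (9, 3)]"]) (simp_all add: z rules_def Hw_def Htab_def w1_def w2_def)
qed

lemma eqv_18: assumes z: "z \<in> F" shows "wact r (Hw ((0, -1), (-1, 0)) @ [0]) z = wact r (Hw (NT ((0, -1), (-1, 0)) 0)) (ip T1 T1i (fst (coords (SH ((0, -1), (-1, 0)) 0))) (ip T2 T2i (snd (coords (SH ((0, -1), (-1, 0)) 0))) z))"
proof -
  have e: "wact r (Hw (NT ((0, -1), (-1, 0)) 0)) (ip T1 T1i (fst (coords (SH ((0, -1), (-1, 0)) 0))) (ip T2 T2i (snd (coords (SH ((0, -1), (-1, 0)) 0))) z)) = wact r ([] @ [] @ Hw ((-1, 0), (0, -1))) z"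
    by (simp add: NT_def SH_def coords_def padd_def psub_def ip_1 ip_m1 T1_def T1i_def T2_def T2i_def del: wact.simps)
  show ?thesis unfolding e by (rule check_sound[of "[(7, 0)]"]) (simp_all add: z rules_def Hw_def Htab_def w1_def w2_def)
qed

lemma eqv_19: assumes z: "z \<in> F" shows "wact r (Hw ((0, -1), (-1, 0)) @ [1]) z = wact r (Hw (NT ((0, -1), (-1, 0)) 1)) (ip T1 T1i (fst (coords (SH ((0, -1), (-1, 0)) 1))) (ip T2 T2i (snd (coords (SH ((0, -1), (-1, 0)) 1))) z))"
proof -
  have e: "wact r (Hw (NT ((0, -1), (-1, 0)) 1)) (ip T1 T1i (fst (coords (SH ((0, -1), (-1, 0)) 1))) (ip T2 T2i (snd (coords (SH ((0, -1), (-1, 0)) 1))) z)) = wact r ([] @ [] @ Hw ((0, -1), (1, -1))) z"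
    by (simp add: NT_def SH_def coords_def padd_def psub_def ip_1 ip_m1 T1_def T1i_def T2_def T2i_def del: wact.simps)
  show ?thesis unfolding e by (rule check_sound[of "[(1, 4)]"]) (simp_all add: z rules_def Hw_def Htab_def w1_def w2_def)
qed

lemma eqv_20: assumes z: "z \<in> F" shows "wact r (Hw ((0, -1), (-1, 0)) @ [2]) z = wact r (Hw (NT ((0, -1), (-1, 0)) 2)) (ip T1 T1i (fst (coords (SH ((0, -1), (-1, 0)) 2))) (ip T2 T2i (snd (coords (SH ((0, -1), (-1, 0)) 2))) z))"
proof -
  have e: "wact r (Hw (NT ((0, -1), (-1, 0)) 2)) (ip T1 T1i (fst (coords (SH ((0, -1), (-1, 0)) 2))) (ip T2 T2i (snd (coords (SH ((0, -1), (-1, 0)) 2))) z)) = wact r ([] @ rev w1 @ Hw ((1, 0), (0, 1))) z"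
    by (simp add: NT_def SH_def coords_def padd_def psub_def ip_1 ip_m1 T1_def T1i_def T2_def T2i_def del: wact.simps)
  show ?thesis unfolding e by (rule check_sound[of "[]"]) (simp_all add: z rules_def Hw_def Htab_def w1_def w2_def)
qed

lemma eqv_21: assumes z: "z \<in> F" shows "wact r (Hw ((0, -1), (1, -1)) @ [0]) z = wact r (Hw (NT ((0, -1), (1, -1)) 0)) (ip T1 T1i (fst (coords (SH ((0, -1), (1, -1)) 0))) (ip T2 T2i (snd (coords (SH ((0, -1), (1, -1)) 0))) z))"
proof -
  have e: "wact r (Hw (NT ((0, -1), (1, -1)) 0)) (ip T1 T1i (fst (coords (SH ((0, -1), (1, -1)) 0))) (ip T2 T2i (snd (coords (SH ((0, -1), (1, -1)) 0))) z)) = wact r ([] @ [] @ Hw ((1, -1), (0, -1))) z"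
    by (simp add: NT_def SH_def coords_def padd_def psub_def ip_1 ip_m1 T1_def T1i_def T2_def T2i_def del: wact.simps)
  show ?thesis unfolding e by (rule check_sound[of "[(0, 3)]"]) (simp_all add: z rules_def Hw_def Htab_def w1_def w2_def)
qed

lemma eqv_22: assumes z: "z \<in> F" shows "wact r (Hw ((0, -1), (1, -1)) @ [1]) z = wact r (Hw (NT ((0, -1), (1, -1)) 1)) (ip T1 T1i (fst (coords (SH ((0, -1), (1, -1)) 1))) (ip T2 T2i (snd (coords (SH ((0, -1), (1, -1)) 1))) z))"
proof -
  have e: "wact r (Hw (NT ((0, -1), (1, -1)) 1)) (ip T1 T1i (fst (coords (SH ((0, -1), (1, -1)) 1))) (ip T2 T2i (snd (coords (SH ((0, -1), (1, -1)) 1))) z)) = wact r ([] @ [] @ Hw ((0, -1), (-1, 0))) z"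
    by (simp add: NT_def SH_def coords_def padd_def psub_def ip_1 ip_m1 T1_def T1i_def T2_def T2i_def del: wact.simps)
  show ?thesis unfolding e by (rule check_sound[of "[]"]) (simp_all add: z rules_def Hw_def Htab_def w1_def w2_def)
qed

lemma eqv_23: assumes z: "z \<in> F" shows "wact r (Hw ((0, -1), (1, -1)) @ [2]) z = wact r (Hw (NT ((0, -1), (1, -1)) 2)) (ip T1 T1i (fst (coords (SH ((0, -1), (1, -1)) 2))) (ip T2 T2i (snd (coords (SH ((0, -1), (1, -1)) 2))) z))"
proof -
  have e: "wact r (Hw (NT ((0, -1), (1, -1)) 2)) (ip T1 T1i (fst (coords (SH ((0, -1), (1, -1)) 2))) (ip T2 T2i (snd (coords (SH ((0, -1), (1, -1)) 2))) z)) = wact r (w2 @ rev w1 @ Hw ((-1, 1), (0, 1))) z"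
    by (simp add: NT_def SH_def coords_def padd_def psub_def ip_1 ip_m1 T1_def T1i_def T2_def T2i_def del: wact.simps)
  show ?thesis unfolding e by (rule check_sound[of "[(10, 3), (4, 4), (8, 2), (10, 1), (3, 5), (11, 4), (4, 5), (3, 6), (4, 7), (6, 2)]"]) (simp_all add: z rules_def Hw_def Htab_def w1_def w2_def)
qed

lemma eqv_24: assumes z: "z \<in> F" shows "wact r (Hw ((1, -1), (1, 0)) @ [0]) z = wact r (Hw (NT ((1, -1), (1, 0)) 0)) (ip T1 T1i (fst (coords (SH ((1, -1), (1, 0)) 0))) (ip T2 T2i (snd (coords (SH ((1, -1), (1, 0)) 0))) z))"
proof -
  have e: "wact r (Hw (NT ((1, -1), (1, 0)) 0)) (ip T1 T1i (fst (coords (SH ((1, -1), (1, 0)) 0))) (ip T2 T2i (snd (coords (SH ((1, -1), (1, 0)) 0))) z)) = wact r ([] @ [] @ Hw ((1, 0), (1, -1))) z"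
    by (simp add: NT_def SH_def coords_def padd_def psub_def ip_1 ip_m1 T1_def T1i_def T2_def T2i_def del: wact.simps)
  show ?thesis unfolding e by (rule check_sound[of "[(0, 1)]"]) (simp_all add: z rules_def Hw_def Htab_def w1_def w2_def)
qed

lemma eqv_25: assumes z: "z \<in> F" shows "wact r (Hw ((1, -1), (1, 0)) @ [1]) z = wact r (Hw (NT ((1, -1), (1, 0)) 1)) (ip T1 T1i (fst (coords (SH ((1, -1), (1, 0)) 1))) (ip T2 T2i (snd (coords (SH ((1, -1), (1, 0)) 1))) z))"
proof -
  have e: "wact r (Hw (NT ((1, -1), (1, 0)) 1)) (ip T1 T1i (fst (coords (SH ((1, -1), (1, 0)) 1))) (ip T2 T2i (snd (coords (SH ((1, -1), (1, 0)) 1))) z)) = wact r ([] @ [] @ Hw ((1, -1), (0, -1))) z"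
    by (simp add: NT_def SH_def coords_def padd_def psub_def ip_1 ip_m1 T1_def T1i_def T2_def T2i_def del: wact.simps)
  show ?thesis unfolding e by (rule check_sound[of "[]"]) (simp_all add: z rules_def Hw_def Htab_def w1_def w2_def)
qed

lemma eqv_26: assumes z: "z \<in> F" shows "wact r (Hw ((1, -1), (1, 0)) @ [2]) z = wact r (Hw (NT ((1, -1), (1, 0)) 2)) (ip T1 T1i (fst (coords (SH ((1, -1), (1, 0)) 2))) (ip T2 T2i (snd (coords (SH ((1, -1), (1, 0)) 2))) z))"
proof -
  have e: "wact r (Hw (NT ((1, -1), (1, 0)) 2)) (ip T1 T1i (fst (coords (SH ((1, -1), (1, 0)) 2))) (ip T2 T2i (snd (coords (SH ((1, -1), (1, 0)) 2))) z)) = wact r (w2 @ [] @ Hw ((-1, 0), (-1, 1))) z"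
    by (simp add: NT_def SH_def coords_def padd_def psub_def ip_1 ip_m1 T1_def T1i_def T2_def T2i_def del: wact.simps)
  show ?thesis unfolding e by (rule check_sound[of "[(10, 1), (4, 2), (3, 3), (4, 4), (3, 5)]"]) (simp_all add: z rules_def Hw_def Htab_def w1_def w2_def)
qed

lemma eqv_27: assumes z: "z \<in> F" shows "wact r (Hw ((1, -1), (0, -1)) @ [0]) z = wact r (Hw (NT ((1, -1), (0, -1)) 0)) (ip T1 T1i (fst (coords (SH ((1, -1), (0, -1)) 0))) (ip T2 T2i (snd (coords (SH ((1, -1), (0, -1)) 0))) z))"
proof -
  have e: "wact r (Hw (NT ((1, -1), (0, -1)) 0)) (ip T1 T1i (fst (coords (SH ((1, -1), (0, -1)) 0))) (ip T2 T2i (snd (coords (SH ((1, -1), (0, -1)) 0))) z)) = wact r ([] @ [] @ Hw ((0, -1), (1, -1))) z"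
    by (simp add: NT_def SH_def coords_def padd_def psub_def ip_1 ip_m1 T1_def T1i_def T2_def T2i_def del: wact.simps)
  show ?thesis unfolding e by (rule check_sound[of "[]"]) (simp_all add: z rules_def Hw_def Htab_def w1_def w2_def)
qed

lemma eqv_28: assumes z: "z \<in> F" shows "wact r (Hw ((1, -1), (0, -1)) @ [1]) z = wact r (Hw (NT ((1, -1), (0, -1)) 1)) (ip T1 T1i (fst (coords (SH ((1, -1), (0, -1)) 1))) (ip T2 T2i (snd (coords (SH ((1, -1), (0, -1)) 1))) z))"
proof -
  have e: "wact r (Hw (NT ((1, -1), (0, -1)) 1)) (ip T1 T1i (fst (coords (SH ((1, -1), (0, -1)) 1))) (ip T2 T2i (snd (coords (SH ((1, -1), (0, -1)) 1))) z)) = wact r ([] @ [] @ Hw ((1, -1), (1, 0))) z"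
    by (simp add: NT_def SH_def coords_def padd_def psub_def ip_1 ip_m1 T1_def T1i_def T2_def T2i_def del: wact.simps)
  show ?thesis unfolding e by (rule check_sound[of "[(1, 2)]"]) (simp_all add: z rules_def Hw_def Htab_def w1_def w2_def)
qed

lemma eqv_29: assumes z: "z \<in> F" shows "wact r (Hw ((1, -1), (0, -1)) @ [2]) z = wact r (Hw (NT ((1, -1), (0, -1)) 2)) (ip T1 T1i (fst (coords (SH ((1, -1), (0, -1)) 2))) (ip T2 T2i (snd (coords (SH ((1, -1), (0, -1)) 2))) z))"
proof -
  have e: "wact r (Hw (NT ((1, -1), (0, -1)) 2)) (ip T1 T1i (fst (coords (SH ((1, -1), (0, -1)) 2))) (ip T2 T2i (snd (coords (SH ((1, -1), (0, -1)) 2))) z)) = wact r (w2 @ rev w1 @ Hw ((0, 1), (-1, 1))) z"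
    by (simp add: NT_def SH_def coords_def padd_def psub_def ip_1 ip_m1 T1_def T1i_def T2_def T2i_def del: wact.simps)
  show ?thesis unfolding e by (rule check_sound[of "[(4, 4), (8, 2), (10, 1), (3, 5), (11, 4), (4, 5), (3, 6), (4, 7), (6, 2)]"]) (simp_all add: z rules_def Hw_def Htab_def w1_def w2_def)
qed

lemma eqv_30: assumes z: "z \<in> F" shows "wact r (Hw ((-1, 1), (-1, 0)) @ [0]) z = wact r (Hw (NT ((-1, 1), (-1, 0)) 0)) (ip T1 T1i (fst (coords (SH ((-1, 1), (-1, 0)) 0))) (ip T2 T2i (snd (coords (SH ((-1, 1), (-1, 0)) 0))) z))"
proof -
  have e: "wact r (Hw (NT ((-1, 1), (-1, 0)) 0)) (ip T1 T1i (fst (coords (SH ((-1, 1), (-1, 0)) 0))) (ip T2 T2i (snd (coords (SH ((-1, 1), (-1, 0)) 0))) z)) = wact r ([] @ [] @ Hw ((-1, 0), (-1, 1))) z"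
    by (simp add: NT_def SH_def coords_def padd_def psub_def ip_1 ip_m1 T1_def T1i_def T2_def T2i_def del: wact.simps)
  show ?thesis unfolding e by (rule check_sound[of "[]"]) (simp_all add: z rules_def Hw_def Htab_def w1_def w2_def)
qed

lemma eqv_31: assumes z: "z \<in> F" shows "wact r (Hw ((-1, 1), (-1, 0)) @ [1]) z = wact r (Hw (NT ((-1, 1), (-1, 0)) 1)) (ip T1 T1i (fst (coords (SH ((-1, 1), (-1, 0)) 1))) (ip T2 T2i (snd (coords (SH ((-1, 1), (-1, 0)) 1))) z))"
proof -
  have e: "wact r (Hw (NT ((-1, 1), (-1, 0)) 1)) (ip T1 T1i (fst (coords (SH ((-1, 1), (-1, 0)) 1))) (ip T2 T2i (snd (coords (SH ((-1, 1), (-1, 0)) 1))) z)) = wact r ([] @ [] @ Hw ((-1, 1), (0, 1))) z"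
    by (simp add: NT_def SH_def coords_def padd_def psub_def ip_1 ip_m1 T1_def T1i_def T2_def T2i_def del: wact.simps)
  show ?thesis unfolding e by (rule check_sound[of "[(1, 3)]"]) (simp_all add: z rules_def Hw_def Htab_def w1_def w2_def)
qed

lemma eqv_32: assumes z: "z \<in> F" shows "wact r (Hw ((-1, 1), (-1, 0)) @ [2]) z = wact r (Hw (NT ((-1, 1), (-1, 0)) 2)) (ip T1 T1i (fst (coords (SH ((-1, 1), (-1, 0)) 2))) (ip T2 T2i (snd (coords (SH ((-1, 1), (-1, 0)) 2))) z))"
proof -
  have e: "wact r (Hw (NT ((-1, 1), (-1, 0)) 2)) (ip T1 T1i (fst (coords (SH ((-1, 1), (-1, 0)) 2))) (ip T2 T2i (snd (coords (SH ((-1, 1), (-1, 0)) 2))) z)) = wact r (rev w2 @ [] @ Hw ((1, 0), (1, -1))) z"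
    by (simp add: NT_def SH_def coords_def padd_def psub_def ip_1 ip_m1 T1_def T1i_def T2_def T2i_def del: wact.simps)
  show ?thesis unfolding e by (rule check_sound[of "[(4, 5)]"]) (simp_all add: z rules_def Hw_def Htab_def w1_def w2_def)
qed

lemma eqv_33: assumes z: "z \<in> F" shows "wact r (Hw ((-1, 1), (0, 1)) @ [0]) z = wact r (Hw (NT ((-1, 1), (0, 1)) 0)) (ip T1 T1i (fst (coords (SH ((-1, 1), (0, 1)) 0))) (ip T2 T2i (snd (coords (SH ((-1, 1), (0, 1)) 0))) z))"
proof -
  have e: "wact r (Hw (NT ((-1, 1), (0, 1)) 0)) (ip T1 T1i (fst (coords (SH ((-1, 1), (0, 1)) 0))) (ip T2 T2i (snd (coords (SH ((-1, 1), (0, 1)) 0))) z)) = wact r ([] @ [] @ Hw ((0, 1), (-1, 1))) z"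
    by (simp add: NT_def SH_def coords_def padd_def psub_def ip_1 ip_m1 T1_def T1i_def T2_def T2i_def del: wact.simps)
  show ?thesis unfolding e by (rule check_sound[of "[(0, 2)]"]) (simp_all add: z rules_def Hw_def Htab_def w1_def w2_def)
qed

lemma eqv_34: assumes z: "z \<in> F" shows "wact r (Hw ((-1, 1), (0, 1)) @ [1]) z = wact r (Hw (NT ((-1, 1), (0, 1)) 1)) (ip T1 T1i (fst (coords (SH ((-1, 1), (0, 1)) 1))) (ip T2 T2i (snd (coords (SH ((-1, 1), (0, 1)) 1))) z))"
proof -
  have e: "wact r (Hw (NT ((-1, 1), (0, 1)) 1)) (ip T1 T1i (fst (coords (SH ((-1, 1), (0, 1)) 1))) (ip T2 T2i (snd (coords (SH ((-1, 1), (0, 1)) 1))) z)) = wact r ([] @ [] @ Hw ((-1, 1), (-1, 0))) z"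
    by (simp add: NT_def SH_def coords_def padd_def psub_def ip_1 ip_m1 T1_def T1i_def T2_def T2i_def del: wact.simps)
  show ?thesis unfolding e by (rule check_sound[of "[]"]) (simp_all add: z rules_def Hw_def Htab_def w1_def w2_def)
qed

lemma eqv_35: assumes z: "z \<in> F" shows "wact r (Hw ((-1, 1), (0, 1)) @ [2]) z = wact r (Hw (NT ((-1, 1), (0, 1)) 2)) (ip T1 T1i (fst (coords (SH ((-1, 1), (0, 1)) 2))) (ip T2 T2i (snd (coords (SH ((-1, 1), (0, 1)) 2))) z))"
proof -
  have e: "wact r (Hw (NT ((-1, 1), (0, 1)) 2)) (ip T1 T1i (fst (coords (SH ((-1, 1), (0, 1)) 2))) (ip T2 T2i (snd (coords (SH ((-1, 1), (0, 1)) 2))) z)) = wact r (rev w2 @ w1 @ Hw ((0, -1), (1, -1))) z"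
    by (simp add: NT_def SH_def coords_def padd_def psub_def ip_1 ip_m1 T1_def T1i_def T2_def T2i_def del: wact.simps)
  show ?thesis unfolding e by (rule check_sound[of "[(10, 2), (4, 3), (3, 4), (4, 5), (3, 3), (11, 2), (4, 4), (5, 5), (9, 3)]"]) (simp_all add: z rules_def Hw_def Htab_def w1_def w2_def)
qed

lemmas EQV = eqv_0 eqv_1 eqv_2 eqv_3 eqv_4 eqv_5 eqv_6 eqv_7 eqv_8 eqv_9 eqv_10 eqv_11 eqv_12 eqv_13 eqv_14 eqv_15 eqv_16 eqv_17 eqv_18 eqv_19 eqv_20 eqv_21 eqv_22 eqv_23 eqv_24 eqv_25 eqv_26 eqv_27 eqv_28 eqv_29 eqv_30 eqv_31 eqv_32 eqv_33 eqv_34 eqv_35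

lemma comm12: assumes z: "z \<in> F" shows "wact r (w2 @ w1) z = wact r (w1 @ w2) z"
  by (rule check_sound[of "[(8, 0), (10, 5), (11, 2), (9, 3), (7, 5), (1, 10), (11, 4), (4, 5)]"]) (simp_all add: z rules_def w1_def w2_def)

lemma T12comm: "z \<in> F \<Longrightarrow> T1 (T2 z) = T2 (T1 z)"
  using comm12 by (simp add: T1_def T2_def)

lemma Tr_in: "Tr n \<in> F"
  unfolding Tr_def using ip_in[OF ipair1] ip_in[OF ipair2] x0_in by blast

lemma Tr_add: "Tr (a + fst c, b + snd c) = ip T1 T1i (fst c) (ip T2 T2i (snd c) (Tr (a, b)))"
proof -
  have i2: "ip T2 T2i b x0 \<in> F" using ip_in[OF ipair2 x0_in] .
  have "Tr (a + fst c, b + snd c) = ip T1 T1i (fst c + a) (ip T2 T2i (snd c + b) x0)"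
    by (simp add: Tr_def add.commute)
  also have "\<dots> = ip T1 T1i (fst c) (ip T1 T1i a (ip T2 T2i (snd c) (ip T2 T2i b x0)))"
    using ip_add[OF ipair1 ip_in[OF ipair2 ip_in[OF ipair2 x0_in]]] ip_add[OF ipair2 x0_in] by simp
  also have "\<dots> = ip T1 T1i (fst c) (ip T2 T2i (snd c) (ip T1 T1i a (ip T2 T2i b x0)))"
    using ip_comm[OF ipair1 ipair2 T12comm i2] by simp
  finally show ?thesis by (simp add: Tr_def)
qed

lemma D_mkch: "D (mkch f d) = wact r (Hw d) (Tr (coords f))"
  by (simp add: D_def mkch_def padd_def psub_def)

lemma EQV_all: assumes "d \<in> set T12" "i < 3" "z \<in> F"
  shows "wact r (Hw d @ [i]) z = wact r (Hw (NT d i)) (ip T1 T1i (fst (coords (SH d i))) (ip T2 T2i (snd (coords (SH d i))) z))"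
proof -
  have "i = 0 \<or> i = 1 \<or> i = 2" using assms(2) by auto
  with T12_cases[OF assms(1)] show ?thesis
    apply -
    apply (elim disjE)
    apply (hypsubst, rule EQV[OF assms(3)])+
    done
qed

lemma D_refl: assumes "hex_chamber t" "i < 3" shows "D (hex_refl i t) = r i (D t)"
proof -
  from assms(1) obtain f d where t: "t = mkch f d" "face_centre f" "d \<in> set T12" by (rule hexch_E)
  obtain a b where ab: "coords f = (a, b)" by (cases "coords f")
  have "D (hex_refl i t) = wact r (Hw (NT d i)) (Tr (coords (padd f (SH d i))))"
    unfolding t(1) refl_gen[OF assms(2)] D_mkch ..
  also have "coords (padd f (SH d i)) = (a + fst (coords (SH d i)), b + snd (coords (SH d i)))"
    using coords_add[OF SH_fc[OF t(3)]] ab by simp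
  also have "wact r (Hw (NT d i)) (Tr (a + fst (coords (SH d i)), b + snd (coords (SH d i)))) =
     wact r (Hw d @ [i]) (Tr (a, b))"
    unfolding Tr_add using EQV_all[OF t(3) assms(2) Tr_in] by simp
  also have "\<dots> = r i (D t)" unfolding t(1) D_mkch ab by simp
  finally show ?thesis .
qed

lemma D_in: assumes "hex_chamber t" shows "D t \<in> F"
proof -
  from assms obtain f d where t: "t = mkch f d" "face_centre f" "d \<in> set T12" by (rule hexch_E)
  show ?thesis unfolding t D_mkch using wact_in[OF Hw_letters[OF t(3)] Tr_in] .
qed

end


definition detd :: "pt \<times> pt \<Rightarrow> int" where
  "detd d = fst (fst d) * snd (snd d) - snd (fst d) * fst (snd d)"

definition compQ :: "pt \<times> pt \<Rightarrow> pt \<times> pt \<Rightarrow> pt \<times> pt" where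
  "compQ d' d = (let \<delta> = detd d; a = fst (fst d); b = snd (fst d); c = fst (snd d); e = snd (snd d);
      a1 = fst (fst d'); b1 = snd (fst d'); a2 = fst (snd d'); b2 = snd (snd d') in
     ((\<delta> * (e * a1 - b * a2), \<delta> * (e * b1 - b * b2)), (\<delta> * (a * a2 - c * a1), \<delta> * (a * b2 - c * b1))))"

definition R1 :: "pt \<times> pt" where "R1 = ((0,1),(-1,1))"
definition R2 :: "pt \<times> pt" where "R2 = ((-1,1),(-1,0))"
definition R3 :: "pt \<times> pt" where "R3 = ((-1,0),(0,-1))"
definition R4 :: "pt \<times> pt" where "R4 = ((0,-1),(1,-1))"
definition R5 :: "pt \<times> pt" where "R5 = ((1,-1),(1,0))"

lemma detd_T12: "d \<in> set T12 \<Longrightarrow> detd d = 1 \<or> detd d = -1"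
  by (drule T12_cases) (elim disjE; simp add: detd_def)

lemma compQ_lin: assumes "d \<in> set T12"
  shows "lin (compQ d' d) (fst d) = fst d'" "lin (compQ d' d) (snd d) = snd d'"
proof -
  obtain a b c e where d: "d = ((a,b),(c,e))" by (metis prod.collapse)
  obtain a1 b1 a2 b2 where d': "d' = ((a1,b1),(a2,b2))" by (metis prod.collapse)
  have dd: "(a * e - b * c) * (a * e - b * c) = 1" using detd_T12[OF assms] unfolding d detd_def by auto
  have "lin (compQ d' d) (fst d) = ((a * e - b * c) * (a * e - b * c) * a1, (a * e - b * c) * (a * e - b * c) * b1)"
    unfolding d d' compQ_def lin_def detd_def Let_def by (simp add: algebra_simps)
  thus "lin (compQ d' d) (fst d) = fst d'" using dd d' by simp
  have "lin (compQ d' d) (snd d) = ((a * e - b * c) * (a * e - b * c) * a2, (a * e - b * c) * (a * e - b * c) * b2)"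
    unfolding d d' compQ_def lin_def detd_def Let_def by (simp add: algebra_simps)
  thus "lin (compQ d' d) (snd d) = snd d'" using dd d' by simp
qed

lemma compQ_T12: "d \<in> set T12 \<Longrightarrow> d' \<in> set T12 \<Longrightarrow> compQ d' d \<in> set T12"
  apply (drule T12_cases)+
  apply (elim disjE; simp add: compQ_def detd_def T12_def Let_def)
  done

lemma compQ_rot: "d \<in> set T12 \<Longrightarrow> d' \<in> set T12 \<Longrightarrow> detd d' = detd d \<Longrightarrow>
   compQ d' d \<in> {Id2, R1, R2, R3, R4, R5}"
  apply (drule T12_cases)+
  apply (elim disjE; simp add: compQ_def detd_def Id2_def R1_def R2_def R3_def R4_def R5_def Let_def)
  done

lemma detd_NT: "detd (NT d i) = - detd d"
  by (simp add: NT_def detd_def psub_def algebra_simps)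

definition oriD :: "hch \<Rightarrow> int" where
  "oriD t = (case t of (v, w, f) \<Rightarrow> detd (psub v f, psub w f))"

lemma oriD_mkch: "oriD (mkch f d) = detd d"
  by (simp add: oriD_def mkch_def padd_def psub_def)

lemma oriD_refl: "hex_chamber t \<Longrightarrow> i < 3 \<Longrightarrow> oriD (hex_refl i t) = - oriD t"
proof -
  assume a: "hex_chamber t" "i < 3"
  from a(1) obtain f d where t: "t = mkch f d" "face_centre f" "d \<in> set T12" by (rule hexch_E)
  show ?thesis unfolding t(1) refl_gen[OF a(2)] oriD_mkch detd_NT ..
qed

lemma oriD_pm: "hex_chamber t \<Longrightarrow> oriD t = 1 \<or> oriD t = -1"
proof -
  assume a: "hex_chamber t"
  from a obtain f d where t: "t = mkch f d" "face_centre f" "d \<in> set T12" by (rule hexch_E)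
  show ?thesis unfolding t(1) oriD_mkch using detd_T12[OF t(3)] .
qed

lemma fc_psub: "face_centre f \<Longrightarrow> face_centre g \<Longrightarrow> face_centre (psub f g)"
proof -
  assume a: "face_centre f" "face_centre g"
  obtain k where k: "fst f = snd f + 3 * k" using a(1) fc_ex by auto
  obtain j where j: "fst g = snd g + 3 * j" using a(2) fc_ex by auto
  have "fst (psub f g) = snd (psub f g) + 3 * (k - j)" using k j by (simp add: psub_def algebra_simps)
  thus ?thesis using fc_ex by blast
qed

lemma shift_lemma: "cmap (aff Q (padd g0 (psub m (lin Q m)))) (cmap (tr m) t) = cmap (tr m) (cmap (aff Q g0) t)"
  by (cases t) (simp add: cmap_def aff_def tr_def padd_def psub_def lin_def algebra_simps)

definition CELLS :: "nat list list" where
  "CELLS = [[0,1],[0,1,0,1],[0,1,0,1,0,1],[0,1,0,1,0,1,0,1],[0,1,0,1,0,1,0,1,0,1],[1,2],[1,2,1,2],[2,0]]"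

lemma CELLS_letters: "c \<in> set CELLS \<Longrightarrow> set c \<subseteq> {..<3}"
  by (auto simp: CELLS_def)

lemma rot_case1: assumes "face_centre g" shows "\<exists>m g0 t0 c. face_centre m \<and> hex_chamber t0 \<and> c \<in> set CELLS \<and>
   cmap (aff R1 g0) t0 = wact hex_refl c t0 \<and> g = padd g0 (psub m (lin R1 m))"
proof -
  obtain k where k: "fst g = snd g + 3 * k" using assms fc_ex by auto
  define b where "b = snd g"
  have g: "g = (b + 3 * k, b)" using k b_def by (metis prod.collapse)
    have c: "True" by simp
    have fm: "face_centre (- b, 2 * b + 3 * k)" using c unfolding face_centre_def fst_conv snd_conv by presburger
    have ht: "hex_chamber (mkch (0,0) ((1, 0), (0, 1)))" by (simp add: hexch_mkch' T12_def face_centre_def)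
    have cl: "[0, 1] \<in> set CELLS" by (simp add: CELLS_def)
    have cm: "cmap (aff R1 (0, 0)) (mkch (0,0) ((1, 0), (0, 1))) = wact hex_refl [0, 1] (mkch (0,0) ((1, 0), (0, 1)))"
      by (simp add: R1_def cmap_def aff_def mkch_def padd_def lin_def hex_refl_def)
    have ge: "g = padd (0, 0) (psub (- b, 2 * b + 3 * k) (lin R1 (- b, 2 * b + 3 * k)))"
      using c unfolding g R1_def padd_def psub_def lin_def by simp presburger?
    show ?thesis using fm ht cl cm ge by blast
qed

lemma rot_case2: assumes "face_centre g" shows "\<exists>m g0 t0 c. face_centre m \<and> hex_chamber t0 \<and> c \<in> set CELLS \<and>
   cmap (aff R2 g0) t0 = wact hex_refl c t0 \<and> g = padd g0 (psub m (lin R2 m))"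
proof -
  obtain k where k: "fst g = snd g + 3 * k" using assms fc_ex by auto
  define b where "b = snd g"
  have g: "g = (b + 3 * k, b)" using k b_def by (metis prod.collapse)
  have cs: "b mod 3 = 0 \<or> b mod 3 = 1 \<or> b mod 3 = 2" by presburger
  from cs show ?thesis
  proof (elim disjE)
    assume c: "b mod 3 = 0"
    have fm: "face_centre (k, b + k)" using c unfolding face_centre_def fst_conv snd_conv by presburger
    have ht: "hex_chamber (mkch (0,0) ((1, 0), (0, 1)))" by (simp add: hexch_mkch' T12_def face_centre_def)
    have cl: "[0, 1, 0, 1] \<in> set CELLS" by (simp add: CELLS_def)
    have cm: "cmap (aff R2 (0, 0)) (mkch (0,0) ((1, 0), (0, 1))) = wact hex_refl [0, 1, 0, 1] (mkch (0,0) ((1, 0), (0, 1)))"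
      by (simp add: R2_def cmap_def aff_def mkch_def padd_def lin_def hex_refl_def)
    have ge: "g = padd (0, 0) (psub (k, b + k) (lin R2 (k, b + k)))"
      using c unfolding g R2_def padd_def psub_def lin_def by simp presburger?
    show ?thesis using fm ht cl cm ge by blast
  next
    assume c: "b mod 3 = 1"
    have fm: "face_centre (k, b - 1 + k)" using c unfolding face_centre_def fst_conv snd_conv by presburger
    have ht: "hex_chamber (mkch (0,0) ((0, 1), (1, 0)))" by (simp add: hexch_mkch' T12_def face_centre_def)
    have cl: "[1, 2, 1, 2] \<in> set CELLS" by (simp add: CELLS_def)
    have cm: "cmap (aff R2 (1, 1)) (mkch (0,0) ((0, 1), (1, 0))) = wact hex_refl [1, 2, 1, 2] (mkch (0,0) ((0, 1), (1, 0)))"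
      by (simp add: R2_def cmap_def aff_def mkch_def padd_def lin_def hex_refl_def)
    have ge: "g = padd (1, 1) (psub (k, b - 1 + k) (lin R2 (k, b - 1 + k)))"
      using c unfolding g R2_def padd_def psub_def lin_def by simp presburger?
    show ?thesis using fm ht cl cm ge by blast
  next
    assume c: "b mod 3 = 2"
    have fm: "face_centre (k, b - 2 + k)" using c unfolding face_centre_def fst_conv snd_conv by presburger
    have ht: "hex_chamber (mkch (1,1) ((-1, 1), (-1, 0)))" by (simp add: hexch_mkch' T12_def face_centre_def)
    have cl: "[1, 2] \<in> set CELLS" by (simp add: CELLS_def)
    have cm: "cmap (aff R2 (2, 2)) (mkch (1,1) ((-1, 1), (-1, 0))) = wact hex_refl [1, 2] (mkch (1,1) ((-1, 1), (-1, 0)))"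
      by (simp add: R2_def cmap_def aff_def mkch_def padd_def lin_def hex_refl_def)
    have ge: "g = padd (2, 2) (psub (k, b - 2 + k) (lin R2 (k, b - 2 + k)))"
      using c unfolding g R2_def padd_def psub_def lin_def by simp presburger?
    show ?thesis using fm ht cl cm ge by blast
  qed
qed

lemma rot_case3: assumes "face_centre g" shows "\<exists>m g0 t0 c. face_centre m \<and> hex_chamber t0 \<and> c \<in> set CELLS \<and>
   cmap (aff R3 g0) t0 = wact hex_refl c t0 \<and> g = padd g0 (psub m (lin R3 m))"
proof -
  obtain k where k: "fst g = snd g + 3 * k" using assms fc_ex by auto
  define b where "b = snd g"
  have g: "g = (b + 3 * k, b)" using k b_def by (metis prod.collapse)
  have cs: "(b mod 2 = 0 \<and> k mod 2 = 0) \<or> (b mod 2 = 0 \<and> k mod 2 = 1) \<or> (b mod 2 = 1 \<and> k mod 2 = 0) \<or> (b mod 2 = 1 \<and> k mod 2 = 1)" by presburger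
  from cs show ?thesis
  proof (elim disjE)
    assume c: "b mod 2 = 0 \<and> k mod 2 = 0"
    have fm: "face_centre ((b + 3 * k) div 2, b div 2)" using c unfolding face_centre_def fst_conv snd_conv by presburger
    have ht: "hex_chamber (mkch (0,0) ((1, 0), (0, 1)))" by (simp add: hexch_mkch' T12_def face_centre_def)
    have cl: "[0, 1, 0, 1, 0, 1] \<in> set CELLS" by (simp add: CELLS_def)
    have cm: "cmap (aff R3 (0, 0)) (mkch (0,0) ((1, 0), (0, 1))) = wact hex_refl [0, 1, 0, 1, 0, 1] (mkch (0,0) ((1, 0), (0, 1)))"
      by (simp add: R3_def cmap_def aff_def mkch_def padd_def lin_def hex_refl_def)
    have ge: "g = padd (0, 0) (psub ((b + 3 * k) div 2, b div 2) (lin R3 ((b + 3 * k) div 2, b div 2)))"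
      using c unfolding g R3_def padd_def psub_def lin_def by simp presburger?
    show ?thesis using fm ht cl cm ge by blast
  next
    assume c: "b mod 2 = 0 \<and> k mod 2 = 1"
    have fm: "face_centre ((b + 3 * (k - 1)) div 2, b div 2)" using c unfolding face_centre_def fst_conv snd_conv by presburger
    have ht: "hex_chamber (mkch (1,1) ((0, -1), (1, -1)))" by (simp add: hexch_mkch' T12_def face_centre_def)
    have cl: "[2, 0] \<in> set CELLS" by (simp add: CELLS_def)
    have cm: "cmap (aff R3 (3, 0)) (mkch (1,1) ((0, -1), (1, -1))) = wact hex_refl [2, 0] (mkch (1,1) ((0, -1), (1, -1)))"
      by (simp add: R3_def cmap_def aff_def mkch_def padd_def lin_def hex_refl_def)
    have ge: "g = padd (3, 0) (psub ((b + 3 * (k - 1)) div 2, b div 2) (lin R3 ((b + 3 * (k - 1)) div 2, b div 2)))"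
      using c unfolding g R3_def padd_def psub_def lin_def by simp presburger?
    show ?thesis using fm ht cl cm ge by blast
  next
    assume c: "b mod 2 = 1 \<and> k mod 2 = 0"
    have fm: "face_centre ((b - 1 + 3 * k) div 2, (b - 1) div 2)" using c unfolding face_centre_def fst_conv snd_conv by presburger
    have ht: "hex_chamber (mkch (0,0) ((1, 0), (0, 1)))" by (simp add: hexch_mkch' T12_def face_centre_def)
    have cl: "[2, 0] \<in> set CELLS" by (simp add: CELLS_def)
    have cm: "cmap (aff R3 (1, 1)) (mkch (0,0) ((1, 0), (0, 1))) = wact hex_refl [2, 0] (mkch (0,0) ((1, 0), (0, 1)))"
      by (simp add: R3_def cmap_def aff_def mkch_def padd_def lin_def hex_refl_def)
    have ge: "g = padd (1, 1) (psub ((b - 1 + 3 * k) div 2, (b - 1) div 2) (lin R3 ((b - 1 + 3 * k) div 2, (b - 1) div 2)))"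
      using c unfolding g R3_def padd_def psub_def lin_def by simp presburger?
    show ?thesis using fm ht cl cm ge by blast
  next
    assume c: "b mod 2 = 1 \<and> k mod 2 = 1"
    have fm: "face_centre ((b - 1 + 3 * (k - 1)) div 2, (b - 1) div 2)" using c unfolding face_centre_def fst_conv snd_conv by presburger
    have ht: "hex_chamber (mkch (1,1) ((1, 0), (1, -1)))" by (simp add: hexch_mkch' T12_def face_centre_def)
    have cl: "[2, 0] \<in> set CELLS" by (simp add: CELLS_def)
    have cm: "cmap (aff R3 (4, 1)) (mkch (1,1) ((1, 0), (1, -1))) = wact hex_refl [2, 0] (mkch (1,1) ((1, 0), (1, -1)))"
      by (simp add: R3_def cmap_def aff_def mkch_def padd_def lin_def hex_refl_def)
    have ge: "g = padd (4, 1) (psub ((b - 1 + 3 * (k - 1)) div 2, (b - 1) div 2) (lin R3 ((b - 1 + 3 * (k - 1)) div 2, (b - 1) div 2)))"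
      using c unfolding g R3_def padd_def psub_def lin_def by simp presburger?
    show ?thesis using fm ht cl cm ge by blast
  qed
qed

lemma rot_case4: assumes "face_centre g" shows "\<exists>m g0 t0 c. face_centre m \<and> hex_chamber t0 \<and> c \<in> set CELLS \<and>
   cmap (aff R4 g0) t0 = wact hex_refl c t0 \<and> g = padd g0 (psub m (lin R4 m))"
proof -
  obtain k where k: "fst g = snd g + 3 * k" using assms fc_ex by auto
  define b where "b = snd g"
  have g: "g = (b + 3 * k, b)" using k b_def by (metis prod.collapse)
  have cs: "b mod 3 = 0 \<or> b mod 3 = 1 \<or> b mod 3 = 2" by presburger
  from cs show ?thesis
  proof (elim disjE)
    assume c: "b mod 3 = 0"
    have fm: "face_centre (b + 2 * k, - k)" using c unfolding face_centre_def fst_conv snd_conv by presburger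
    have ht: "hex_chamber (mkch (0,0) ((1, 0), (0, 1)))" by (simp add: hexch_mkch' T12_def face_centre_def)
    have cl: "[0, 1, 0, 1, 0, 1, 0, 1] \<in> set CELLS" by (simp add: CELLS_def)
    have cm: "cmap (aff R4 (0, 0)) (mkch (0,0) ((1, 0), (0, 1))) = wact hex_refl [0, 1, 0, 1, 0, 1, 0, 1] (mkch (0,0) ((1, 0), (0, 1)))"
      by (simp add: R4_def cmap_def aff_def mkch_def padd_def lin_def hex_refl_def)
    have ge: "g = padd (0, 0) (psub (b + 2 * k, - k) (lin R4 (b + 2 * k, - k)))"
      using c unfolding g R4_def padd_def psub_def lin_def by simp presburger?
    show ?thesis using fm ht cl cm ge by blast
  next
    assume c: "b mod 3 = 1"
    have fm: "face_centre (b - 1 + 2 * k, - k)" using c unfolding face_centre_def fst_conv snd_conv by presburger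
    have ht: "hex_chamber (mkch (0,0) ((1, 0), (0, 1)))" by (simp add: hexch_mkch' T12_def face_centre_def)
    have cl: "[1, 2, 1, 2] \<in> set CELLS" by (simp add: CELLS_def)
    have cm: "cmap (aff R4 (1, 1)) (mkch (0,0) ((1, 0), (0, 1))) = wact hex_refl [1, 2, 1, 2] (mkch (0,0) ((1, 0), (0, 1)))"
      by (simp add: R4_def cmap_def aff_def mkch_def padd_def lin_def hex_refl_def)
    have ge: "g = padd (1, 1) (psub (b - 1 + 2 * k, - k) (lin R4 (b - 1 + 2 * k, - k)))"
      using c unfolding g R4_def padd_def psub_def lin_def by simp presburger?
    show ?thesis using fm ht cl cm ge by blast
  next
    assume c: "b mod 3 = 2"
    have fm: "face_centre (b - 2 + 2 * k, - k)" using c unfolding face_centre_def fst_conv snd_conv by presburger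
    have ht: "hex_chamber (mkch (1,1) ((1, -1), (1, 0)))" by (simp add: hexch_mkch' T12_def face_centre_def)
    have cl: "[1, 2, 1, 2] \<in> set CELLS" by (simp add: CELLS_def)
    have cm: "cmap (aff R4 (2, 2)) (mkch (1,1) ((1, -1), (1, 0))) = wact hex_refl [1, 2, 1, 2] (mkch (1,1) ((1, -1), (1, 0)))"
      by (simp add: R4_def cmap_def aff_def mkch_def padd_def lin_def hex_refl_def)
    have ge: "g = padd (2, 2) (psub (b - 2 + 2 * k, - k) (lin R4 (b - 2 + 2 * k, - k)))"
      using c unfolding g R4_def padd_def psub_def lin_def by simp presburger?
    show ?thesis using fm ht cl cm ge by blast
  qed
qed

lemma rot_case5: assumes "face_centre g" shows "\<exists>m g0 t0 c. face_centre m \<and> hex_chamber t0 \<and> c \<in> set CELLS \<and>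
   cmap (aff R5 g0) t0 = wact hex_refl c t0 \<and> g = padd g0 (psub m (lin R5 m))"
proof -
  obtain k where k: "fst g = snd g + 3 * k" using assms fc_ex by auto
  define b where "b = snd g"
  have g: "g = (b + 3 * k, b)" using k b_def by (metis prod.collapse)
    have c: "True" by simp
    have fm: "face_centre (2 * b + 3 * k, - b - 3 * k)" using c unfolding face_centre_def fst_conv snd_conv by presburger
    have ht: "hex_chamber (mkch (0,0) ((1, 0), (0, 1)))" by (simp add: hexch_mkch' T12_def face_centre_def)
    have cl: "[0, 1, 0, 1, 0, 1, 0, 1, 0, 1] \<in> set CELLS" by (simp add: CELLS_def)
    have cm: "cmap (aff R5 (0, 0)) (mkch (0,0) ((1, 0), (0, 1))) = wact hex_refl [0, 1, 0, 1, 0, 1, 0, 1, 0, 1] (mkch (0,0) ((1, 0), (0, 1)))"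
      by (simp add: R5_def cmap_def aff_def mkch_def padd_def lin_def hex_refl_def)
    have ge: "g = padd (0, 0) (psub (2 * b + 3 * k, - b - 3 * k) (lin R5 (2 * b + 3 * k, - b - 3 * k)))"
      using c unfolding g R5_def padd_def psub_def lin_def by simp presburger?
    show ?thesis using fm ht cl cm ge by blast
qed


context hexmap begin

lemma D_wact: "hex_chamber t \<Longrightarrow> set w \<subseteq> {..<3} \<Longrightarrow> D (wact hex_refl w t) = wact r w (D t)"
proof (induction w arbitrary: t)
  case Nil then show ?case by simp
next
  case (Cons i w)
  have i: "i < 3" using Cons.prems by auto
  have "D (wact hex_refl (i # w) t) = D (wact hex_refl w (hex_refl i t))" by simp
  also have "\<dots> = wact r w (D (hex_refl i t))" using Cons.IH[OF hexch_refl[OF Cons.prems(1) i]] Cons.prems by simp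
  also have "\<dots> = wact r (i # w) (D t)" using D_refl[OF Cons.prems(1) i] by simp
  finally show ?case .
qed

lemma cells_ne: assumes "c \<in> set CELLS" "z \<in> F" shows "wact r c z \<noteq> z"
proof -
  have f: "wact r (concat (replicate k [0,1])) z \<noteq> z" if "0 < k" "k < 6" for k
    using face_ne[OF assms(2) that] pow_wact by metis
  have v: "wact r (concat (replicate k [1,2])) z \<noteq> z" if "0 < k" "k < 3" for k
    using vert_ne[OF assms(2) that] pow_wact2 by metis
  have "wact r [0,1] z \<noteq> z" using f[of 1] by simp
  moreover have "wact r [0,1,0,1] z \<noteq> z" using f[of 2] by (simp add: eval_nat_numeral)
  moreover have "wact r [0,1,0,1,0,1] z \<noteq> z" using f[of 3] by (simp add: eval_nat_numeral)
  moreover have "wact r [0,1,0,1,0,1,0,1] z \<noteq> z" using f[of 4] by (simp add: eval_nat_numeral)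
  moreover have "wact r [0,1,0,1,0,1,0,1,0,1] z \<noteq> z" using f[of 5] by (simp add: eval_nat_numeral)
  moreover have "wact r [1,2] z \<noteq> z" using v[of 1] by simp
  moreover have "wact r [1,2,1,2] z \<noteq> z" using v[of 2] by (simp add: eval_nat_numeral)
  moreover have "wact r [2,0] z \<noteq> z" using n02[OF assms(2)] by simp
  ultimately show ?thesis using assms(1) unfolding CELLS_def
    by (simp only: set_simps insert_iff empty_iff simp_thms) (elim disjE; hypsubst; assumption)
qed

lemma oriC0: "oriD C0 = 1" unfolding C0_def oriD_mkch by (simp add: detd_def)

lemma D_ori: assumes s: "\<forall>x\<in>F. \<forall>i<3. s (r i x) \<noteq> s x" and t: "hex_chamber t"
  shows "s (D t) = (s (D C0) = (oriD t = 1))"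
proof (rule hinduct[where P="\<lambda>t. s (D t) = (s (D C0) = (oriD t = 1))", OF C0_hex _ _ t])
  show "s (D C0) = (s (D C0) = (oriD C0 = 1))" by (simp add: oriC0)
next
  fix t and i :: nat assume a: "hex_chamber t" "i < 3" "s (D t) = (s (D C0) = (oriD t = 1))"
  have "s (r i (D t)) \<noteq> s (D t)" using s D_in[OF a(1)] a(2) by blast
  hence 1: "s (D (hex_refl i t)) = (\<not> s (D t))" using D_refl[OF a(1,2)] by simp
  have 2: "oriD (hex_refl i t) = - oriD t" by (rule oriD_refl[OF a(1,2)])
  have 3: "oriD t = 1 \<or> oriD t = -1" by (rule oriD_pm[OF a(1)])
  show "s (D (hex_refl i t)) = (s (D C0) = (oriD (hex_refl i t) = 1))" unfolding 1 2 using a(3) 3 by auto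
qed

lemma D_same_ori: assumes "hex_chamber u1" "hex_chamber u2" "D u1 = D u2" shows "oriD u1 = oriD u2"
proof -
  from orient obtain s :: "'a \<Rightarrow> bool" where s: "\<forall>x\<in>F. \<forall>i<3. s (r i x) \<noteq> s x" by blast
  have a: "s (D u1) = (s (D C0) = (oriD u1 = 1))" by (rule D_ori[OF s assms(1)])
  have b: "s (D u2) = (s (D C0) = (oriD u2 = 1))" by (rule D_ori[OF s assms(2)])
  have "(oriD u1 = 1) = (oriD u2 = 1)" using a b unfolding assms(3) by (cases "s (D C0)") simp_all
  thus ?thesis using oriD_pm[OF assms(1)] oriD_pm[OF assms(2)] by auto
qed

lemma D_inv: assumes "hex_chamber u1" "Q \<in> set T12" "face_centre g" "D (cmap (aff Q g) u1) = D u1"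
  "hex_chamber t" shows "D (cmap (aff Q g) t) = D t"
proof (rule hinduct[where P="\<lambda>t. D (cmap (aff Q g) t) = D t", OF assms(1) _ _ assms(5)])
  show "D (cmap (aff Q g) u1) = D u1" by (rule assms(4))
next
  fix t and i :: nat assume a: "hex_chamber t" "i < 3" "D (cmap (aff Q g) t) = D t"
  have "D (cmap (aff Q g) (hex_refl i t)) = D (hex_refl i (cmap (aff Q g) t))" using cmap_refl[OF a(2)] by simp
  also have "\<dots> = r i (D (cmap (aff Q g) t))" by (rule D_refl[OF hexch_cmap[OF assms(2,3) a(1)] a(2)])
  also have "\<dots> = D (hex_refl i t)" using a(3) D_refl[OF a(1,2)] by simp
  finally show "D (cmap (aff Q g) (hex_refl i t)) = D (hex_refl i t)" .
qed

lemma rot_contra: assumes "Q \<in> {R1, R2, R3, R4, R5}" "face_centre g"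
  "\<And>t. hex_chamber t \<Longrightarrow> D (cmap (aff Q g) t) = D t" shows False
proof -
  have "\<exists>m g0 t0 c. face_centre m \<and> hex_chamber t0 \<and> c \<in> set CELLS \<and>
   cmap (aff Q g0) t0 = wact hex_refl c t0 \<and> g = padd g0 (psub m (lin Q m))"
  proof -
    have "Q = R1 \<or> Q = R2 \<or> Q = R3 \<or> Q = R4 \<or> Q = R5" using assms(1) by simp
    thus ?thesis
    proof (elim disjE)
      assume "Q = R1" then show ?thesis using rot_case1[OF assms(2)] by (simp only:)
    next
      assume "Q = R2" then show ?thesis using rot_case2[OF assms(2)] by (simp only:)
    next
      assume "Q = R3" then show ?thesis using rot_case3[OF assms(2)] by (simp only:)
    next
      assume "Q = R4" then show ?thesis using rot_case4[OF assms(2)] by (simp only:)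
    next
      assume "Q = R5" then show ?thesis using rot_case5[OF assms(2)] by (simp only:)
    qed
  qed
  then obtain m g0 t0 c where h: "face_centre m" "hex_chamber t0" "c \<in> set CELLS"
    "cmap (aff Q g0) t0 = wact hex_refl c t0" "g = padd g0 (psub m (lin Q m))" by blast
  define t where "t = cmap (tr m) t0"
  have ht: "hex_chamber t" unfolding t_def by (rule hexch_tr[OF h(1,2)])
  have "cmap (aff Q g) t = cmap (tr m) (wact hex_refl c t0)" unfolding t_def h(5) shift_lemma h(4) ..
  also have "\<dots> = wact hex_refl c t" unfolding t_def using wact_cmap_tr[OF CELLS_letters[OF h(3)]] by simp
  finally have "D t = D (wact hex_refl c t)" using assms(3)[OF ht] by simp
  also have "\<dots> = wact r c (D t)" by (rule D_wact[OF ht CELLS_letters[OF h(3)]])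
  finally show False using cells_ne[OF h(3) D_in[OF ht]] by simp
qed

lemma deck: assumes "hex_chamber u1" "hex_chamber u2" "D u1 = D u2"
  shows "\<exists>g. face_centre g \<and> u2 = cmap (tr g) u1 \<and> (\<forall>t. hex_chamber t \<longrightarrow> D (cmap (tr g) t) = D t)"
proof -
  from assms(1) obtain f1 d where u1: "u1 = mkch f1 d" "face_centre f1" "d \<in> set T12" by (rule hexch_E)
  from assms(2) obtain f2 d' where u2: "u2 = mkch f2 d'" "face_centre f2" "d' \<in> set T12" by (rule hexch_E)
  define Q where "Q = compQ d' d"
  define g where "g = psub f2 (lin Q f1)"
  have QT: "Q \<in> set T12" unfolding Q_def by (rule compQ_T12[OF u1(3) u2(3)])
  have fg: "face_centre g" unfolding g_def by (rule fc_psub[OF u2(2) fc_lin[OF QT u1(2)]])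
  have cu: "cmap (aff Q g) u1 = u2"
    unfolding u1(1) u2(1) cmap_mkch Q_def compQ_lin[OF u1(3)] g_def by (simp add: aff_def padd_def psub_def)
  have inv: "\<And>t. hex_chamber t \<Longrightarrow> D (cmap (aff Q g) t) = D t"
    using D_inv[OF assms(1) QT fg] cu assms(3) by simp
  have "oriD u1 = oriD u2" by (rule D_same_ori[OF assms])
  hence "detd d' = detd d" unfolding u1(1) u2(1) oriD_mkch by simp
  hence "Q \<in> {Id2, R1, R2, R3, R4, R5}" unfolding Q_def by (rule compQ_rot[OF u1(3) u2(3)])
  moreover have "Q \<notin> {R1, R2, R3, R4, R5}" using rot_contra[OF _ fg inv] by blast
  ultimately have "Q = Id2" by blast
  hence a: "aff Q g = tr g" by (simp add: tr_aff)
  have "u2 = cmap (tr g) u1" using cu a by simp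
  moreover have "\<forall>t. hex_chamber t \<longrightarrow> D (cmap (tr g) t) = D t" using inv a by simp
  ultimately show ?thesis using fg by blast
qed

end


definition Nm :: "pt \<Rightarrow> pt" where "Nm p = (fst p - snd p, fst p + 2 * snd p)"
definition Ktab :: "((pt \<times> pt) \<times> (pt \<times> pt)) list" where
 "Ktab = [(((1, 0), (0, 1)), ((1, 0), (0, 1))), (((1, 0), (1, -1)), ((0, 1), (1, 0))), (((-1, 0), (0, -1)), ((-1, 0), (0, -1))), (((-1, 0), (-1, 1)), ((0, -1), (-1, 0))), (((0, 1), (1, 0)), ((-1, 1), (0, 1))), (((0, 1), (-1, 1)), ((0, 1), (-1, 1))), (((0, -1), (-1, 0)), ((1, -1), (0, -1))), (((0, -1), (1, -1)), ((0, -1), (1, -1))), (((1, -1), (1, 0)), ((1, -1), (1, 0))), (((1, -1), (0, -1)), ((1, 0), (1, -1))), (((-1, 1), (-1, 0)), ((-1, 1), (-1, 0))), (((-1, 1), (0, 1)), ((-1, 0), (-1, 1)))]"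
definition Kd :: "pt \<times> pt \<Rightarrow> pt \<times> pt" where "Kd d = the (map_of Ktab d)"
definition KK :: "nat \<Rightarrow> pt \<times> pt \<Rightarrow> pt \<times> pt" where "KK m d = (if m = 0 then d else Kd d)"
definition GG :: "nat \<Rightarrow> nat \<Rightarrow> pt \<Rightarrow> pt" where
  "GG l m f = (if m = 0 then (int l * fst f, int l * snd f) else (int l * fst (Nm f), int l * snd (Nm f)))"
definition gcA :: "nat \<Rightarrow> nat \<Rightarrow> hch \<Rightarrow> hch \<Rightarrow> hch" where
  "gcA l m u t = (case u of (v, w, f) \<Rightarrow> cmap (aff (KK m (psub v f, psub w f)) (GG l m f)) t)"

lemma gcA_mkch: "gcA l m (mkch f d) t = cmap (aff (KK m d) (GG l m f)) t"
  by (simp add: gcA_def mkch_def padd_def psub_def)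

definition sig :: "nat \<Rightarrow> nat \<Rightarrow> nat \<Rightarrow> pt \<Rightarrow> int" where
  "sig l m k p = (if m = 0 then (if k = 0 then fst p - snd p else if k = 1 then snd p else 6 * int l - fst p - snd p)
                 else (if k = 0 then fst p else if k = 1 then snd p - fst p else 18 * int l - fst p - 2 * snd p))"
definition alpha :: "nat \<Rightarrow> nat \<Rightarrow> int" where
  "alpha m k = (if m = 0 then (if k = 0 then 3 else if k = 1 then 6 else 3) else (if k = 0 then 9 else if k = 1 then 6 else 3))"

lemma gc_side_eq: assumes "m = 0 \<or> m = l" "k < 3" shows "gc_side l m k p = alpha m k * int l * sig l m k p"
proof -
  have k: "k = 0 \<or> k = 1 \<or> k = 2" using assms(2) by auto
  from assms(1) show ?thesis
  proof
    assume m: "m = 0"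
    from k show ?thesis unfolding m
      by (elim disjE) (simp_all add: gc_side_def gc_corner6_def cross2_def sig_def alpha_def Let_def algebra_simps)
  next
    assume m: "m = l"
    show ?thesis
    proof (cases "l = 0")
      case True then show ?thesis using m k
        by (elim disjE) (simp_all add: gc_side_def gc_corner6_def cross2_def sig_def alpha_def Let_def algebra_simps)
    next
      case False
      from k show ?thesis unfolding m using False
        by (elim disjE) (simp_all add: gc_side_def gc_corner6_def cross2_def sig_def alpha_def Let_def algebra_simps)
    qed
  qed
qed

lemma alpha_pos: "k < 3 \<Longrightarrow> alpha m k > 0" by (simp add: alpha_def)

lemma sig_corner: assumes "m = 0 \<or> m = l" "k < 3" "l \<ge> 1" shows "sig l m k (gc_corner6 l m k) > 0"
proof -
  have k: "k = 0 \<or> k = 1 \<or> k = 2" using assms(2) by auto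
  from assms(1) show ?thesis
  proof
    assume m: "m = 0"
    from k show ?thesis unfolding m using assms(3) by (elim disjE) (simp_all add: sig_def gc_corner6_def)
  next
    assume m: "m = l"
    from k show ?thesis unfolding m using assms(3) by (elim disjE) (simp_all add: sig_def gc_corner6_def)
  qed
qed

lemma gc_chamber_iff: assumes "m = 0 \<or> m = l" "l \<ge> 1"
  shows "gc_chamber l m t \<longleftrightarrow> hex_chamber t \<and> (\<forall>k<3. sig l m k (centroid6 t) > 0)"
proof -
  have "gc_side l m k (centroid6 t) * gc_side l m k (gc_corner6 l m k) > 0 \<longleftrightarrow> sig l m k (centroid6 t) > 0"
    if k: "k < 3" for k
  proof -
    have pos: "alpha m k * int l * (alpha m k * int l * sig l m k (gc_corner6 l m k)) > 0"
      using alpha_pos[OF k] sig_corner[OF assms(1) k assms(2)] assms(2) by simp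
    have "gc_side l m k (centroid6 t) * gc_side l m k (gc_corner6 l m k) =
       sig l m k (centroid6 t) * (alpha m k * int l * (alpha m k * int l * sig l m k (gc_corner6 l m k)))"
      unfolding gc_side_eq[OF assms(1) k] by (simp add: algebra_simps)
    thus ?thesis using pos by (metis mult_pos_pos zero_less_mult_pos2)
  qed
  thus ?thesis unfolding gc_chamber_def by auto
qed

lemma wall_iff: assumes "m = 0 \<or> m = l" "l \<ge> 1" "k < 3"
  shows "wall_on_side l m i t k \<longleftrightarrow> (\<forall>j<3. j \<noteq> i \<longrightarrow> sig l m k (chpt6 t j) = 0)"
proof -
  have nz: "alpha m k * int l \<noteq> 0" using alpha_pos[OF assms(3), of m] assms(2) by simp
  show ?thesis unfolding wall_on_side_def gc_side_eq[OF assms(1,3)] using nz by simp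
qed

lemma all3: "(\<forall>j<3. P j) \<longleftrightarrow> P 0 \<and> P 1 \<and> P (2::nat)"
  by (auto simp: less_Suc_eq numeral_eq_Suc)

lemma chpt6_mkch: "chpt6 (mkch f d) 0 = (6 * fst f + 6 * fst (fst d), 6 * snd f + 6 * snd (fst d))"
  "chpt6 (mkch f d) 1 = (6 * fst f + 3 * (fst (fst d) + fst (snd d)), 6 * snd f + 3 * (snd (fst d) + snd (snd d)))"
  "chpt6 (mkch f d) 2 = (6 * fst f, 6 * snd f)"
  by (simp_all add: chpt6_def mkch_def padd_def algebra_simps)

definition siglin :: "nat \<Rightarrow> nat \<Rightarrow> pt \<Rightarrow> int" where
  "siglin m k p = (if m = 0 then (if k = 0 then fst p - snd p else if k = 1 then snd p else - fst p - snd p)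
                 else (if k = 0 then fst p else if k = 1 then snd p - fst p else - fst p - 2 * snd p))"
definition sigM :: "nat \<Rightarrow> nat \<Rightarrow> int" where
  "sigM m k = (if m = 0 then (if k = 0 then 18 else 6) else (if k = 1 then 18 else if k = 0 then 6 else 18))"

lemma sig_add: "sig l m k (x1 + y1, x2 + y2) = sig l m k (x1, x2) + siglin m k (y1, y2)"
  by (simp add: sig_def siglin_def algebra_simps)

lemma sig_base: assumes "k < 3" "m = 0 \<or> m = l" "l \<ge> 1" shows "\<exists>n. sig l m k (6 * (b + 3 * q), 6 * b) = sigM m k * n"
proof -
  have k: "k = 0 \<or> k = 1 \<or> k = 2" using assms(1) by auto
  show ?thesis
  proof (cases "m = 0")
    case m: True
    from k show ?thesis
    proof (elim disjE)
      assume "k = 0" thus ?thesis using m by (simp add: sig_def sigM_def)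
    next
      assume "k = 1" thus ?thesis using m by (simp add: sig_def sigM_def)
    next
      assume "k = 2" thus ?thesis using m by (intro exI[of _ "int l - 2 * b - 3 * q"]) (simp add: sig_def sigM_def algebra_simps)
    qed
  next
    case m: False
    from k show ?thesis
    proof (elim disjE)
      assume "k = 0" thus ?thesis using m by (intro exI[of _ "b + 3 * q"]) (simp add: sig_def sigM_def algebra_simps)
    next
      assume "k = 1" thus ?thesis using m by (intro exI[of _ "- q"]) (simp add: sig_def sigM_def algebra_simps)
    next
      assume "k = 2" thus ?thesis using m by (intro exI[of _ "int l - b - q"]) (simp add: sig_def sigM_def algebra_simps)
    qed
  qed
qed

lemma offs: assumes "d \<in> set T12" "k < 3" 
  shows "\<bar>siglin m k (6 * fst (fst d), 6 * snd (fst d))\<bar> \<le> sigM m k \<and>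
         \<bar>siglin m k (3 * (fst (fst d) + fst (snd d)), 3 * (snd (fst d) + snd (snd d)))\<bar> \<le> sigM m k \<and>
         ((siglin m k (6 * fst (fst d), 6 * snd (fst d)) \<ge> 0 \<and> siglin m k (3 * (fst (fst d) + fst (snd d)), 3 * (snd (fst d) + snd (snd d))) \<ge> 0) \<or>
          (siglin m k (6 * fst (fst d), 6 * snd (fst d)) \<le> 0 \<and> siglin m k (3 * (fst (fst d) + fst (snd d)), 3 * (snd (fst d) + snd (snd d))) \<le> 0))"
proof -
  have k: "k = 0 \<or> k = 1 \<or> k = 2" using assms(2) by auto
  show ?thesis
  proof (cases "m = 0")
    case True
    from T12_cases[OF assms(1)] k show ?thesis using True by (elim disjE; simp add: siglin_def sigM_def)
  next
    case False
    from T12_cases[OF assms(1)] k show ?thesis using False by (elim disjE; simp add: siglin_def sigM_def)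
  qed
qed

lemma arith_mirror: assumes "(M::int) > 0" "X = M * n" "\<bar>o0\<bar> \<le> M" "\<bar>o1\<bar> \<le> M" "(o0 \<ge> 0 \<and> o1 \<ge> 0) \<or> (o0 \<le> 0 \<and> o1 \<le> 0)"
  shows "(X + o0 \<ge> 0 \<and> X + o1 \<ge> 0 \<and> X \<ge> 0) \<or> (X + o0 \<le> 0 \<and> X + o1 \<le> 0 \<and> X \<le> 0)"
proof -
  consider "n \<ge> 1" | "n = 0" | "n \<le> -1" by arith
  then show ?thesis
  proof cases
    case 1
    have "M * 1 \<le> M * n" using 1 assms(1) by (intro mult_left_mono) auto
    hence "X \<ge> M" using assms(2) by simp
    thus ?thesis using assms(3,4) by auto
  next
    case 2 thus ?thesis using assms by auto
  next
    case 3
    have "M * n \<le> M * (-1)" using 3 assms(1) by (intro mult_left_mono) auto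
    hence "X \<le> - M" using assms(2) by simp
    thus ?thesis using assms(3,4) by auto
  qed
qed

lemma mirror: assumes "d \<in> set T12" "k < 3" "m = 0 \<or> m = l" "l \<ge> 1"
 shows "(\<forall>j<3. sig l m k (chpt6 (mkch (b + 3*q, b) d) j) \<ge> 0) \<or> (\<forall>j<3. sig l m k (chpt6 (mkch (b + 3*q, b) d) j) \<le> 0)"
proof -
  obtain n where n: "sig l m k (6 * (b + 3 * q), 6 * b) = sigM m k * n" using sig_base[OF assms(2,3,4)] by blast
  have M: "sigM m k > 0" by (simp add: sigM_def)
  have e: "sig l m k (chpt6 (mkch (b + 3*q, b) d) 0) = sig l m k (6 * (b + 3 * q), 6 * b) + siglin m k (6 * fst (fst d), 6 * snd (fst d))"
          "sig l m k (chpt6 (mkch (b + 3*q, b) d) 1) = sig l m k (6 * (b + 3 * q), 6 * b) + siglin m k (3 * (fst (fst d) + fst (snd d)), 3 * (snd (fst d) + snd (snd d)))"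
          "sig l m k (chpt6 (mkch (b + 3*q, b) d) 2) = sig l m k (6 * (b + 3 * q), 6 * b)"
    unfolding chpt6_mkch by (simp_all add: sig_add)
  show ?thesis unfolding all3 e using arith_mirror[OF M n] offs[OF assms(1,2), of m] by blast
qed


lemma mirror_hex: assumes "hex_chamber t" "k < 3" "m = 0 \<or> m = l" "l \<ge> 1"
  shows "(\<forall>j<3. sig l m k (chpt6 t j) \<ge> 0) \<or> (\<forall>j<3. sig l m k (chpt6 t j) \<le> 0)"
proof -
  from assms(1) obtain f d where t: "t = mkch f d" "face_centre f" "d \<in> set T12" by (rule hexch_E)
  obtain f1 f2 where ff: "f = (f1, f2)" by (cases f)
  obtain q where q: "f1 = f2 + 3 * q" using t(2) fc_ex ff by auto
  have f: "f = (f2 + 3 * q, f2)" using q ff by simp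
  show ?thesis unfolding t(1) f by (rule mirror[OF t(3) assms(2-4)])
qed

lemma cent_sig: "3 * sig l m k (centroid6 t) = sig l m k (chpt6 t 0) + sig l m k (chpt6 t 1) + sig l m k (chpt6 t 2)"
  by (cases t) (simp add: sig_def centroid6_def chpt6_def algebra_simps)

lemma chpt6_refl_same: "i < 3 \<Longrightarrow> j < 3 \<Longrightarrow> j \<noteq> i \<Longrightarrow> chpt6 (hex_refl i t) j = chpt6 t j"
proof -
  assume a: "i < 3" "j < 3" "j \<noteq> i"
  obtain v w f where t: "t = (v,w,f)" by (cases t) auto
  have "i = 0 \<or> i = 1 \<or> i = 2" "j = 0 \<or> j = 1 \<or> j = 2" using a by auto
  thus ?thesis using a(3) unfolding t by (elim disjE) (simp_all add: hex_refl_def chpt6_def algebra_simps)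
qed

lemma cross_wall: assumes "hex_chamber t" "i < 3" "k < 3" "m = 0 \<or> m = l" "l \<ge> 1"
  "sig l m k (centroid6 t) > 0" "sig l m k (centroid6 (hex_refl i t)) \<le> 0"
  shows "\<forall>j<3. j \<noteq> i \<longrightarrow> sig l m k (chpt6 t j) = 0"
proof (intro allI impI)
  fix j assume j: "j < 3" "j \<noteq> i"
  let ?t' = "hex_refl i t"
  have h': "hex_chamber ?t'" by (rule hexch_refl[OF assms(1,2)])
  have same: "sig l m k (chpt6 ?t' j) = sig l m k (chpt6 t j)" using chpt6_refl_same[OF assms(2) j] by simp
  have s1: "sig l m k (chpt6 t 0) + sig l m k (chpt6 t 1) + sig l m k (chpt6 t 2) > 0"
    using cent_sig[of l m k t] assms(6) by linarith
  have s2: "sig l m k (chpt6 ?t' 0) + sig l m k (chpt6 ?t' 1) + sig l m k (chpt6 ?t' 2) \<le> 0"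
    using cent_sig[of l m k ?t'] assms(7) by linarith
  have tpos: "\<forall>j<3. sig l m k (chpt6 t j) \<ge> 0"
    using mirror_hex[OF assms(1,3,4,5)] s1 unfolding all3 by auto
  have jj: "j = 0 \<or> j = 1 \<or> j = 2" using j by auto
  from mirror_hex[OF h' assms(3,4,5)] show "sig l m k (chpt6 t j) = 0"
  proof
    assume a: "\<forall>j<3. sig l m k (chpt6 ?t' j) \<ge> 0"
    have "\<forall>j<3. sig l m k (chpt6 ?t' j) = 0" using a s2 unfolding all3 by auto
    thus ?thesis using same j(1) by auto
  next
    assume a: "\<forall>j<3. sig l m k (chpt6 ?t' j) \<le> 0"
    thus ?thesis using same tpos j(1) by force
  qed
qed


definition Rk :: "nat \<Rightarrow> nat \<Rightarrow> nat \<Rightarrow> pt \<Rightarrow> pt" where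
  "Rk l m k p = (if m = 0 then (if k = 0 then (snd p, fst p) else if k = 1 then (fst p + snd p, - snd p) else (int l - snd p, int l - fst p))
     else (if k = 0 then (- fst p, fst p + snd p) else if k = 1 then (snd p, fst p) else (fst p, 3 * int l - fst p - snd p)))"

lemma wall_refl0: assumes "d \<in> set T12" "i < 3" "k < 3"
  "\<forall>j<3. j \<noteq> i \<longrightarrow> sig l 0 k (chpt6 (mkch (b+3*q, b) d) j) = 0"
  shows "cmap (Rk l 0 k) (mkch (b+3*q,b) d) = hex_refl i (mkch (b+3*q,b) d)"
proof -
  have ik: "i = 0 \<or> i = 1 \<or> i = 2" "k = 0 \<or> k = 1 \<or> k = 2" using assms(2,3) by auto
  from T12_cases[OF assms(1)] ik assms(4) show ?thesis unfolding all3 chpt6_mkch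
    apply -
    apply (elim disjE)
    apply (simp_all add: sig_def Rk_def cmap_def mkch_def padd_def hex_refl_def)
    apply (presburger)+
    done
qed


lemma wall_refl1: assumes "d \<in> set T12" "i < 3" "k < 3" "l \<ge> 1"
  "\<forall>j<3. j \<noteq> i \<longrightarrow> sig l l k (chpt6 (mkch (b+3*q, b) d) j) = 0"
  shows "cmap (Rk l l k) (mkch (b+3*q,b) d) = hex_refl i (mkch (b+3*q,b) d)"
proof -
  have ik: "i = 0 \<or> i = 1 \<or> i = 2" "k = 0 \<or> k = 1 \<or> k = 2" using assms(2,3) by auto
  have l0: "l \<noteq> 0" using assms(4) by simp
  from T12_cases[OF assms(1)] ik assms(5) show ?thesis unfolding all3 chpt6_mkch
    apply -
    apply (elim disjE)
    apply (simp_all add: sig_def Rk_def cmap_def mkch_def padd_def hex_refl_def l0)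
    apply (presburger+)?
    done
qed


lemma wall_refl_hex: assumes "hex_chamber t" "i < 3" "k < 3" "m = 0 \<or> m = l" "l \<ge> 1" "wall_on_side l m i t k"
  shows "cmap (Rk l m k) t = hex_refl i t"
proof -
  from assms(1) obtain f d where t: "t = mkch f d" "face_centre f" "d \<in> set T12" by (rule hexch_E)
  obtain f1 f2 where ff: "f = (f1, f2)" by (cases f)
  obtain q where q: "f1 = f2 + 3 * q" using t(2) fc_ex ff by auto
  have f: "f = (f2 + 3 * q, f2)" using q ff by simp
  have w: "\<forall>j<3. j \<noteq> i \<longrightarrow> sig l m k (chpt6 t j) = 0" using assms(6) wall_iff[OF assms(4,5,3)] by simp
  from assms(4) show ?thesis
  proof
    assume m: "m = 0"
    show ?thesis using wall_refl0[OF t(3) assms(2,3), of l f2 q] w unfolding m t(1) f by simp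
  next
    assume m: "m = l"
    show ?thesis using wall_refl1[OF t(3) assms(2,3,5), of f2 q] w unfolding m t(1) f by simp
  qed
qed

lemma exists_wall: assumes "gc_chamber l m t" "\<not> gc_chamber l m (hex_refl i t)" "i < 3" "m = 0 \<or> m = l" "l \<ge> 1"
  shows "\<exists>k<3. wall_on_side l m i t k"
proof -
  have ht: "hex_chamber t" "\<forall>k<3. sig l m k (centroid6 t) > 0" using assms(1) gc_chamber_iff[OF assms(4,5)] by auto
  have ht': "hex_chamber (hex_refl i t)" by (rule hexch_refl[OF ht(1) assms(3)])
  obtain k where k: "k < 3" "sig l m k (centroid6 (hex_refl i t)) \<le> 0"
    using assms(2) ht' gc_chamber_iff[OF assms(4,5)] by (auto simp: not_less)
  have "\<forall>j<3. j \<noteq> i \<longrightarrow> sig l m k (chpt6 t j) = 0"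
    by (rule cross_wall[OF ht(1) assms(3) k(1) assms(4,5)]) (use ht(2) k in auto)
  thus ?thesis using wall_iff[OF assms(4,5) k(1)] k(1) by blast
qed



lemma KK_T12: "d \<in> set T12 \<Longrightarrow> KK m d \<in> set T12"
  by (drule T12_cases) (elim disjE; simp add: KK_def Kd_def Ktab_def T12_def)

lemma GG_fc: "face_centre f \<Longrightarrow> face_centre (GG l m f)"
proof -
  assume a: "face_centre f"
  obtain k where k: "fst f = snd f + 3 * k" using a fc_ex by auto
  show ?thesis
  proof (cases "m = 0")
    case True
    have "fst (GG l m f) = snd (GG l m f) + 3 * (int l * k)" using True k by (simp add: GG_def algebra_simps)
    thus ?thesis using fc_ex by blast
  next
    case False
    have "fst (GG l m f) = snd (GG l m f) + 3 * (- int l * snd f)" using False by (simp add: GG_def Nm_def algebra_simps)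
    thus ?thesis using fc_ex by blast
  qed
qed

lemma hexch_gcA: "hex_chamber u \<Longrightarrow> hex_chamber t \<Longrightarrow> hex_chamber (gcA l m u t)"
proof -
  assume a: "hex_chamber u" "hex_chamber t"
  from a(1) obtain f d where u: "u = mkch f d" "face_centre f" "d \<in> set T12" by (rule hexch_E)
  show ?thesis unfolding u(1) gcA_mkch by (rule hexch_cmap[OF KK_T12[OF u(3)] GG_fc[OF u(2)] a(2)])
qed

lemma gcA_refl_i: "i < 3 \<Longrightarrow> gcA l m u (hex_refl i t) = hex_refl i (gcA l m u t)"
  by (cases u) (simp add: gcA_def cmap_refl)

lemma pw0: assumes "d \<in> set T12" "k < 3"
  shows "aff (KK 0 (NT d k)) (GG l 0 (padd f (SH d k))) p = aff (KK 0 d) (GG l 0 f) (Rk l 0 k p)"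
proof -
  have "k = 0 \<or> k = 1 \<or> k = 2" using assms(2) by auto
  thus ?thesis by (elim disjE) (simp_all add: KK_def GG_def NT_def SH_def Rk_def aff_def padd_def psub_def lin_def algebra_simps)
qed

lemma pw1: assumes "d \<in> set T12" "k < 3" "l \<ge> 1"
  shows "aff (KK l (NT d k)) (GG l l (padd f (SH d k))) p = aff (KK l d) (GG l l f) (Rk l l k p)"
proof -
  have l0: "l \<noteq> 0" using assms(3) by simp
  have "k = 0 \<or> k = 1 \<or> k = 2" using assms(2) by auto
  with T12_cases[OF assms(1)] show ?thesis
    by (elim disjE; simp add: l0 KK_def Kd_def Ktab_def GG_def Nm_def NT_def SH_def Rk_def aff_def padd_def psub_def lin_def algebra_simps)
qed

lemma cmap_comp: "cmap h (cmap g t) = cmap (h \<circ> g) t"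
  by (cases t) (simp add: cmap_def)

lemma gcA_reflk: assumes "hex_chamber u" "k < 3" "m = 0 \<or> m = l" "l \<ge> 1"
  shows "gcA l m (hex_refl k u) t = gcA l m u (cmap (Rk l m k) t)"
proof -
  from assms(1) obtain f d where u: "u = mkch f d" "face_centre f" "d \<in> set T12" by (rule hexch_E)
  have pw: "aff (KK m (NT d k)) (GG l m (padd f (SH d k))) = aff (KK m d) (GG l m f) \<circ> Rk l m k"
  proof (rule ext)
    fix p
    from assms(3) show "aff (KK m (NT d k)) (GG l m (padd f (SH d k))) p = (aff (KK m d) (GG l m f) \<circ> Rk l m k) p"
    proof
      assume m: "m = 0" show ?thesis unfolding m comp_def by (rule pw0[OF u(3) assms(2)])
    next
      assume m: "m = l" show ?thesis unfolding m comp_def by (rule pw1[OF u(3) assms(2,4)])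
    qed
  qed
  show ?thesis unfolding u(1) refl_gen[OF assms(2)] gcA_mkch cmap_comp pw ..
qed

lemma gcA_glue: assumes "hex_chamber u" "hex_chamber t" "i < 3" "k < 3" "m = 0 \<or> m = l" "l \<ge> 1"
  "wall_on_side l m i t k" shows "gcA l m (hex_refl k u) t = hex_refl i (gcA l m u t)"
  unfolding gcA_reflk[OF assms(1,4,5,6)] wall_refl_hex[OF assms(2,3,4,5,6,7)] gcA_refl_i[OF assms(3)] ..

lemma GG_add: "GG l m (padd f g) = padd (GG l m f) (GG l m g)"
  by (simp add: GG_def Nm_def padd_def algebra_simps)

lemma gcA_tr: "gcA l m (cmap (tr a) u) t = cmap (tr (GG l m a)) (gcA l m u t)"
proof -
  obtain v w f where u: "u = (v, w, f)" by (cases u) auto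
  obtain x y z where t: "t = (x, y, z)" by (cases t) auto
  show ?thesis unfolding u t
    by (simp add: gcA_def cmap_def tr_def GG_add[unfolded padd_def] aff_def padd_def psub_def algebra_simps)
qed


lemma cent_aff: "centroid6 (cmap (aff Q g) t) = (6 * fst g + fst (lin Q (centroid6 t)), 6 * snd g + snd (lin Q (centroid6 t)))"
  by (cases t) (simp add: centroid6_def cmap_def aff_def padd_def lin_def algebra_simps)

definition omg :: "int \<Rightarrow> pt \<Rightarrow> bool" where
  "omg S c \<longleftrightarrow> snd c > 0 \<and> fst c > snd c \<and> fst c + snd c < S"

lemma lin_bound: "d \<in> set T12 \<Longrightarrow> omg S c \<Longrightarrow> \<bar>fst (lin d c)\<bar> < S \<and> \<bar>snd (lin d c)\<bar> < S \<and> \<bar>fst (lin d c) + snd (lin d c)\<bar> < S"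
  unfolding omg_def by (drule T12_cases) (elim disjE; simp add: lin_def; linarith)

lemma lin_eq_T12: "d \<in> set T12 \<Longrightarrow> d' \<in> set T12 \<Longrightarrow> omg S c \<Longrightarrow> omg S c' \<Longrightarrow> lin d c = lin d' c' \<Longrightarrow> d = d'"
  unfolding omg_def
  apply (drule T12_cases)+
  apply (elim disjE; simp add: lin_def prod_eq_iff; linarith)
  done

lemma small_mult: assumes "(S::int) > 0" "\<bar>S * n\<bar> < 2 * S" shows "\<bar>n\<bar> \<le> 1"
proof (rule ccontr)
  assume "\<not> \<bar>n\<bar> \<le> 1" hence "\<bar>n\<bar> \<ge> 2" by simp
  hence "S * 2 \<le> S * \<bar>n\<bar>" using assms(1) by (intro mult_left_mono) auto
  thus False using assms by (simp add: abs_mult)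
qed

lemma U_int: assumes "S > 0" "face_centre f" "face_centre f'" "d \<in> set T12" "d' \<in> set T12" "omg S c" "omg S c'"
  "S * fst f + fst (lin d c) = S * fst f' + fst (lin d' c')" "S * snd f + snd (lin d c) = S * snd f' + snd (lin d' c')"
  shows "f = f' \<and> d = d'"
proof -
  define a where "a = fst f - fst f'"
  define b where "b = snd f - snd f'"
  have B: "\<bar>fst (lin d c)\<bar> < S \<and> \<bar>snd (lin d c)\<bar> < S \<and> \<bar>fst (lin d c) + snd (lin d c)\<bar> < S" by (rule lin_bound[OF assms(4,6)])
  have B': "\<bar>fst (lin d' c')\<bar> < S \<and> \<bar>snd (lin d' c')\<bar> < S \<and> \<bar>fst (lin d' c') + snd (lin d' c')\<bar> < S" by (rule lin_bound[OF assms(5,7)])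
  have ea: "S * a = fst (lin d' c') - fst (lin d c)" using assms(8) unfolding a_def by (simp add: algebra_simps)
  have eb: "S * b = snd (lin d' c') - snd (lin d c)" using assms(9) unfolding b_def by (simp add: algebra_simps)
  have "\<bar>S * a\<bar> < 2 * S" using ea B B' by linarith
  hence a1: "\<bar>a\<bar> \<le> 1" by (rule small_mult[OF assms(1)])
  have "\<bar>S * b\<bar> < 2 * S" using eb B B' by linarith
  hence b1: "\<bar>b\<bar> \<le> 1" by (rule small_mult[OF assms(1)])
  have "S * (a + b) = (fst (lin d' c') + snd (lin d' c')) - (fst (lin d c) + snd (lin d c))" using ea eb by (simp add: algebra_simps)
  hence "\<bar>S * (a + b)\<bar> < 2 * S" using B B' by linarith
  hence ab1: "\<bar>a + b\<bar> \<le> 1" by (rule small_mult[OF assms(1)])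
  have "face_centre (psub f f')" by (rule fc_psub[OF assms(2,3)])
  hence "(a - b) mod 3 = 0" unfolding a_def b_def by (simp add: psub_def face_centre_def)
  hence "a = 0 \<and> b = 0" using a1 b1 ab1 by presburger
  hence ff: "f = f'" unfolding a_def b_def by (simp add: prod_eq_iff)
  have "lin d c = lin d' c'" using assms(8,9) ff by (simp add: prod_eq_iff)
  thus ?thesis using ff lin_eq_T12[OF assms(4,5,6,7)] by simp
qed

lemma J_lin: "d \<in> set T12 \<Longrightarrow> (2 * fst (lin (Kd d) c) + snd (lin (Kd d) c), - fst (lin (Kd d) c) + snd (lin (Kd d) c)) = lin d (2 * fst c + snd c, - fst c + snd c)"
  by (drule T12_cases) (elim disjE; simp add: Kd_def Ktab_def lin_def algebra_simps)

lemma tile_unique: assumes "m = 0 \<or> m = l" "l \<ge> 1" "hex_chamber u1" "hex_chamber u2" "gc_chamber l m t1" "gc_chamber l m t2"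
  "gcA l m u1 t1 = gcA l m u2 t2" shows "u1 = u2"
proof -
  from assms(3) obtain f1 d1 where u1: "u1 = mkch f1 d1" "face_centre f1" "d1 \<in> set T12" by (rule hexch_E)
  from assms(4) obtain f2 d2 where u2: "u2 = mkch f2 d2" "face_centre f2" "d2 \<in> set T12" by (rule hexch_E)
  define c1 where "c1 = centroid6 t1"
  define c2 where "c2 = centroid6 t2"
  have s1: "\<forall>k<3. sig l m k c1 > 0" using assms(5) gc_chamber_iff[OF assms(1,2)] c1_def by auto
  have s2: "\<forall>k<3. sig l m k c2 > 0" using assms(6) gc_chamber_iff[OF assms(1,2)] c2_def by auto
  have ce: "centroid6 (gcA l m u1 t1) = centroid6 (gcA l m u2 t2)" using assms(7) by simp
  hence ce': "(6 * fst (GG l m f1) + fst (lin (KK m d1) c1), 6 * snd (GG l m f1) + snd (lin (KK m d1) c1)) =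
     (6 * fst (GG l m f2) + fst (lin (KK m d2) c2), 6 * snd (GG l m f2) + snd (lin (KK m d2) c2))"
    unfolding u1(1) u2(1) gcA_mkch cent_aff c1_def c2_def .
  have "f1 = f2 \<and> d1 = d2"
  proof (cases "m = 0")
    case True
    have o1: "omg (6 * int l) c1" using s1 True unfolding omg_def all3 sig_def by auto
    have o2: "omg (6 * int l) c2" using s2 True unfolding omg_def all3 sig_def by auto
    show ?thesis
      by (rule U_int[OF _ u1(2) u2(2) u1(3) u2(3) o1 o2]) (use assms(2) ce' True in \<open>simp_all add: GG_def KK_def algebra_simps\<close>)
  next
    case False
    define J where "J = (\<lambda>c::pt. (2 * fst c + snd c, - fst c + snd c))"
    have o1: "omg (18 * int l) (J c1)" using s1 False unfolding omg_def all3 sig_def J_def by auto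
    have o2: "omg (18 * int l) (J c2)" using s2 False unfolding omg_def all3 sig_def J_def by auto
    have j1: "J (lin (Kd d1) c1) = lin d1 (J c1)" unfolding J_def by (rule J_lin[OF u1(3)])
    have j2: "J (lin (Kd d2) c2) = lin d2 (J c2)" unfolding J_def by (rule J_lin[OF u2(3)])
    have "J (6 * fst (GG l m f1) + fst (lin (KK m d1) c1), 6 * snd (GG l m f1) + snd (lin (KK m d1) c1)) =
          J (6 * fst (GG l m f2) + fst (lin (KK m d2) c2), 6 * snd (GG l m f2) + snd (lin (KK m d2) c2))" using ce' by simp
    hence e: "(18 * int l * fst f1 + fst (J (lin (Kd d1) c1)), 18 * int l * snd f1 + snd (J (lin (Kd d1) c1))) =
              (18 * int l * fst f2 + fst (J (lin (Kd d2) c2)), 18 * int l * snd f2 + snd (J (lin (Kd d2) c2)))"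
      using False unfolding J_def by (simp add: GG_def KK_def Nm_def algebra_simps)
    show ?thesis
      by (rule U_int[OF _ u1(2) u2(2) u1(3) u2(3) o1 o2]) (use assms(2) e j1 j2 in \<open>simp_all\<close>)
  qed
  thus ?thesis using u1(1) u2(1) by simp
qed

lemma lin_inj: "Q \<in> set T12 \<Longrightarrow> lin Q p = lin Q p' \<Longrightarrow> p = p'"
  by (drule T12_cases) (elim disjE; simp add: lin_def prod_eq_iff; linarith)

lemma gcA_inj: assumes "hex_chamber u" "gcA l m u t1 = gcA l m u t2" shows "t1 = t2"
proof -
  from assms(1) obtain f d where u: "u = mkch f d" "face_centre f" "d \<in> set T12" by (rule hexch_E)
  have Q: "KK m d \<in> set T12" by (rule KK_T12[OF u(3)])
  obtain a b c where t1: "t1 = (a, b, c)" by (cases t1) auto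
  obtain a' b' c' where t2: "t2 = (a', b', c')" by (cases t2) auto
  have "lin (KK m d) a = lin (KK m d) a'" "lin (KK m d) b = lin (KK m d) b'" "lin (KK m d) c = lin (KK m d) c'"
    using assms(2) unfolding u(1) gcA_mkch t1 t2 by (simp_all add: cmap_def aff_def padd_def prod_eq_iff)
  thus ?thesis unfolding t1 t2 using lin_inj[OF Q] by blast
qed

lemma cent_mkch_bound: "d \<in> set T12 \<Longrightarrow> \<bar>fst (centroid6 (mkch f d)) - 6 * fst f\<bar> \<le> 4 \<and> \<bar>snd (centroid6 (mkch f d)) - 6 * snd f\<bar> \<le> 4"
  by (drule T12_cases) (elim disjE; simp add: centroid6_def mkch_def padd_def)

lemma Tri_finite: assumes "m = 0 \<or> m = l" "l \<ge> 1" shows "finite {t. gc_chamber l m t}"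
proof -
  define B where "B = {-1 .. 3 * int l + 1}"
  have "{t. gc_chamber l m t} \<subseteq> (\<lambda>(f, d). mkch f d) ` ((B \<times> B) \<times> set T12)"
  proof
    fix t assume "t \<in> {t. gc_chamber l m t}"
    hence g: "hex_chamber t" "\<forall>k<3. sig l m k (centroid6 t) > 0" using gc_chamber_iff[OF assms] by auto
    from g(1) obtain f d where t: "t = mkch f d" "face_centre f" "d \<in> set T12" by (rule hexch_E)
    have c: "0 < fst (centroid6 t) \<and> fst (centroid6 t) < 18 * int l \<and> 0 < snd (centroid6 t) \<and> snd (centroid6 t) < 18 * int l"
    proof (cases "m = 0")
      case True thus ?thesis using g(2) unfolding all3 sig_def by auto
    next
      case False thus ?thesis using g(2) unfolding all3 sig_def by auto
    qed
    have "fst f \<in> B \<and> snd f \<in> B" using c cent_mkch_bound[OF t(3), of f] unfolding t(1) B_def by auto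
    thus "t \<in> (\<lambda>(f, d). mkch f d) ` ((B \<times> B) \<times> set T12)" using t by (auto intro!: image_eqI[of _ _ "(f, d)"] simp: mem_Times_iff)
  qed
  moreover have "finite ((\<lambda>(f, d). mkch f d) ` ((B \<times> B) \<times> set T12))" unfolding B_def by auto
  ultimately show ?thesis by (rule finite_subset)
qed



locale gcm = hexmap F r for F :: "'a set" and r +
  fixes l m :: nat
  assumes lm: "m = 0 \<or> m = l" and l1: "l \<ge> 1"
begin

definition covers :: "hch \<Rightarrow> hch \<Rightarrow> hch \<Rightarrow> bool" where
  "covers u t s \<longleftrightarrow> hex_chamber u \<and> gc_chamber l m t \<and> gcA l m u t = s"

definition E :: "hch \<Rightarrow> 'a \<times> hch" where
  "E s = (case (SOME p. covers (fst p) (snd p) s) of (u, t) \<Rightarrow> (D u, t))"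

lemma covers_unique: "covers u t s \<Longrightarrow> covers u' t' s \<Longrightarrow> u = u' \<and> t = t'"
proof -
  assume a: "covers u t s" "covers u' t' s"
  have uu: "u = u'" using tile_unique[OF lm l1] a unfolding covers_def by metis
  have "gcA l m u t = gcA l m u t'" using a uu unfolding covers_def by simp
  hence "t = t'" using gcA_inj a(1) unfolding covers_def by blast
  thus ?thesis using uu by simp
qed

lemma E_eq: assumes "covers u t s" shows "E s = (D u, t)"
proof -
  have ex: "\<exists>p. covers (fst p) (snd p) s" using assms by (intro exI[of _ "(u, t)"]) simp
  obtain u' t' where p: "(SOME p. covers (fst p) (snd p) s) = (u', t')" by (cases "SOME p. covers (fst p) (snd p) s")
  have "covers u' t' s" using someI_ex[OF ex] p by simp
  hence "u' = u \<and> t' = t" using covers_unique assms by blast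
  thus ?thesis unfolding E_def p by simp
qed

definition selk :: "nat \<Rightarrow> hch \<Rightarrow> nat" where
  "selk i t = (if wall_on_side l m i t 0 then 0 else if wall_on_side l m i t 1 then 1 else 2)"

lemma gc_r_eq: "gc_r l m r i (c, t) = (if gc_chamber l m (hex_refl i t) then (c, hex_refl i t) else (r (selk i t) c, t))"
  by (simp add: gc_r_def selk_def Let_def)

lemma selk_wall: assumes "gc_chamber l m t" "\<not> gc_chamber l m (hex_refl i t)" "i < 3"
  shows "selk i t < 3 \<and> wall_on_side l m i t (selk i t)"
proof -
  obtain k where k: "k < 3" "wall_on_side l m i t k" using exists_wall[OF assms lm l1] by blast
  have "k = 0 \<or> k = 1 \<or> k = 2" using k(1) by auto
  thus ?thesis using k(2) unfolding selk_def by auto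
qed

lemma covers_step: assumes "covers u t s" "i < 3"
  shows "(gc_chamber l m (hex_refl i t) \<and> covers u (hex_refl i t) (hex_refl i s)) \<or>
         (\<not> gc_chamber l m (hex_refl i t) \<and> covers (hex_refl (selk i t) u) t (hex_refl i s))"
proof (cases "gc_chamber l m (hex_refl i t)")
  case True
  thus ?thesis using assms gcA_refl_i[OF assms(2)] unfolding covers_def by simp
next
  case False
  have c: "hex_chamber u" "gc_chamber l m t" "gcA l m u t = s" using assms(1) unfolding covers_def by auto
  have ht: "hex_chamber t" using c(2) gc_chamber_def by blast
  have sk: "selk i t < 3" "wall_on_side l m i t (selk i t)" using selk_wall[OF c(2) False assms(2)] by auto
  have "gcA l m (hex_refl (selk i t) u) t = hex_refl i s"
    using gcA_glue[OF c(1) ht assms(2) sk(1) lm l1 sk(2)] c(3) by simp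
  thus ?thesis using False c hexch_refl[OF c(1) sk(1)] unfolding covers_def by simp
qed

lemma E_refl: assumes "covers u t s" "i < 3" shows "E (hex_refl i s) = gc_r l m r i (E s)"
proof -
  note es = E_eq[OF assms(1)]
  from covers_step[OF assms] show ?thesis
  proof
    assume a: "gc_chamber l m (hex_refl i t) \<and> covers u (hex_refl i t) (hex_refl i s)"
    show ?thesis unfolding es gc_r_eq E_eq[OF a[THEN conjunct2]] using a by simp
  next
    assume a: "\<not> gc_chamber l m (hex_refl i t) \<and> covers (hex_refl (selk i t) u) t (hex_refl i s)"
    have c: "hex_chamber u" "gc_chamber l m t" using assms(1) unfolding covers_def by auto
    have sk: "selk i t < 3" using selk_wall[OF c(2) _ assms(2)] a by blast
    show ?thesis unfolding es gc_r_eq E_eq[OF a[THEN conjunct2]] using a D_refl[OF c(1) sk] by simp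
  qed
qed

definition t0 :: hch where "t0 = (if m = 0 then C0 else mkch (0,0) ((0,1),(1,0)))"

lemma t0_gc: "gc_chamber l m t0"
proof -
  have l0: "int l \<ge> 1" using l1 by simp
  show ?thesis
  proof (cases "m = 0")
    case True
    show ?thesis unfolding gc_chamber_iff[OF lm l1] t0_def using True C0_hex l0
      by (simp add: all3 sig_def C0_def mkch_def padd_def centroid6_def)
  next
    case False
    have h: "hex_chamber (mkch (0,0) ((0,1),(1,0)))" by (simp add: hexch_mkch' T12_def face_centre_def)
    show ?thesis unfolding gc_chamber_iff[OF lm l1] t0_def using False h l0
      by (simp add: all3 sig_def mkch_def padd_def centroid6_def)
  qed
qed

lemma gcA_C0: "gcA l m C0 t = t"
proof -
  have "KK m ((1,0),(0,1)) = Id2" by (simp add: KK_def Kd_def Ktab_def Id2_def)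
  moreover have "GG l m (0,0) = (0,0)" by (simp add: GG_def Nm_def)
  moreover have "aff Id2 (0,0) = id" by (rule ext) (simp add: aff_def Id2_def lin_def padd_def)
  ultimately show ?thesis unfolding C0_def gcA_mkch by (cases t) (simp add: cmap_def)
qed

lemma covers_t0: "covers C0 t0 t0"
  unfolding covers_def using C0_hex t0_gc gcA_C0 by simp

lemma covers_ex: assumes "hex_chamber s" shows "\<exists>u t. covers u t s"
proof (rule hinduct[where P="\<lambda>s. \<exists>u t. covers u t s", OF _ _ _ assms])
  show "hex_chamber t0" using t0_gc gc_chamber_def by blast
  show "\<exists>u t. covers u t t0" using covers_t0 by blast
next
  fix s and i :: nat assume a: "hex_chamber s" "i < 3" "\<exists>u t. covers u t s"
  then obtain u t where c: "covers u t s" by blast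
  from covers_step[OF c a(2)] show "\<exists>u t. covers u t (hex_refl i s)" by blast
qed

lemma covers_hex: "covers u t s \<Longrightarrow> hex_chamber s"
  unfolding covers_def using hexch_gcA gc_chamber_def by blast

lemma D_surj: assumes "y \<in> F" shows "\<exists>u. hex_chamber u \<and> D u = y"
proof -
  have "(D C0, y) \<in> (flag_step F r {0,1,2})\<^sup>*" by (rule conn[OF D_in[OF C0_hex] assms])
  thus ?thesis
  proof (induction rule: rtrancl_induct)
    case base then show ?case using C0_hex by blast
  next
    case (step y z)
    then obtain u where u: "hex_chamber u" "D u = y" by blast
    from step(2) obtain i where i: "i \<in> {0,1,2}" "z = r i y" unfolding flag_step_def by blast
    have i3: "i < 3" using i(1) by auto
    have "D (hex_refl i u) = z" using D_refl[OF u(1) i3] u(2) i(2) by simp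
    thus ?case using hexch_refl[OF u(1) i3] by blast
  qed
qed

lemma E_in: "hex_chamber s \<Longrightarrow> E s \<in> gc_flags l m F"
proof -
  assume "hex_chamber s"
  then obtain u t where c: "covers u t s" using covers_ex by blast
  show ?thesis unfolding E_eq[OF c] gc_flags_def using c D_in unfolding covers_def by auto
qed

lemma E_surj: assumes "X \<in> gc_flags l m F" shows "\<exists>s. hex_chamber s \<and> E s = X"
proof -
  obtain c t where X: "X = (c, t)" "c \<in> F" "gc_chamber l m t" using assms unfolding gc_flags_def by auto
  obtain u where u: "hex_chamber u" "D u = c" using D_surj[OF X(2)] by blast
  have cv: "covers u t (gcA l m u t)" unfolding covers_def using u X by simp
  show ?thesis using E_eq[OF cv] covers_hex[OF cv] u X by blast
qed

lemma covers_tr: assumes "covers u t s" "face_centre a" shows "covers (cmap (tr a) u) t (cmap (tr (GG l m a)) s)"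
  using assms hexch_tr gcA_tr unfolding covers_def by auto

lemma tr_comm: "cmap (tr a) (cmap (tr b) s) = cmap (tr b) (cmap (tr a) s)"
  by (simp add: tr_tr padd_def add.commute)

lemma E_wd: assumes "hex_chamber s1" "hex_chamber s2" "E s1 = E s2" "face_centre b"
  shows "E (cmap (tr b) s1) = E (cmap (tr b) s2)"
proof -
  obtain u1 t1 where c1: "covers u1 t1 s1" using covers_ex[OF assms(1)] by blast
  obtain u2 t2 where c2: "covers u2 t2 s2" using covers_ex[OF assms(2)] by blast
  have eq: "D u1 = D u2" "t1 = t2" using assms(3) E_eq[OF c1] E_eq[OF c2] by auto
  have hu: "hex_chamber u1" "hex_chamber u2" using c1 c2 unfolding covers_def by auto
  obtain g where g: "face_centre g" "u2 = cmap (tr g) u1" "\<forall>t. hex_chamber t \<longrightarrow> D (cmap (tr g) t) = D t"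
    using deck[OF hu eq(1)] by blast
  have s2: "s2 = cmap (tr (GG l m g)) s1"
  proof -
    have "covers u2 t1 (cmap (tr (GG l m g)) s1)" using covers_tr[OF c1 g(1)] g(2) by simp
    thus ?thesis using c2 eq(2) unfolding covers_def by auto
  qed
  have hb: "hex_chamber (cmap (tr b) s1)" by (rule hexch_tr[OF assms(4,1)])
  obtain u' t' where c': "covers u' t' (cmap (tr b) s1)" using covers_ex[OF hb] by blast
  have c'': "covers (cmap (tr g) u') t' (cmap (tr b) s2)"
    using covers_tr[OF c' g(1)] unfolding s2 tr_comm[of b] by simp
  have hu': "hex_chamber u'" using c' unfolding covers_def by simp
  have "D (cmap (tr g) u') = D u'" using g(3) hu' by blast
  thus ?thesis unfolding E_eq[OF c'] E_eq[OF c''] by simp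
qed

definition psib :: "pt \<Rightarrow> 'a \<times> hch \<Rightarrow> 'a \<times> hch" where
  "psib b X = (if X \<in> gc_flags l m F then E (cmap (tr b) (SOME s. hex_chamber s \<and> E s = X)) else X)"

lemma psib_E: assumes "hex_chamber s" "face_centre b" shows "psib b (E s) = E (cmap (tr b) s)"
proof -
  have ex: "\<exists>s'. hex_chamber s' \<and> E s' = E s" using assms(1) by blast
  define s' where "s' = (SOME s'. hex_chamber s' \<and> E s' = E s)"
  have s': "hex_chamber s'" "E s' = E s" using someI_ex[OF ex] unfolding s'_def by auto
  have "psib b (E s) = E (cmap (tr b) s')" unfolding psib_def s'_def using E_in[OF assms(1)] by simp
  also have "\<dots> = E (cmap (tr b) s)" by (rule E_wd[OF s'(1) assms(1) s'(2) assms(2)])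
  finally show ?thesis .
qed

lemma fc_neg: "face_centre b \<Longrightarrow> face_centre (- fst b, - snd b)"
  unfolding fc_ex by (metis fst_conv snd_conv add.inverse_distrib_swap mult_minus_right minus_add_distrib add.commute)

lemma tr_neg: "cmap (tr (- fst b, - snd b)) (cmap (tr b) s) = s"
  by (cases s) (simp add: cmap_def tr_def padd_def)

lemma psib_aut: assumes "face_centre b" shows "psib b \<in> map_aut (gc_flags l m F) (gc_r l m r)"
proof -
  let ?G = "gc_flags l m F"
  let ?nb = "(- fst b, - snd b)"
  have fnb: "face_centre ?nb" by (rule fc_neg[OF assms])
  have img: "psib c X \<in> ?G" if X: "X \<in> ?G" and cc: "face_centre c" for X c
  proof -
    obtain s where s: "hex_chamber s" "E s = X" using E_surj[OF X] by blast
    show ?thesis using psib_E[OF s(1) cc] s E_in[OF hexch_tr[OF cc s(1)]] by simp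
  qed
  have inv: "psib ?nb (psib b X) = X" if X: "X \<in> ?G" for X
  proof -
    obtain s where s: "hex_chamber s" "E s = X" using E_surj[OF X] by blast
    show ?thesis using psib_E[OF s(1) assms] psib_E[OF hexch_tr[OF assms s(1)] fnb] s tr_neg by simp
  qed
  have inv2: "psib b (psib ?nb X) = X" if X: "X \<in> ?G" for X
  proof -
    obtain s where s: "hex_chamber s" "E s = X" using E_surj[OF X] by blast
    have "cmap (tr b) (cmap (tr ?nb) s) = s" using tr_neg[of ?nb s] by simp
    thus ?thesis using psib_E[OF s(1) fnb] psib_E[OF hexch_tr[OF fnb s(1)] assms] s by simp
  qed
  have i1: "\<forall>X\<in>?G. psib ?nb (psib b X) = X" using inv by blast
  have i2: "\<forall>X\<in>?G. psib b (psib ?nb X) = X" using inv2 by blast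
  have i3: "psib b ` ?G \<subseteq> ?G" using img[OF _ assms] by blast
  have i4: "psib ?nb ` ?G \<subseteq> ?G" using img[OF _ fnb] by blast
  have bij: "bij_betw (psib b) ?G ?G" by (rule bij_betw_byWitness[OF i1 i2 i3 i4])
  have comm: "psib b (gc_r l m r i X) = gc_r l m r i (psib b X)" if X: "X \<in> ?G" and i3: "i < 3" for X i
  proof -
    obtain s where s: "hex_chamber s" "E s = X" using E_surj[OF X] by blast
    obtain u t where c: "covers u t s" using covers_ex[OF s(1)] by blast
    have hb: "hex_chamber (cmap (tr b) s)" by (rule hexch_tr[OF assms s(1)])
    obtain u' t' where c': "covers u' t' (cmap (tr b) s)" using covers_ex[OF hb] by blast
    have "psib b (gc_r l m r i X) = psib b (E (hex_refl i s))" using E_refl[OF c i3] s by simp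
    also have "\<dots> = E (cmap (tr b) (hex_refl i s))" by (rule psib_E[OF hexch_refl[OF s(1) i3] assms])
    also have "\<dots> = E (hex_refl i (cmap (tr b) s))" using cmap_refl_tr[OF i3] by simp
    also have "\<dots> = gc_r l m r i (E (cmap (tr b) s))" by (rule E_refl[OF c' i3])
    also have "\<dots> = gc_r l m r i (psib b X)" using psib_E[OF s(1) assms] s by simp
    finally show ?thesis .
  qed
  have out: "psib b X = X" if "X \<notin> ?G" for X using that unfolding psib_def by simp
  show ?thesis unfolding map_aut_def using bij comm out by blast
qed


lemma E_t0: "E t0 = (D C0, t0)" by (rule E_eq[OF covers_t0])

lemma t0_hex: "hex_chamber t0" using t0_gc gc_chamber_def by blast

lemma fc11: "face_centre (1,1)" by (simp add: face_centre_def)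

lemma psi_moves: assumes "(l, m) \<noteq> (1, 0)" shows "snd (psib (1,1) (D C0, t0)) \<noteq> t0"
proof
  assume a: "snd (psib (1,1) (D C0, t0)) = t0"
  have ht: "hex_chamber (cmap (tr (1,1)) t0)" by (rule hexch_tr[OF fc11 t0_hex])
  obtain u' t' where c: "covers u' t' (cmap (tr (1,1)) t0)" using covers_ex[OF ht] by blast
  have "psib (1,1) (D C0, t0) = (D u', t')" using psib_E[OF t0_hex fc11] E_t0 E_eq[OF c] by simp
  hence tt: "t' = t0" using a by simp
  have hu: "hex_chamber u'" using c unfolding covers_def by simp
  from hu obtain f d where u: "u' = mkch f d" "face_centre f" "d \<in> set T12" by (rule hexch_E)
  have "gcA l m u' t0 = cmap (tr (1,1)) t0" using c tt unfolding covers_def by simp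
  hence "snd (snd (gcA l m u' t0)) = snd (snd (cmap (tr (1,1)) t0))" by simp
  moreover have "snd (snd t0) = (0,0)" by (simp add: t0_def C0_def mkch_def)
  moreover have "snd (snd (cmap h t)) = h (snd (snd t))" for h t by (cases t) (simp add: cmap_def)
  ultimately have "aff (KK m d) (GG l m f) (0,0) = tr (1,1) (0,0)" unfolding u(1) gcA_mkch by simp
  hence g: "GG l m f = (1,1)" by (simp add: aff_def lin_def padd_def tr_def)
  show False
  proof (cases "m = 0")
    case True
    have "int l * fst f = 1" using g True by (simp add: GG_def)
    hence "int l = 1" by (simp add: zmult_eq_1_iff)
    thus False using assms True by simp
  next
    case False
    have e: "int l * (fst f - snd f) = 1" "int l * (fst f + 2 * snd f) = 1" using g False by (simp_all add: GG_def Nm_def)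
    hence "fst f - snd f = 1" by (simp add: zmult_eq_1_iff)
    thus False using u(2) by (simp add: face_centre_def)
  qed
qed

definition lift :: "('a \<Rightarrow> 'a) \<Rightarrow> 'a \<times> hch \<Rightarrow> 'a \<times> hch" where
  "lift \<phi> X = (if X \<in> gc_flags l m F then (\<phi> (fst X), snd X) else X)"

lemma lift_aut: assumes "\<phi> \<in> map_aut F r" shows "lift \<phi> \<in> map_aut (gc_flags l m F) (gc_r l m r)"
proof -
  let ?G = "gc_flags l m F"
  have bj: "bij_betw \<phi> F F" and cm: "\<And>x i. x \<in> F \<Longrightarrow> i < 3 \<Longrightarrow> \<phi> (r i x) = r i (\<phi> x)"
    using assms unfolding map_aut_def by auto
  have bij: "bij_betw (lift \<phi>) ?G ?G"
  proof -
    have b1: "bij_betw (map_prod \<phi> id) (F \<times> {t. gc_chamber l m t}) (F \<times> {t. gc_chamber l m t})"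
      by (rule bij_betw_map_prod[OF bj bij_betw_id])
    have "\<And>X. X \<in> ?G \<Longrightarrow> lift \<phi> X = map_prod \<phi> id X" unfolding lift_def by (auto simp: map_prod_def split: prod.splits)
    hence "bij_betw (lift \<phi>) ?G ?G = bij_betw (map_prod \<phi> id) ?G ?G" by (rule bij_betw_cong)
    thus ?thesis using b1 unfolding gc_flags_def by simp
  qed
  have comm: "lift \<phi> (gc_r l m r i X) = gc_r l m r i (lift \<phi> X)" if X: "X \<in> ?G" and i: "i < 3" for X i
  proof -
    obtain c t where Xe: "X = (c, t)" "c \<in> F" "gc_chamber l m t" using X unfolding gc_flags_def by auto
    show ?thesis
    proof (cases "gc_chamber l m (hex_refl i t)")
      case True
      have "(c, hex_refl i t) \<in> ?G" using Xe True unfolding gc_flags_def by simp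
      moreover have "(\<phi> c, hex_refl i t) = gc_r l m r i (\<phi> c, t)" using True by (simp add: gc_r_eq)
      ultimately show ?thesis unfolding Xe(1) lift_def using X Xe True by (simp add: gc_r_eq)
    next
      case False
      have sk: "selk i t < 3" using selk_wall[OF Xe(3) False i] by simp
      have "(r (selk i t) c, t) \<in> ?G" using Xe rin[OF sk] unfolding gc_flags_def by simp
      thus ?thesis unfolding Xe(1) lift_def using X Xe False cm[OF Xe(2) sk] by (simp add: gc_r_eq)
    qed
  qed
  have out: "lift \<phi> X = X" if "X \<notin> ?G" for X using that unfolding lift_def by simp
  show ?thesis unfolding map_aut_def using bij comm out by blast
qed

lemma lift_inj: "inj_on lift (map_aut F r)"
proof (rule inj_onI)
  fix \<phi> \<psi> assume a: "\<phi> \<in> map_aut F r" "\<psi> \<in> map_aut F r" "lift \<phi> = lift \<psi>"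
  show "\<phi> = \<psi>"
  proof (rule ext)
    fix x show "\<phi> x = \<psi> x"
    proof (cases "x \<in> F")
      case True
      have "(x, t0) \<in> gc_flags l m F" using True t0_gc unfolding gc_flags_def by simp
      hence "lift \<phi> (x, t0) = (\<phi> x, t0)" "lift \<psi> (x, t0) = (\<psi> x, t0)" unfolding lift_def by simp_all
      thus ?thesis using a(3) by simp
    next
      case False thus ?thesis using a(1,2) unfolding map_aut_def by simp
    qed
  qed
qed

lemma finite_auts: assumes "finite A" shows "finite {f. (\<forall>x\<in>A. f x \<in> A) \<and> (\<forall>x. x \<notin> A \<longrightarrow> f x = x)}" (is "finite ?S")
proof -
  let ?F = "\<lambda>f. {(a,b). a \<in> A \<and> b = f a}"
  have "?F ` ?S \<subseteq> Pow (A \<times> A)" by auto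
  hence 1: "finite (?F ` ?S)" using finite_subset assms by blast
  have 2: "inj_on ?F ?S"
  proof (rule inj_onI)
    fix f g assume fg: "f \<in> ?S" "g \<in> ?S" "?F f = ?F g"
    show "f = g"
    proof (rule ext)
      fix x show "f x = g x"
      proof (cases "x \<in> A")
        case True
        have "(x, f x) \<in> ?F g" using fg(3) True by blast
        thus ?thesis by simp
      next
        case False thus ?thesis using fg(1,2) by simp
      qed
    qed
  qed
  show ?thesis by (rule finite_imageD[OF 1 2])
qed

lemma map_aut_finite: "finite G \<Longrightarrow> finite (map_aut G rr)"
proof -
  assume G: "finite G"
  have "map_aut G rr \<subseteq> {f. (\<forall>x\<in>G. f x \<in> G) \<and> (\<forall>x. x \<notin> G \<longrightarrow> f x = x)}"
    unfolding map_aut_def bij_betw_def by auto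
  thus ?thesis using finite_auts[OF G] finite_subset by blast
qed

lemma gc_flags_finite: "finite (gc_flags l m F)"
  unfolding gc_flags_def using fin Tri_finite[OF lm l1] by simp

theorem card_less: assumes "(l, m) \<noteq> (1, 0)"
  shows "card (map_aut F r) < card (map_aut (gc_flags l m F) (gc_r l m r))"
proof -
  let ?A = "map_aut F r" and ?B = "map_aut (gc_flags l m F) (gc_r l m r)"
  let ?psi = "psib (1,1)"
  have finA: "finite ?A" by (rule map_aut_finite[OF fin])
  have finB: "finite ?B" by (rule map_aut_finite[OF gc_flags_finite])
  have sub: "insert ?psi (lift ` ?A) \<subseteq> ?B" using psib_aut[OF fc11] lift_aut by blast
  have X0: "(D C0, t0) \<in> gc_flags l m F" using D_in[OF C0_hex] t0_gc unfolding gc_flags_def by simp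
  have notin: "?psi \<notin> lift ` ?A"
  proof
    assume "?psi \<in> lift ` ?A"
    then obtain \<phi> where "?psi = lift \<phi>" by blast
    hence "snd (?psi (D C0, t0)) = t0" using X0 unfolding lift_def by simp
    thus False using psi_moves[OF assms] by simp
  qed
  have "card ?A = card (lift ` ?A)" using card_image[OF lift_inj] by simp
  also have "\<dots> < card (insert ?psi (lift ` ?A))" using notin finA by simp
  also have "\<dots> \<le> card ?B" by (rule card_mono[OF finB sub])
  finally show ?thesis .
qed

end


locale invol =
  fixes F :: "'a set" and r :: "nat \<Rightarrow> 'a \<Rightarrow> 'a" and s :: "'a \<Rightarrow> bool"
  assumes rin: "\<And>i x. i < 3 \<Longrightarrow> x \<in> F \<Longrightarrow> r i x \<in> F"
  and rinv: "\<And>i x. i < 3 \<Longrightarrow> x \<in> F \<Longrightarrow> r i (r i x) = x"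
  and sflip: "\<And>i x. i < 3 \<Longrightarrow> x \<in> F \<Longrightarrow> s (r i x) \<noteq> s x"
begin

lemma rne: assumes "i < 3" "x \<in> F" shows "r i x \<noteq> x"
proof
  assume "r i x = x" hence "s (r i x) = s x" by simp
  thus False using sflip[OF assms] by simp
qed

lemma orb_self: "x \<in> orbit_of F r I x" unfolding orbit_of_def by simp

lemma step_in: assumes "(y, z) \<in> flag_step F r I" "I \<subseteq> {0,1,2}" shows "y \<in> F \<and> z \<in> F \<and> (\<exists>i\<in>I. z = r i y)"
proof -
  obtain i where i: "y \<in> F" "i \<in> I" "z = r i y" using assms(1) unfolding flag_step_def by blast
  have "i < 3" using i(2) assms(2) by auto
  thus ?thesis using i rin by blast
qed

lemma orb_induct: assumes "I \<subseteq> {0,1,2}" "y \<in> orbit_of F r I x" "x \<in> S" "\<And>y i. y \<in> S \<Longrightarrow> y \<in> F \<Longrightarrow> i \<in> I \<Longrightarrow> r i y \<in> S"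
  shows "y \<in> S"
proof -
  have "(x, y) \<in> (flag_step F r I)\<^sup>*" using assms(2) unfolding orbit_of_def by simp
  thus ?thesis
  proof (induction rule: rtrancl_induct)
    case base then show ?case using assms(3) .
  next
    case (step y z)
    then obtain i where "i \<in> I" "z = r i y" "y \<in> F" using step_in[OF step(2) assms(1)] by blast
    then show ?case using assms(4) step.IH by blast
  qed
qed

lemma orb_sub: assumes "I \<subseteq> {0,1,2}" "x \<in> F" shows "orbit_of F r I x \<subseteq> F"
proof
  fix y assume y: "y \<in> orbit_of F r I x"
  have "\<And>y i. y \<in> F \<Longrightarrow> i \<in> I \<Longrightarrow> r i y \<in> F"
  proof -
    fix y i assume a: "y \<in> F" "i \<in> I"
    have "i < 3" using a(2) assms(1) by auto
    thus "r i y \<in> F" using rin a(1) by blast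
  qed
  thus "y \<in> F" using orb_induct[OF assms(1) y assms(2)] by blast
qed

lemma orb_closed: assumes "I \<subseteq> {0,1,2}" "x \<in> F" "y \<in> orbit_of F r I x" "i \<in> I" shows "r i y \<in> orbit_of F r I x"
proof -
  have "y \<in> F" using orb_sub[OF assms(1,2)] assms(3) by blast
  hence "(y, r i y) \<in> flag_step F r I" unfolding flag_step_def using assms(4) by blast
  thus ?thesis using assms(3) unfolding orbit_of_def by (auto intro: rtrancl_into_rtrancl)
qed

lemma step_sym: assumes "I \<subseteq> {0,1,2}" "(y, z) \<in> flag_step F r I" shows "(z, y) \<in> flag_step F r I"
proof -
  obtain i where i: "i \<in> I" "z = r i y" "y \<in> F" "z \<in> F" using step_in[OF assms(2,1)] by blast
  have "i < 3" using i(1) assms(1) by auto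
  hence "y = r i z" using i rinv by simp
  thus ?thesis unfolding flag_step_def using i by blast
qed

lemma orb_sym: assumes "I \<subseteq> {0,1,2}" "y \<in> orbit_of F r I x" shows "x \<in> orbit_of F r I y"
proof -
  have "(x, y) \<in> (flag_step F r I)\<^sup>*" using assms(2) unfolding orbit_of_def by simp
  hence "(y, x) \<in> (flag_step F r I)\<^sup>*"
  proof (induction rule: rtrancl_induct)
    case base then show ?case by simp
  next
    case (step y z) then show ?case using step_sym[OF assms(1)] by (meson converse_rtrancl_into_rtrancl)
  qed
  thus ?thesis unfolding orbit_of_def by simp
qed

lemma orb_eq: assumes "I \<subseteq> {0,1,2}" "y \<in> orbit_of F r I x" shows "orbit_of F r I y = orbit_of F r I x"
proof -
  have xy: "(x, y) \<in> (flag_step F r I)\<^sup>*" "(y, x) \<in> (flag_step F r I)\<^sup>*"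
    using assms(2) orb_sym[OF assms] unfolding orbit_of_def by auto
  show ?thesis unfolding orbit_of_def using xy by (auto intro: rtrancl_trans)
qed

lemma orb_disj: assumes "I \<subseteq> {0,1,2}" "orbit_of F r I x \<noteq> orbit_of F r I y" shows "orbit_of F r I x \<inter> orbit_of F r I y = {}"
  using orb_eq[OF assms(1)] assms(2) by blast

lemma orb_union: assumes "I \<subseteq> {0,1,2}" shows "\<Union> (orbit_of F r I ` F) = F"
  using orb_sub[OF assms] orb_self by blast

lemma card_orbits: assumes "finite F" "I \<subseteq> {0,1,2}"
  shows "card F = (\<Sum>Ob\<in>orbit_of F r I ` F. card Ob)"
proof -
  have fin: "\<forall>Ob\<in>orbit_of F r I ` F. finite Ob" using orb_sub[OF assms(2)] assms(1) finite_subset by blast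
  have dj: "\<forall>A\<in>orbit_of F r I ` F. \<forall>B\<in>orbit_of F r I ` F. A \<noteq> B \<longrightarrow> A \<inter> B = {}" using orb_disj[OF assms(2)] by blast
  have "card (\<Union> (orbit_of F r I ` F)) = (\<Sum>Ob\<in>orbit_of F r I ` F. card Ob)"
    by (rule card_Union_disjoint) (use fin dj in \<open>auto simp: pairwise_def disjnt_def\<close>)
  thus ?thesis using orb_union[OF assms(2)] by simp
qed

lemma card_even: assumes "finite Ob" "Ob \<subseteq> F" "k < 3" "\<And>y. y \<in> Ob \<Longrightarrow> r k y \<in> Ob"
  shows "card Ob = 2 * card {y \<in> Ob. s y}"
proof -
  let ?A = "{y \<in> Ob. s y}" and ?B = "{y \<in> Ob. \<not> s y}"
  have "bij_betw (r k) ?A ?B"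
  proof (rule bij_betw_byWitness[where f'="r k"])
    show "\<forall>a\<in>?A. r k (r k a) = a" using assms(2,3) rinv by blast
    show "\<forall>a\<in>?B. r k (r k a) = a" using assms(2,3) rinv by blast
    show "r k ` ?A \<subseteq> ?B" using assms(2-4) sflip by blast
    show "r k ` ?B \<subseteq> ?A" using assms(2-4) sflip by blast
  qed
  hence "card ?A = card ?B" by (rule bij_betw_same_card)
  moreover have "card Ob = card ?A + card ?B"
  proof -
    have "Ob = ?A \<union> ?B" by blast
    moreover have "?A \<inter> ?B = {}" by blast
    ultimately show ?thesis using assms(1) card_Un_disjoint[of ?A ?B] by (metis (no_types, lifting) finite_Un)
  qed
  ultimately show ?thesis by simp
qed

end


context invol begin

lemma card_even2: assumes "finite Ob" "Ob \<subseteq> F" "k < 3" "\<And>y. y \<in> Ob \<Longrightarrow> r k y \<in> Ob"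
  shows "card Ob = 2 * card {y \<in> Ob. s y = c}"
proof -
  let ?A = "{y \<in> Ob. s y}" and ?B = "{y \<in> Ob. \<not> s y}"
  have "bij_betw (r k) ?A ?B"
  proof (rule bij_betw_byWitness[where f'="r k"])
    show "\<forall>a\<in>?A. r k (r k a) = a" using assms(2,3) rinv by blast
    show "\<forall>a\<in>?B. r k (r k a) = a" using assms(2,3) rinv by blast
    show "r k ` ?A \<subseteq> ?B" using assms(2-4) sflip by blast
    show "r k ` ?B \<subseteq> ?A" using assms(2-4) sflip by blast
  qed
  hence ab: "card ?A = card ?B" by (rule bij_betw_same_card)
  have "card Ob = 2 * card ?A" by (rule card_even[OF assms])
  moreover have "{y \<in> Ob. s y = c} = (if c then ?A else ?B)" by auto
  ultimately show ?thesis using ab by simp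
qed

lemma cyc: assumes fin: "finite F" and ij: "i < 3" "j < 3" "i \<noteq> j" and x: "x \<in> F"
  and card: "card (orbit_of F r {i, j} x) = 2 * n"
  shows "((r j \<circ> r i) ^^ n) x = x \<and> (\<forall>k. 0 < k \<and> k < n \<longrightarrow> ((r j \<circ> r i) ^^ k) x \<noteq> x)"
proof -
  define rho where "rho = r j \<circ> r i"
  define rhoi where "rhoi = r i \<circ> r j"
  let ?O = "orbit_of F r {i, j} x"
  have I: "{i, j} \<subseteq> {0,1,2}" using ij by auto
  have rhoF: "\<And>y. y \<in> F \<Longrightarrow> rho y \<in> F" unfolding rho_def using rin ij by simp
  have powF: "\<And>k y. y \<in> F \<Longrightarrow> (rho ^^ k) y \<in> F" using funpow_in[of F rho] rhoF by blast
  have inv1: "\<And>y. y \<in> F \<Longrightarrow> rhoi (rho y) = y" unfolding rho_def rhoi_def using rin rinv ij by simp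
  have invk: "\<And>k y. y \<in> F \<Longrightarrow> (rhoi ^^ k) ((rho ^^ k) y) = y"
  proof -
    fix k show "\<And>y. y \<in> F \<Longrightarrow> (rhoi ^^ k) ((rho ^^ k) y) = y"
    proof (induction k)
      case 0 then show ?case by simp
    next
      case (Suc k)
      have "(rho ^^ Suc k) y = (rho ^^ k) (rho y)" by (simp add: funpow_Suc_right del: funpow.simps)
      hence "(rhoi ^^ Suc k) ((rho ^^ Suc k) y) = rhoi ((rhoi ^^ k) ((rho ^^ k) (rho y)))" by simp
      also have "\<dots> = rhoi (rho y)" using Suc.IH[OF rhoF[OF Suc.prems]] by simp
      also have "\<dots> = y" using inv1[OF Suc.prems] .
      finally show ?case .
    qed
  qed
  have diff: "(rho ^^ (b - a)) x = x" if "a < b" "(rho ^^ a) x = (rho ^^ b) x" for a b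
  proof -
    have "(rho ^^ b) x = (rho ^^ a) ((rho ^^ (b - a)) x)" using that(1) by (metis funpow_add le_add_diff_inverse less_imp_le comp_apply)
    hence "(rho ^^ a) ((rho ^^ (b - a)) x) = (rho ^^ a) x" using that(2) by simp
    hence "(rhoi ^^ a) ((rho ^^ a) ((rho ^^ (b - a)) x)) = (rhoi ^^ a) ((rho ^^ a) x)" by simp
    thus ?thesis using invk[OF x] invk[OF powF[OF x]] by simp
  qed
  have exP: "\<exists>p. 0 < p \<and> (rho ^^ p) x = x"
  proof -
    have "\<not> inj_on (\<lambda>k. (rho ^^ k) x) {..card F}"
    proof
      assume "inj_on (\<lambda>k. (rho ^^ k) x) {..card F}"
      moreover have "(\<lambda>k. (rho ^^ k) x) ` {..card F} \<subseteq> F" using powF[OF x] by blast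
      ultimately have "card {..card F} \<le> card F" using card_inj_on_le fin by blast
      thus False by simp
    qed
    then obtain a b where ab: "a \<noteq> b" "(rho ^^ a) x = (rho ^^ b) x" unfolding inj_on_def by blast
    show ?thesis
    proof (cases "a < b")
      case True thus ?thesis using diff[OF True ab(2)] by (intro exI[of _ "b - a"]) simp
    next
      case False hence "b < a" using ab(1) by simp
      thus ?thesis using diff[of b a] ab(2) by (intro exI[of _ "a - b"]) simp
    qed
  qed
  define p where "p = (LEAST p. 0 < p \<and> (rho ^^ p) x = x)"
  have p: "0 < p" "(rho ^^ p) x = x" using LeastI_ex[OF exP] unfolding p_def by auto
  have pmin: "\<And>k. 0 < k \<Longrightarrow> k < p \<Longrightarrow> (rho ^^ k) x \<noteq> x" unfolding p_def using not_less_Least by blast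
  define R where "R = (\<lambda>k. (rho ^^ k) x) ` {..<p}"
  have cardR: "card R = p"
  proof -
    have "inj_on (\<lambda>k. (rho ^^ k) x) {..<p}"
    proof (rule inj_onI)
      fix a b assume a: "a \<in> {..<p}" "b \<in> {..<p}" "(rho ^^ a) x = (rho ^^ b) x"
      show "a = b"
      proof (rule ccontr)
        assume "a \<noteq> b"
        hence "a < b \<or> b < a" by auto
        thus False
        proof
          assume ab: "a < b"
          have "b - a < p" using a(2) by auto
          thus False using diff[OF ab a(3)] pmin[of "b - a"] ab by auto
        next
          assume ab: "b < a"
          have "a - b < p" using a(1) by auto
          thus False using diff[OF ab a(3)[symmetric]] pmin[of "a - b"] ab by auto
        qed
      qed
    qed
    thus ?thesis unfolding R_def using card_image by fastforce
  qed
  have RF: "R \<subseteq> F" unfolding R_def using powF[OF x] by blast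
  have Rrho: "rho y \<in> R" if yR: "y \<in> R" for y
  proof -
    obtain k where k: "k < p" "y = (rho ^^ k) x" using yR unfolding R_def by blast
    have e: "rho y = (rho ^^ Suc k) x" using k by simp
    show ?thesis
    proof (cases "Suc k < p")
      case True thus ?thesis unfolding R_def e by blast
    next
      case False hence "Suc k = p" using k by simp
      hence "rho y = (rho ^^ 0) x" using e p by simp
      thus ?thesis unfolding R_def using p(1) by blast
    qed
  qed
  have Rrhoi: "rhoi y \<in> R" if yR: "y \<in> R" for y
  proof -
    obtain k where k: "k < p" "y = (rho ^^ k) x" using yR unfolding R_def by blast
    show ?thesis
    proof (cases k)
      case 0
      have "(rho ^^ p) x = rho ((rho ^^ (p - 1)) x)" using p(1) by (metis Suc_diff_1 comp_apply funpow.simps(2))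
      hence yy: "y = rho ((rho ^^ (p - 1)) x)" using k 0 p(2) by simp
      have "rhoi y = (rho ^^ (p - 1)) x" unfolding yy by (rule inv1[OF powF[OF x]])
      thus ?thesis unfolding R_def using p(1) by auto
    next
      case (Suc k')
      have "y = rho ((rho ^^ k') x)" using k Suc by simp
      hence "rhoi y = (rho ^^ k') x" using inv1[OF powF[OF x]] by simp
      thus ?thesis unfolding R_def using k Suc by auto
    qed
  qed
  have Osub: "?O \<subseteq> R \<union> r i ` R"
  proof
    fix y assume y: "y \<in> ?O"
    show "y \<in> R \<union> r i ` R"
    proof (rule orb_induct[OF I y])
      show "x \<in> R \<union> r i ` R" unfolding R_def using p(1) by force
    next
      fix y t assume a: "y \<in> R \<union> r i ` R" "y \<in> F" "t \<in> {i, j}"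
      show "r t y \<in> R \<union> r i ` R"
      proof (cases "y \<in> R")
        case True
        show ?thesis
        proof (cases "t = i")
          case True thus ?thesis using \<open>y \<in> R\<close> by blast
        next
          case False hence t: "t = j" using a(3) by simp
          have "r j y = r i (rhoi y)" unfolding rhoi_def using rinv[OF ij(1) rin[OF ij(2) a(2)]] by simp
          thus ?thesis using Rrhoi[OF True] t by blast
        qed
      next
        case False
        then obtain z where z: "z \<in> R" "y = r i z" using a(1) by blast
        have zF: "z \<in> F" using z(1) RF by blast
        show ?thesis
        proof (cases "t = i")
          case True thus ?thesis using z rinv[OF ij(1) zF] by simp
        next
          case False hence "t = j" using a(3) by simp
          thus ?thesis using z Rrho[OF z(1)] unfolding rho_def by simp
        qed
      qed
    qed
  qed
  have RO: "R \<subseteq> ?O"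
  proof -
    have "(rho ^^ k) x \<in> ?O" for k
    proof (induction k)
      case 0 then show ?case using orb_self by simp
    next
      case (Suc k)
      have "r i ((rho ^^ k) x) \<in> ?O" by (rule orb_closed[OF I x Suc]) simp
      hence a: "r j (r i ((rho ^^ k) x)) \<in> ?O" by (rule orb_closed[OF I x]) simp
      have b: "(rho ^^ Suc k) x = rho ((rho ^^ k) x)" by simp
      have rz: "rho z = r j (r i z)" for z by (simp add: rho_def)
      show ?case using a b rz[of "(rho ^^ k) x"] by (simp only:)
    qed
    thus ?thesis unfolding R_def by blast
  qed
  have sR: "s ((rho ^^ k) x) = s x" for k
  proof (induction k)
    case 0 then show ?case by simp
  next
    case (Suc k)
    have yF: "(rho ^^ k) x \<in> F" by (rule powF[OF x])
    have "s (r j (r i ((rho ^^ k) x))) = s ((rho ^^ k) x)"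
      using sflip[OF ij(2) rin[OF ij(1) yF]] sflip[OF ij(1) yF] by blast
    moreover have "(rho ^^ Suc k) x = rho ((rho ^^ k) x)" by simp
    moreover have "rho z = r j (r i z)" for z by (simp add: rho_def)
    ultimately show ?case using Suc by (metis)
  qed
  have posO: "{y \<in> ?O. s y = s x} = R"
  proof
    show "{y \<in> ?O. s y = s x} \<subseteq> R"
    proof
      fix y assume y: "y \<in> {y \<in> ?O. s y = s x}"
      show "y \<in> R"
      proof (rule ccontr)
        assume "y \<notin> R"
        then obtain z where z: "z \<in> R" "y = r i z" using y Osub by blast
        have "s y \<noteq> s z" using z sflip[OF ij(1)] RF by blast
        moreover have "s z = s x" using z(1) sR unfolding R_def by blast
        ultimately show False using y by simp
      qed
    qed
  next
    show "R \<subseteq> {y \<in> ?O. s y = s x}" using RO sR unfolding R_def by blast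
  qed
  have finO: "finite ?O" using orb_sub[OF I x] fin finite_subset by blast
  have "card ?O = 2 * card {y \<in> ?O. s y = s x}"
    by (rule card_even2[OF finO orb_sub[OF I x] ij(1)]) (rule orb_closed[OF I x], simp_all)
  hence "p = n" using card posO cardR by simp
  thus ?thesis using p pmin unfolding rho_def by blast
qed

end


lemma polyhedral_hexmap:
  fixes F :: "'a set" and r :: "nat \<Rightarrow> 'a \<Rightarrow> 'a"
  assumes P: "polyhedral_map F r" and G: "map_genus F r 1" and S6: "\<forall>f\<in>map_faces F r. face_size f = 6"
  shows "hexmap F r"
proof -
  have fm: "flag_map F r" and ori: "orientable_map F r" and tc: "three_connected F r"
    using P unfolding polyhedral_map_def by auto
  have fin: "finite F" and ne: "F \<noteq> {}" and inv: "\<forall>i<3. \<forall>x\<in>F. r i x \<in> F \<and> r i (r i x) = x \<and> r i x \<noteq> x"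
    and c02: "\<forall>x\<in>F. r 0 (r 2 x) = r 2 (r 0 x) \<and> r 0 (r 2 x) \<noteq> x"
    and conn: "\<forall>x\<in>F. \<forall>y\<in>F. (x, y) \<in> (flag_step F r {0,1,2})\<^sup>*"
    using fm unfolding flag_map_def by auto
  obtain s :: "'a \<Rightarrow> bool" where s: "\<forall>x\<in>F. \<forall>i<3. s (r i x) \<noteq> s x" using ori unfolding orientable_map_def by blast
  interpret invol F r s by unfold_locales (use inv s in auto)
  have I12: "{1,2} \<subseteq> {0::nat,1,2}" and I02: "{0,2} \<subseteq> {0::nat,1,2}" and I01: "{0,1} \<subseteq> {0::nat,1,2}" by auto
  let ?V = "map_vertices F r" and ?E = "map_edges F r" and ?Fc = "map_faces F r"
  have vcl_eq: "vcl F r = orbit_of F r {1,2}" by (rule ext) (simp add: vcl_def)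
  have ecl_eq: "ecl F r = orbit_of F r {0,2}" by (rule ext) (simp add: ecl_def)
  have fcl_eq: "fcl F r = orbit_of F r {0,1}" by (rule ext) (simp add: fcl_def)
  have edge4: "card (ecl F r x) = 4" if x: "x \<in> F" for x
  proof -
    let ?S = "{x, r 0 x, r 2 x, r 2 (r 0 x)}"
    have xF: "r 0 x \<in> F" "r 2 x \<in> F" "r 2 (r 0 x) \<in> F" using rin x by auto
    have sub1: "ecl F r x \<subseteq> ?S"
    proof
      fix y assume y: "y \<in> ecl F r x"
      show "y \<in> ?S"
      proof (rule orb_induct[OF I02 y[unfolded ecl_eq]])
        show "x \<in> ?S" by simp
      next
        fix y i assume a: "y \<in> ?S" "y \<in> F" "i \<in> {0::nat, 2}"
        have r00: "r 0 (r 0 x) = x" and r22: "r 2 (r 2 x) = x" using rinv x by auto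
        have r0a: "r 0 (r 2 (r 0 x)) = r 2 x" using c02 xF(1) rinv[of 0 x] x by (metis zero_less_numeral)
        have r2a: "r 2 (r 2 (r 0 x)) = r 0 x" using rinv xF(1) by simp
        have r02: "r 0 (r 2 x) = r 2 (r 0 x)" using c02 x by blast
        show "r i y \<in> ?S" using a r00 r22 r0a r2a r02 by auto
      qed
    qed
    have sub2: "?S \<subseteq> ecl F r x"
    proof -
      have "x \<in> ecl F r x" using orb_self ecl_eq by simp
      moreover have "r 0 x \<in> ecl F r x" using orb_closed[OF I02 x orb_self] ecl_eq by simp
      moreover have "r 2 x \<in> ecl F r x" using orb_closed[OF I02 x orb_self] ecl_eq by simp
      moreover have "r 2 (r 0 x) \<in> ecl F r x" using orb_closed[OF I02 x orb_closed[OF I02 x orb_self]] ecl_eq by simp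
      ultimately show ?thesis by blast
    qed
    have d: "x \<noteq> r 0 x" "x \<noteq> r 2 x" "x \<noteq> r 2 (r 0 x)" "r 0 x \<noteq> r 2 x" "r 0 x \<noteq> r 2 (r 0 x)" "r 2 x \<noteq> r 2 (r 0 x)"
    proof -
      show "x \<noteq> r 0 x" using rne[of 0 x] x by auto
      show "x \<noteq> r 2 x" using rne[of 2 x] x by auto
      show "x \<noteq> r 2 (r 0 x)" using c02 x by metis
      show "r 0 x \<noteq> r 2 x"
      proof
        assume "r 0 x = r 2 x"
        hence "r 2 (r 0 x) = r 2 (r 2 x)" by simp
        also have "\<dots> = x" using rinv[of 2 x] x by simp
        finally have "r 0 (r 2 x) = x" using c02 x by simp
        thus False using c02 x by blast
      qed
      show "r 0 x \<noteq> r 2 (r 0 x)" using rne[of 2 "r 0 x"] xF by auto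
      show "r 2 x \<noteq> r 2 (r 0 x)"
      proof
        assume "r 2 x = r 2 (r 0 x)"
        hence "r 2 (r 2 x) = r 2 (r 2 (r 0 x))" by simp
        hence "x = r 0 x" using rinv[of 2 x] rinv[of 2 "r 0 x"] xF x by simp
        thus False using rne[of 0 x] x by simp
      qed
    qed
    have "ecl F r x = ?S" using sub1 sub2 by blast
    thus ?thesis using d by simp
  qed
  have face12: "card (fcl F r x) = 12" if x: "x \<in> F" for x
  proof -
    have finO: "finite (fcl F r x)" using orb_sub[OF I01 x] fin finite_subset fcl_eq by metis
    have "card (fcl F r x) = 2 * card {y \<in> fcl F r x. s y = True}"
      by (rule card_even2[where k=0]) (use finO orb_sub[OF I01 x] orb_closed[OF I01 x] fcl_eq in auto)
    moreover have "face_size (fcl F r x) = 6" using S6 x unfolding map_faces_def by blast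
    ultimately show ?thesis unfolding face_size_def by simp
  qed
  have NV: "card F = (\<Sum>v\<in>?V. card v)" using card_orbits[OF fin I12] vcl_eq unfolding map_vertices_def by simp
  have NE: "card F = 4 * card ?E"
  proof -
    have "card F = (\<Sum>e\<in>?E. card e)" using card_orbits[OF fin I02] ecl_eq unfolding map_edges_def by simp
    also have "\<dots> = (\<Sum>e\<in>?E. 4)" by (rule sum.cong) (auto simp: map_edges_def edge4)
    finally show ?thesis by simp
  qed
  have NF: "card F = 12 * card ?Fc"
  proof -
    have "card F = (\<Sum>f\<in>?Fc. card f)" using card_orbits[OF fin I01] fcl_eq unfolding map_faces_def by simp
    also have "\<dots> = (\<Sum>f\<in>?Fc. 12)" by (rule sum.cong) (auto simp: map_faces_def face12)
    finally show ?thesis by simp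
  qed
  have eu: "int (card ?V) - int (card ?E) + int (card ?Fc) = 0"
    using G unfolding map_genus_def euler_char_def by simp
  have NV6: "card F = 6 * card ?V" using NE NF eu by linarith
  have deg: "card (vcl F r x) \<ge> 6" if x: "x \<in> F" for x
  proof (rule ccontr)
    assume small: "\<not> card (vcl F r x) \<ge> 6"
    let ?v = "vcl F r x"
    let ?A = "{y \<in> ?v. s y = s x}"
    have vF: "?v \<subseteq> F" using orb_sub[OF I12 x] vcl_eq by simp
    have finv: "finite ?v" using vF fin finite_subset by blast
    have cv: "card ?v = 2 * card ?A"
      by (rule card_even2[where k=2]) (use finv vF orb_closed[OF I12 x] vcl_eq in auto)
    have cA: "card ?A \<le> 2" using small cv by simp
    define Nb where "Nb = (\<lambda>y. vcl F r (r 0 y)) ` ?A"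
    have finA: "finite ?A" using finv by simp
    have "card Nb \<le> card ?A" unfolding Nb_def by (rule card_image_le[OF finA])
    hence cN: "card Nb \<le> 2" using cA by simp
    have finN: "finite Nb" unfolding Nb_def using finv by simp
    have NbV: "Nb \<subseteq> ?V" unfolding Nb_def map_vertices_def using vF rin by auto
    have claim: "vcl F r (r 0 y) \<in> Nb" if y: "y \<in> ?v" for y
    proof (cases "s y = s x")
      case True thus ?thesis unfolding Nb_def using y by blast
    next
      case False
      have yF: "y \<in> F" using y vF by blast
      have z: "r 2 y \<in> ?v" using orb_closed[OF I12 x] y vcl_eq by simp
      have sz: "s (r 2 y) = s x" using False sflip[of 2 y] yF by auto
      have "r 2 (r 0 y) \<in> vcl F r (r 0 y)" using orb_closed[OF I12 rin[of 0 y]] orb_self yF vcl_eq by simp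
      hence "vcl F r (r 2 (r 0 y)) = vcl F r (r 0 y)" using orb_eq[OF I12] vcl_eq by simp
      moreover have "r 0 (r 2 y) = r 2 (r 0 y)" using c02 yF by blast
      ultimately have e: "vcl F r (r 0 y) = vcl F r (r 0 (r 2 y))" by simp
      have "r 2 y \<in> ?A" using z sz by simp
      thus ?thesis unfolding Nb_def e by (rule imageI)
    qed
    have vV: "?v \<in> ?V" using x unfolding map_vertices_def by blast
    have vN: "?v \<notin> Nb"
    proof
      assume "?v \<in> Nb"
      then obtain y where y: "y \<in> ?v" "?v = vcl F r (r 0 y)" unfolding Nb_def by blast
      have yF: "y \<in> F" using y vF by blast
      have "vcl F r y = ?v" using orb_eq[OF I12] y(1) vcl_eq by simp
      moreover have "\<forall>x\<in>F. vcl F r x \<noteq> vcl F r (r 0 x)" using tc unfolding three_connected_def simple_underlying_graph_def by blast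
      ultimately show False using yF y(2) by simp
    qed
    have conn: "connected_on (?V - Nb) (graph_adj F r)" using tc NbV cN unfolding three_connected_def by blast
    have c4: "card ?V \<ge> 4" using tc unfolding three_connected_def by blast
    have finV: "finite ?V" unfolding map_vertices_def using fin by simp
    obtain w where w: "w \<in> ?V" "w \<notin> Nb" "w \<noteq> ?v"
    proof -
      have "card (insert ?v Nb) \<le> Suc (card Nb)" using card_insert_if[OF finN, of ?v] by simp
      hence c3: "card (insert ?v Nb) \<le> 3" using cN by simp
      have "\<not> ?V \<subseteq> insert ?v Nb"
      proof
        assume "?V \<subseteq> insert ?v Nb"
        hence "card ?V \<le> card (insert ?v Nb)" using finN by (intro card_mono) simp_all
        thus False using c3 c4 by simp
      qed
      thus ?thesis using that by blast
    qed
    have path: "(?v, w) \<in> (graph_adj F r \<inter> (?V - Nb) \<times> (?V - Nb))\<^sup>*"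
      using conn vV vN w unfolding connected_on_def by blast
    obtain z where z: "(?v, z) \<in> graph_adj F r \<inter> (?V - Nb) \<times> (?V - Nb)"
      using path
    proof (cases rule: converse_rtranclE)
      case base thus ?thesis using w(3) by simp
    next
      case (step z) thus ?thesis using that by blast
    qed
    then obtain y where y: "y \<in> F" "?v = vcl F r y" "z = vcl F r (r 0 y)" unfolding graph_adj_def by blast
    have "y \<in> vcl F r y" using orb_self vcl_eq by simp
    hence "y \<in> ?v" using y(2) by simp
    hence "z \<in> Nb" using claim y(3) by simp
    thus False using z by blast
  qed
  have all6: "card (vcl F r x) = 6" if x: "x \<in> F" for x
  proof (rule ccontr)
    assume ne6: "card (vcl F r x) \<noteq> 6"
    have finV: "finite ?V" unfolding map_vertices_def using fin by simp
    have "(\<Sum>v\<in>?V. (6::nat)) < (\<Sum>v\<in>?V. card v)"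
    proof (rule sum_strict_mono_ex1[OF finV])
      show "\<forall>v\<in>?V. 6 \<le> card v" using deg unfolding map_vertices_def by blast
      show "\<exists>v\<in>?V. 6 < card v" using deg[OF x] ne6 x unfolding map_vertices_def by force
    qed
    thus False using NV NV6 by simp
  qed
  show ?thesis
  proof (unfold_locales)
    show "finite F" by (rule fin)
    show "F \<noteq> {}" by (rule ne)
    show "\<And>i x. i < 3 \<Longrightarrow> x \<in> F \<Longrightarrow> r i x \<in> F" using inv by blast
    show "\<And>i x. i < 3 \<Longrightarrow> x \<in> F \<Longrightarrow> r i (r i x) = x" using inv by blast
    show "\<And>i x. i < 3 \<Longrightarrow> x \<in> F \<Longrightarrow> r i x \<noteq> x" using inv by blast
    show "\<And>x. x \<in> F \<Longrightarrow> r 0 (r 2 x) = r 2 (r 0 x)" using c02 by blast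
    show "\<And>x. x \<in> F \<Longrightarrow> r 0 (r 2 x) \<noteq> x" using c02 by blast
    show "\<exists>s :: 'a \<Rightarrow> bool. \<forall>x\<in>F. \<forall>i<3. s (r i x) \<noteq> s x" using s by blast
    show "\<And>x y. x \<in> F \<Longrightarrow> y \<in> F \<Longrightarrow> (x, y) \<in> (flag_step F r {0,1,2})\<^sup>*" using conn by blast
    have fc: "\<And>x. x \<in> F \<Longrightarrow> ((r 1 \<circ> r 0) ^^ 6) x = x \<and> (\<forall>k. 0 < k \<and> k < 6 \<longrightarrow> ((r 1 \<circ> r 0) ^^ k) x \<noteq> x)"
      by (rule cyc[OF fin _ _ _ _]) (use face12 fcl_eq in auto)
    have vc: "\<And>x. x \<in> F \<Longrightarrow> ((r 2 \<circ> r 1) ^^ 3) x = x \<and> (\<forall>k. 0 < k \<and> k < 3 \<longrightarrow> ((r 2 \<circ> r 1) ^^ k) x \<noteq> x)"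
      by (rule cyc[OF fin _ _ _ _]) (use all6 vcl_eq in auto)
    show "\<And>x. x \<in> F \<Longrightarrow> ((r 1 \<circ> r 0) ^^ 6) x = x" using fc by blast
    show "\<And>x k. x \<in> F \<Longrightarrow> 0 < k \<Longrightarrow> k < 6 \<Longrightarrow> ((r 1 \<circ> r 0) ^^ k) x \<noteq> x" using fc by blast
    show "\<And>x. x \<in> F \<Longrightarrow> ((r 2 \<circ> r 1) ^^ 3) x = x" using vc by blast
    show "\<And>x k. x \<in> F \<Longrightarrow> 0 < k \<Longrightarrow> k < 3 \<Longrightarrow> ((r 2 \<circ> r 1) ^^ k) x \<noteq> x" using vc by blast
  qed
qed



theorem lemma7:
  fixes F :: "'a set" and r :: "nat \<Rightarrow> 'a \<Rightarrow> 'a" and l m :: nat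
  assumes "polyhedral_map F r"
    and "map_genus F r 1"
    and "\<forall>f\<in>map_faces F r. face_size f = 6"
    and "l \<ge> 1"
    and "m = 0 \<or> m = l"
    and "(l, m) \<noteq> (1, 0)"
  shows "card (map_aut F r) < card (map_aut (gc_flags l m F) (gc_r l m r))"
proof -
  have hm: "hexmap F r" by (rule polyhedral_hexmap[OF assms(1-3)])
  interpret gcm F r l m
    by (rule gcm.intro[OF hm]) (unfold_locales, use assms(4,5) in auto)
  show ?thesis by (rule card_less[OF assms(6)])
qed

end
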